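(* Let the disorder distribution $\mathbb P$ be a translation-invariant product measure, let the finite-range defining potential $\Phi$ be translation-invariant, and let $K^{\bar\sigma}$ be a translation-invariant joint measure constructed with spin boundary condition $\bar\sigma$. Let $\sigma^0$ be a translation-invariant spin configuration and $\lambda=\mathbb P\otimes\delta_{\sigma^0}$ (the law of $(\sigma^0,\eta)$ with $\eta\sim\mathbb P$). Then $e^\lambda_{K^{\bar\sigma}}$ exists and $$e^\lambda_{K^{\bar\sigma}}=h(\mathbb P)+\sum_{A\ni0}\int\mathbb P(d\eta)\frac{\Phi_A(\sigma^0,\eta)}{|A|}+\int\mathbb P(d\eta)\lim_{n\to\infty}\frac1{|\Lambda_n|}\log Z^{\bar\sigma}_{\Lambda_n}[\eta].$$
   Context: Let $E,E'$ be finite sets; spins $\sigma\in E^{\mathbb Z^d}$, disorder $\eta\in(E')^{\mathbb Z^d}$, joint configurations $\xi=(\sigma,\eta)$. A defining potential $\Phi=(\Phi_A)_{A\text{ finite}}$ consists of real functions with $\Phi_A(\sigma,\eta)$ depending only on $(\sigma_A,\eta_A)$, finite range ($\Phi_A=0$ if $\operatorname{diam}A>r$), translation-invariant ($\Phi_{A+x}(\xi)=\Phi_A(\tau_x\xi)$, $(\tau_x\xi)(y)=\xi(x+y)$). Quenched finite-volume Gibbs measures: $\mu^{\bar\sigma}_\Lambda[\eta](B)=Z^{\bar\sigma}_\Lambda[\eta]^{-1}\sum_{\sigma_\Lambda}1_B(\sigma_\Lambda\bar\sigma_{\Lambda^c})\exp(-\sum_{A\cap\Lambda\neq\emptyset}\Phi_A(\sigma_\Lambda\bar\sigma_{\Lambda^c},\eta))$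 with partition function $Z^{\bar\sigma}_\Lambda[\eta]$. A joint measure $K^{\bar\sigma}$ is a weak limit of $\mathbb P(d\eta)\mu^{\bar\sigma}_{\Lambda_N}[\eta](d\sigma)$ along some $\Lambda_N\uparrow\mathbb Z^d$. $\Lambda_n=[-n,n]^d\cap\mathbb Z^d$. For a probability measure $\nu$ and $\lambda$ on the joint space, $e^\lambda_\nu=-\lim_n|\Lambda_n|^{-1}\int\log\nu(\xi_{\Lambda_n})\,\lambda(d\xi)$ when the limit exists, where $\nu(\xi_\Lambda)=\nu(\{\xi':\xi'_\Lambda=\xi_\Lambda\})$. $h(\mathbb P)=-\lim_n|\Lambda_n|^{-1}\sum_{\eta_{\Lambda_n}}\mathbb P(\eta_{\Lambda_n})\log\mathbb P(\eta_{\Lambda_n})$ is the Kolmogorov–Sinai entropy. *)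

theory Defs
  imports "HOL-Probability.Probability"
begin

text \<open>Sites are points of the lattice Z^d, modelled as int ^ 'd with 'd a finite index type
  (d = CARD('d)). Spins take values in a finite type 'e (= E), disorder in a finite type 'f (= E').\<close>

type_synonym 'd site = "int ^ 'd"

definition conf_space :: "('d::finite site \<Rightarrow> 'a) measure" where
  "conf_space = PiM UNIV (\<lambda>_. count_space UNIV)"

definition joint_space :: "(('d::finite site \<Rightarrow> 'e) \<times> ('d site \<Rightarrow> 'f)) measure" where
  "joint_space = conf_space \<Otimes>\<^sub>M conf_space"

definition box :: "nat \<Rightarrow> 'd::finite site set" where
  "box n = {x. \<forall>i. \<bar>x $ i\<bar> \<le> int n}"

definition is_defining_potential ::
  "('d::finite site set \<Rightarrow> ('d site \<Rightarrow> 'e) \<Rightarrow> ('d site \<Rightarrow> 'f) \<Rightarrow> real) \<Rightarrow> bool" where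
  "is_defining_potential \<Phi> \<longleftrightarrow>
     (\<forall>A \<sigma> \<sigma>' \<eta> \<eta>'. (\<forall>x\<in>A. \<sigma> x = \<sigma>' x \<and> \<eta> x = \<eta>' x) \<longrightarrow> \<Phi> A \<sigma> \<eta> = \<Phi> A \<sigma>' \<eta>') \<and>
     (\<exists>r::int. \<forall>A. finite A \<longrightarrow> (\<exists>x\<in>A. \<exists>y\<in>A. \<exists>i. \<bar>x $ i - y $ i\<bar> > r) \<longrightarrow>
                      (\<forall>\<sigma> \<eta>. \<Phi> A \<sigma> \<eta> = 0)) \<and>
     (\<forall>x A \<sigma> \<eta>. \<Phi> ((\<lambda>y. x + y) ` A) \<sigma> \<eta> = \<Phi> A (\<lambda>y. \<sigma> (x + y)) (\<lambda>y. \<eta> (x + y)))"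

definition hamiltonian ::
  "('d::finite site set \<Rightarrow> ('d site \<Rightarrow> 'e) \<Rightarrow> ('d site \<Rightarrow> 'f) \<Rightarrow> real) \<Rightarrow> 'd site set \<Rightarrow>
    ('d site \<Rightarrow> 'e) \<Rightarrow> ('d site \<Rightarrow> 'f) \<Rightarrow> real" where
  "hamiltonian \<Phi> \<Lambda> \<sigma> \<eta> = infsum (\<lambda>A. \<Phi> A \<sigma> \<eta>) {A. finite A \<and> A \<inter> \<Lambda> \<noteq> {}}"

definition bc_configs :: "('d::finite site \<Rightarrow> 'e) \<Rightarrow> 'd site set \<Rightarrow> ('d site \<Rightarrow> 'e) set" where
  "bc_configs \<sigma>b \<Lambda> = {\<sigma>. \<forall>x. x \<notin> \<Lambda> \<longrightarrow> \<sigma> x = \<sigma>b x}"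

definition partition_fn ::
  "('d::finite site set \<Rightarrow> ('d site \<Rightarrow> 'e) \<Rightarrow> ('d site \<Rightarrow> 'f) \<Rightarrow> real) \<Rightarrow> ('d site \<Rightarrow> 'e) \<Rightarrow>
    'd site set \<Rightarrow> ('d site \<Rightarrow> 'f) \<Rightarrow> real" where
  "partition_fn \<Phi> \<sigma>b \<Lambda> \<eta> = (\<Sum>\<sigma>\<in>bc_configs \<sigma>b \<Lambda>. exp (- hamiltonian \<Phi> \<Lambda> \<sigma> \<eta>))"

definition gibbs_pmf ::
  "('d::finite site set \<Rightarrow> ('d site \<Rightarrow> 'e) \<Rightarrow> ('d site \<Rightarrow> 'f) \<Rightarrow> real) \<Rightarrow> ('d site \<Rightarrow> 'e) \<Rightarrow>
    'd site set \<Rightarrow> ('d site \<Rightarrow> 'f) \<Rightarrow> ('d site \<Rightarrow> 'e) pmf" where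
  "gibbs_pmf \<Phi> \<sigma>b \<Lambda> \<eta> = embed_pmf (\<lambda>\<sigma>. if \<sigma> \<in> bc_configs \<sigma>b \<Lambda>
        then exp (- hamiltonian \<Phi> \<Lambda> \<sigma> \<eta>) / partition_fn \<Phi> \<sigma>b \<Lambda> \<eta> else 0)"

definition fv_joint ::
  "('d::finite site \<Rightarrow> 'f) measure \<Rightarrow>
   ('d site set \<Rightarrow> ('d site \<Rightarrow> 'e) \<Rightarrow> ('d site \<Rightarrow> 'f) \<Rightarrow> real) \<Rightarrow> ('d site \<Rightarrow> 'e) \<Rightarrow>
    'd site set \<Rightarrow> (('d site \<Rightarrow> 'e) \<times> ('d site \<Rightarrow> 'f)) measure" where
  "fv_joint P \<Phi> \<sigma>b \<Lambda> = P \<bind> (\<lambda>\<eta>. distr (measure_pmf (gibbs_pmf \<Phi> \<sigma>b \<Lambda> \<eta>)) joint_space (\<lambda>\<sigma>. (\<sigma>, \<eta>)))"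

definition joint_agree :: "'a set \<Rightarrow> ('a \<Rightarrow> 'e) \<times> ('a \<Rightarrow> 'f) \<Rightarrow> ('a \<Rightarrow> 'e) \<times> ('a \<Rightarrow> 'f) \<Rightarrow> bool" where
  "joint_agree W \<xi> \<xi>' \<longleftrightarrow> (\<forall>x\<in>W. fst \<xi>' x = fst \<xi> x \<and> snd \<xi>' x = snd \<xi> x)"

text \<open>Continuity for the product of discrete topologies on (E x E')^{Z^d}.\<close>
definition joint_continuous :: "(('a \<Rightarrow> 'e) \<times> ('a \<Rightarrow> 'f) \<Rightarrow> real) \<Rightarrow> bool" where
  "joint_continuous g \<longleftrightarrow> (\<forall>\<xi> \<epsilon>. \<epsilon> > 0 \<longrightarrow>
      (\<exists>W. finite W \<and> (\<forall>\<xi>'. joint_agree W \<xi> \<xi>' \<longrightarrow> \<bar>g \<xi>' - g \<xi>\<bar> < \<epsilon>)))"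

text \<open>Weak convergence: integrals of all continuous (hence bounded, the space being compact) real
  functions converge.\<close>
definition weak_conv :: "(nat \<Rightarrow> (('a \<Rightarrow> 'e) \<times> ('a \<Rightarrow> 'f)) measure) \<Rightarrow>
    (('a \<Rightarrow> 'e) \<times> ('a \<Rightarrow> 'f)) measure \<Rightarrow> bool" where
  "weak_conv M K \<longleftrightarrow> (\<forall>g. joint_continuous g \<longrightarrow>
      (\<lambda>N. \<integral>\<xi>. g \<xi> \<partial>M N) \<longlonglongrightarrow> (\<integral>\<xi>. g \<xi> \<partial>K))"

definition is_joint_measure ::
  "('d::finite site \<Rightarrow> 'f) measure \<Rightarrow>
   ('d site set \<Rightarrow> ('d site \<Rightarrow> 'e) \<Rightarrow> ('d site \<Rightarrow> 'f) \<Rightarrow> real) \<Rightarrow> ('d site \<Rightarrow> 'e) \<Rightarrow>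
   (('d site \<Rightarrow> 'e) \<times> ('d site \<Rightarrow> 'f)) measure \<Rightarrow> bool" where
  "is_joint_measure P \<Phi> \<sigma>b K \<longleftrightarrow> sets K = sets joint_space \<and> prob_space K \<and>
     (\<exists>\<Lambda>::nat \<Rightarrow> 'd site set. (\<forall>N. finite (\<Lambda> N)) \<and> incseq \<Lambda> \<and> (\<Union>N. \<Lambda> N) = UNIV \<and>
        weak_conv (\<lambda>N. fv_joint P \<Phi> \<sigma>b (\<Lambda> N)) K)"

definition shift :: "'d::finite site \<Rightarrow> ('d site \<Rightarrow> 'e) \<times> ('d site \<Rightarrow> 'f) \<Rightarrow> ('d site \<Rightarrow> 'e) \<times> ('d site \<Rightarrow> 'f)" where
  "shift x \<xi> = ((\<lambda>y. fst \<xi> (x + y)), (\<lambda>y. snd \<xi> (x + y)))"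

definition trans_inv_joint :: "(('d::finite site \<Rightarrow> 'e) \<times> ('d site \<Rightarrow> 'f)) measure \<Rightarrow> bool" where
  "trans_inv_joint K \<longleftrightarrow> (\<forall>x. distr K joint_space (shift x) = K)"

definition cyl_prob :: "(('a \<Rightarrow> 'e) \<times> ('a \<Rightarrow> 'f)) measure \<Rightarrow> 'a set \<Rightarrow> ('a \<Rightarrow> 'e) \<times> ('a \<Rightarrow> 'f) \<Rightarrow> real" where
  "cyl_prob \<nu> \<Lambda> \<xi> = measure \<nu> {\<xi>' \<in> space \<nu>. joint_agree \<Lambda> \<xi> \<xi>'}"

definition e_seq :: "(('d::finite site \<Rightarrow> 'e) \<times> ('d site \<Rightarrow> 'f)) measure \<Rightarrow>
    (('d site \<Rightarrow> 'e) \<times> ('d site \<Rightarrow> 'f)) measure \<Rightarrow> nat \<Rightarrow> real" where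
  "e_seq \<nu> lam n = - (\<integral>\<xi>. ln (cyl_prob \<nu> (box n) \<xi>) \<partial>lam) / real (card (box n :: 'd site set))"

definition ks_entropy :: "('d::finite site \<Rightarrow> 'f) measure \<Rightarrow> real" where
  "ks_entropy P = - lim (\<lambda>n. (\<Sum>\<zeta>\<in>PiE (box n) (\<lambda>_. UNIV).
       measure P {\<eta> \<in> space P. \<forall>x\<in>box n. \<eta> x = \<zeta> x} *
       ln (measure P {\<eta> \<in> space P. \<forall>x\<in>box n. \<eta> x = \<zeta> x})) / real (card (box n :: 'd site set)))"

end

theory Submission
  imports Defs
begin

lemma box_eq_image: "box n = vec_lambda ` (Pi\<^sub>E UNIV (\<lambda>_. {-int n..int n}))"
proof -
  have "x \<in> vec_lambda ` (Pi\<^sub>E UNIV (\<lambda>_. {-int n..int n}))" if "x \<in> box n" for x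
  proof
    show "x = vec_lambda (vec_nth x)" by simp
    show "vec_nth x \<in> Pi\<^sub>E UNIV (\<lambda>_. {-int n..int n})" using that by (auto simp: box_def abs_le_iff) (metis minus_le_iff)
  qed
  moreover have "x \<in> box n" if "x \<in> vec_lambda ` (Pi\<^sub>E UNIV (\<lambda>_. {-int n..int n}))" for x
    using that by (auto simp: box_def abs_le_iff PiE_iff) (metis minus_le_iff)
  ultimately show ?thesis by blast
qed

lemma finite_box[simp]: "finite (box n :: 'd::finite site set)"
  unfolding box_eq_image by (intro finite_imageI finite_PiE) auto

lemma card_box: "card (box n :: 'd::finite site set) = (2*n+1) ^ CARD('d)"
proof -
  have "card (box n :: 'd site set) = card (Pi\<^sub>E (UNIV::'d set) (\<lambda>_. {-int n..int n}))"
    unfolding box_eq_image by (rule card_image) (auto intro!: inj_onI simp: vec_lambda_inject)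
  also have "\<dots> = (2*n+1) ^ CARD('d)" by (simp add: card_PiE nat_add_distrib nat_mult_distrib)
  finally show ?thesis .
qed

lemma card_box_pos: "card (box n :: 'd::finite site set) > 0"
  by (simp add: card_box)

lemma zero_in_box[simp]: "0 \<in> box n" by (simp add: box_def)

definition cube :: "nat \<Rightarrow> 'd::finite site \<Rightarrow> 'd site set" where
  "cube r x = (\<lambda>y. x + y) ` box r"

lemma mem_cube: "y \<in> cube r x \<longleftrightarrow> (\<forall>i. \<bar>y$i - x$i\<bar> \<le> int r)"
proof
  assume "y \<in> cube r x" then show "\<forall>i. \<bar>y$i - x$i\<bar> \<le> int r" by (auto simp: cube_def box_def)
next
  assume "\<forall>i. \<bar>y$i - x$i\<bar> \<le> int r"
  then have "y - x \<in> box r" by (simp add: box_def)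
  then show "y \<in> cube r x" unfolding cube_def by (intro image_eqI[of _ _ "y - x"]) auto
qed

lemma finite_cube[simp]: "finite (cube r x)" by (simp add: cube_def)
lemma card_cube: "card (cube r (x::'d::finite site)) = card (box r :: 'd::finite site set)"
  unfolding cube_def by (rule card_image) (auto simp: inj_on_def)
lemma self_in_cube[simp]: "x \<in> cube r x" by (simp add: mem_cube)


locale potl =
  fixes \<Phi> :: "'d::finite site set \<Rightarrow> ('d site \<Rightarrow> 'e::finite) \<Rightarrow> ('d site \<Rightarrow> 'f::finite) \<Rightarrow> real"
  assumes pot: "is_defining_potential \<Phi>"
begin

lemma pot_part1: "\<forall>A \<sigma> \<sigma>' \<eta> \<eta>'. (\<forall>x\<in>A. \<sigma> x = \<sigma>' x \<and> \<eta> x = \<eta>' x) \<longrightarrow> \<Phi> A \<sigma> \<eta> = \<Phi> A \<sigma>' \<eta>'"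
  using pot unfolding is_defining_potential_def by (rule conjunct1)
lemma pot_part2: "\<exists>r::int. \<forall>A. finite A \<longrightarrow> (\<exists>x\<in>A. \<exists>y\<in>A. \<exists>i. \<bar>x $ i - y $ i\<bar> > r) \<longrightarrow> (\<forall>\<sigma> \<eta>. \<Phi> A \<sigma> \<eta> = 0)"
  using pot unfolding is_defining_potential_def by (rule conjunct1[OF conjunct2])
lemma pot_part3: "\<forall>x A \<sigma> \<eta>. \<Phi> ((\<lambda>y. x + y) ` A) \<sigma> \<eta> = \<Phi> A (\<lambda>y. \<sigma> (x + y)) (\<lambda>y. \<eta> (x + y))"
  using pot unfolding is_defining_potential_def by (rule conjunct2[OF conjunct2])

lemma Phi_local: "(\<And>x. x \<in> A \<Longrightarrow> \<sigma> x = \<sigma>' x \<and> \<eta> x = \<eta>' x) \<Longrightarrow> \<Phi> A \<sigma> \<eta> = \<Phi> A \<sigma>' \<eta>'"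
  using pot_part1 by simp

lemma Phi_shift: "\<Phi> ((\<lambda>y. x + y) ` A) \<sigma> \<eta> = \<Phi> A (\<lambda>y. \<sigma> (x + y)) (\<lambda>y. \<eta> (x + y))"
  using pot_part3 by blast

definition R :: nat where
  "R = (SOME R::nat. \<forall>A \<sigma> \<eta>. finite A \<longrightarrow> (\<exists>x\<in>A. \<exists>y\<in>A. \<exists>i. \<bar>x $ i - y $ i\<bar> > int R) \<longrightarrow> \<Phi> A \<sigma> \<eta> = 0)"

lemma R_prop: "finite (A::'d site set) \<Longrightarrow> x \<in> A \<Longrightarrow> y \<in> A \<Longrightarrow> \<bar>x $ i - y $ i\<bar> > int R \<Longrightarrow> \<Phi> A \<sigma> \<eta> = 0"
proof -
  from pot_part2 obtain r :: int where r: "\<forall>A. finite A \<longrightarrow> (\<exists>x\<in>A. \<exists>y\<in>A. \<exists>i. \<bar>x $ i - y $ i\<bar> > r) \<longrightarrow>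
                      (\<forall>\<sigma> \<eta>. \<Phi> A \<sigma> \<eta> = 0)"
    by blast
  have "\<exists>R::nat. \<forall>A \<sigma> \<eta>. finite A \<longrightarrow> (\<exists>x\<in>A. \<exists>y\<in>A. \<exists>i. \<bar>x $ i - y $ i\<bar> > int R) \<longrightarrow> \<Phi> A \<sigma> \<eta> = 0"
  proof (intro exI[of _ "nat r"] allI impI)
    fix A :: "'d site set" and \<sigma> \<eta> assume "finite A" "\<exists>x\<in>A. \<exists>y\<in>A. \<exists>i. \<bar>x $ i - y $ i\<bar> > int (nat r)"
    then obtain x y i where xy: "x \<in> A" "y \<in> A" "\<bar>x $ i - y $ i\<bar> > int (nat r)" by blast
    then have "\<bar>x $ i - y $ i\<bar> > r" by linarith
    with xy have "\<exists>x\<in>A. \<exists>y\<in>A. \<exists>i. \<bar>x $ i - y $ i\<bar> > r" by blast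
    with r \<open>finite A\<close> show "\<Phi> A \<sigma> \<eta> = 0" by simp
  qed
  from someI_ex[OF this] show "finite (A::'d site set) \<Longrightarrow> x \<in> A \<Longrightarrow> y \<in> A \<Longrightarrow> \<bar>x $ i - y $ i\<bar> > int R \<Longrightarrow> \<Phi> A \<sigma> \<eta> = 0"
    unfolding R_def by blast
qed

definition small :: "'d site set \<Rightarrow> bool" where
  "small A \<longleftrightarrow> finite A \<and> (\<forall>x\<in>A. \<forall>y\<in>A. \<forall>i. \<bar>x $ i - y $ i\<bar> \<le> int R)"

lemma Phi_zero: "finite A \<Longrightarrow> \<not> small A \<Longrightarrow> \<Phi> A \<sigma> \<eta> = 0"
  unfolding small_def using R_prop by (meson not_le)

lemma small_cube: "small A \<Longrightarrow> x \<in> A \<Longrightarrow> A \<subseteq> cube R x"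
  unfolding small_def by (auto simp: mem_cube)

lemma small_finite: "small A \<Longrightarrow> finite A" by (simp add: small_def)

lemma small_shift: "small ((\<lambda>y. c + y) ` A) \<longleftrightarrow> small A"
proof -
  have inj: "inj_on (\<lambda>y. c + y) A" by (auto simp: inj_on_def)
  have "(\<forall>x\<in>(\<lambda>y. c + y) ` A. \<forall>y\<in>(\<lambda>y. c + y) ` A. \<forall>i. \<bar>x $ i - y $ i\<bar> \<le> int R) \<longleftrightarrow>
        (\<forall>x\<in>A. \<forall>y\<in>A. \<forall>i. \<bar>x $ i - y $ i\<bar> \<le> int R)"
    by auto
  then show ?thesis unfolding small_def finite_image_iff[OF inj] by simp
qed

lemma small_subset: "small A \<Longrightarrow> B \<subseteq> A \<Longrightarrow> small B"
  by (auto simp: small_def intro: finite_subset)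

definition M :: real where
  "M = Max ((\<lambda>(A, s, t). \<bar>\<Phi> A s t\<bar>) ` (Pow (box R) \<times> Pi\<^sub>E (box R) (\<lambda>_. UNIV) \<times> Pi\<^sub>E (box R) (\<lambda>_. UNIV)))"

lemma M_fin: "finite ((\<lambda>(A, s, t). \<bar>\<Phi> A s t\<bar>) ` (Pow (box R) \<times> Pi\<^sub>E (box R) (\<lambda>_. UNIV) \<times> Pi\<^sub>E (box R) (\<lambda>_. UNIV)))"
  by (intro finite_imageI finite_cartesian_product finite_PiE) auto

lemma M_ge: "A \<subseteq> box R \<Longrightarrow> \<bar>\<Phi> A \<sigma> \<eta>\<bar> \<le> M"
proof -
  assume A: "A \<subseteq> box R"
  have "\<Phi> A \<sigma> \<eta> = \<Phi> A (restrict \<sigma> (box R)) (restrict \<eta> (box R))"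
    using A by (intro Phi_local) auto
  moreover have "(A, restrict \<sigma> (box R), restrict \<eta> (box R)) \<in> Pow (box R) \<times> Pi\<^sub>E (box R) (\<lambda>_. UNIV) \<times> Pi\<^sub>E (box R) (\<lambda>_. UNIV)"
    using A by auto
  ultimately show ?thesis unfolding M_def
    by (intro Max_ge[OF M_fin]) (auto intro!: image_eqI[where x="(A, restrict \<sigma> (box R), restrict \<eta> (box R))"])
qed

lemma M_nonneg: "M \<ge> 0"
  using M_ge[of "{}"] by (meson abs_ge_zero empty_subsetI order_trans)

lemma Phi_bound: "finite A \<Longrightarrow> \<bar>\<Phi> A \<sigma> \<eta>\<bar> \<le> M"
proof -
  assume fA: "finite A"
  show ?thesis
  proof (cases "small A")
    case False then show ?thesis using Phi_zero[OF fA] M_nonneg by simp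
  next
    case True
    show ?thesis
    proof (cases "A = {}")
      case True then show ?thesis using M_ge[of "{}"] by simp
    next
      case False
      then obtain a where a: "a \<in> A" by auto
      define A' where "A' = (\<lambda>y. y - a) ` A"
      have AA': "A = (\<lambda>y. a + y) ` A'" unfolding A'_def by (auto simp: image_image)
      have "A' \<subseteq> box R"
      proof
        fix z assume "z \<in> A'"
        then obtain y where y: "y \<in> A" "z = y - a" unfolding A'_def by auto
        then have "y \<in> cube R a" using small_cube[OF True a] by auto
        then show "z \<in> box R" using y by (auto simp: mem_cube box_def)
      qed
      then have "\<bar>\<Phi> A' (\<lambda>y. \<sigma> (a + y)) (\<lambda>y. \<eta> (a + y))\<bar> \<le> M" by (rule M_ge)
      then show ?thesis unfolding AA' Phi_shift .
    qed
  qed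
qed

definition SB :: "'d site set \<Rightarrow> 'd site set set" where
  "SB \<Lambda> = {A. small A \<and> A \<inter> \<Lambda> \<noteq> {}}"

definition Bd :: "'d site set \<Rightarrow> 'd site set set" where
  "Bd \<Lambda> = {A \<in> SB \<Lambda>. \<not> A \<subseteq> \<Lambda>}"

definition ib :: "'d site set \<Rightarrow> 'd site set" where
  "ib \<Lambda> = {x \<in> \<Lambda>. \<not> cube R x \<subseteq> \<Lambda>}"

lemma SB_sub: "SB \<Lambda> \<subseteq> (\<Union>x\<in>\<Lambda>. Pow (cube R x))"
  unfolding SB_def using small_cube by blast

lemma Bd_sub: "Bd \<Lambda> \<subseteq> (\<Union>x\<in>ib \<Lambda>. Pow (cube R x))"
proof
  fix A assume "A \<in> Bd \<Lambda>"
  then have A: "small A" "A \<inter> \<Lambda> \<noteq> {}" "\<not> A \<subseteq> \<Lambda>" by (auto simp: Bd_def SB_def)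
  then obtain x where x: "x \<in> A" "x \<in> \<Lambda>" by auto
  have "A \<subseteq> cube R x" using small_cube[OF A(1) x(1)] .
  then have "\<not> cube R x \<subseteq> \<Lambda>" using A(3) by auto
  then show "A \<in> (\<Union>x\<in>ib \<Lambda>. Pow (cube R x))" using x \<open>A \<subseteq> cube R x\<close> by (auto simp: ib_def)
qed

lemma finite_SB: "finite \<Lambda> \<Longrightarrow> finite (SB \<Lambda>)"
  by (rule finite_subset[OF SB_sub]) auto

lemma finite_Bd: "finite \<Lambda> \<Longrightarrow> finite (Bd \<Lambda>)"
  unfolding Bd_def using finite_SB by auto

lemma card_SB: "finite \<Lambda> \<Longrightarrow> card (SB \<Lambda>) \<le> card \<Lambda> * 2 ^ card (box R :: 'd site set)"
proof -
  assume f: "finite \<Lambda>"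
  have "card (SB \<Lambda>) \<le> card (\<Union>x\<in>\<Lambda>. Pow (cube R x))"
    by (rule card_mono[OF _ SB_sub]) (use f in auto)
  also have "\<dots> \<le> (\<Sum>x\<in>\<Lambda>. card (Pow (cube R x)))" by (rule card_UN_le[OF f])
  also have "\<dots> = card \<Lambda> * 2 ^ card (box R :: 'd site set)" by (simp add: card_Pow card_cube)
  finally show ?thesis .
qed

lemma card_Bd: "finite \<Lambda> \<Longrightarrow> card (Bd \<Lambda>) \<le> card (ib \<Lambda>) * 2 ^ card (box R :: 'd site set)"
proof -
  assume f: "finite \<Lambda>"
  have fi: "finite (ib \<Lambda>)" using f by (simp add: ib_def)
  have "card (Bd \<Lambda>) \<le> card (\<Union>x\<in>ib \<Lambda>. Pow (cube R x))"
    by (rule card_mono[OF _ Bd_sub]) (use fi in auto)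
  also have "\<dots> \<le> (\<Sum>x\<in>ib \<Lambda>. card (Pow (cube R x)))" by (rule card_UN_le[OF fi])
  also have "\<dots> = card (ib \<Lambda>) * 2 ^ card (box R :: 'd site set)" by (simp add: card_Pow card_cube)
  finally show ?thesis .
qed

lemma ham_sum: "finite \<Lambda> \<Longrightarrow> hamiltonian \<Phi> \<Lambda> \<sigma> \<eta> = (\<Sum>A\<in>SB \<Lambda>. \<Phi> A \<sigma> \<eta>)"
proof -
  assume f: "finite \<Lambda>"
  have "hamiltonian \<Phi> \<Lambda> \<sigma> \<eta> = infsum (\<lambda>A. \<Phi> A \<sigma> \<eta>) (SB \<Lambda>)"
    unfolding hamiltonian_def
    by (rule infsum_cong_neutral) (auto simp: SB_def Phi_zero small_finite)
  also have "\<dots> = (\<Sum>A\<in>SB \<Lambda>. \<Phi> A \<sigma> \<eta>)" by (rule infsum_finite[OF finite_SB[OF f]])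
  finally show ?thesis .
qed

end

context potl
begin

abbreviation H where "H \<Lambda> \<sigma> \<eta> \<equiv> hamiltonian \<Phi> \<Lambda> \<sigma> \<eta>"
abbreviation Z where "Z \<tau> \<Lambda> \<eta> \<equiv> partition_fn \<Phi> \<tau> \<Lambda> \<eta>"

definition D :: "'d site set \<Rightarrow> real" where "D \<Lambda> = 2 * M * card (Bd \<Lambda>)"

lemma D_nonneg: "D \<Lambda> \<ge> 0" using M_nonneg by (simp add: D_def)

lemma H_bound: "finite \<Lambda> \<Longrightarrow> \<bar>H \<Lambda> \<sigma> \<eta>\<bar> \<le> M * card (SB \<Lambda>)"
proof -
  assume f: "finite \<Lambda>"
  have "\<bar>H \<Lambda> \<sigma> \<eta>\<bar> \<le> (\<Sum>A\<in>SB \<Lambda>. \<bar>\<Phi> A \<sigma> \<eta>\<bar>)" unfolding ham_sum[OF f] by (rule sum_abs)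
  also have "\<dots> \<le> (\<Sum>A\<in>SB \<Lambda>. M)" by (intro sum_mono Phi_bound) (auto simp: SB_def small_def)
  finally show ?thesis by (simp add: mult.commute)
qed

lemma sum_diff_bound:
  fixes f g :: "'a \<Rightarrow> real" and c :: real
  assumes "finite S" "\<And>A. A \<in> S \<Longrightarrow> \<bar>f A - g A\<bar> \<le> c"
  shows "\<bar>sum f S - sum g S\<bar> \<le> real (card S) * c"
proof -
  have "\<bar>sum f S - sum g S\<bar> = \<bar>\<Sum>A\<in>S. f A - g A\<bar>" by (simp add: sum_subtractf)
  also have "\<dots> \<le> (\<Sum>A\<in>S. \<bar>f A - g A\<bar>)" by (rule sum_abs)
  also have "\<dots> \<le> (\<Sum>A\<in>S. c)" by (intro sum_mono assms(2))
  finally show ?thesis by simp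
qed

lemma H_diff:
  assumes f: "finite \<Lambda>" and agree: "\<And>x. x \<in> \<Lambda> \<Longrightarrow> \<sigma> x = \<sigma>' x \<and> \<eta> x = \<eta>' x"
  shows "\<bar>H \<Lambda> \<sigma> \<eta> - H \<Lambda> \<sigma>' \<eta>'\<bar> \<le> D \<Lambda>"
proof -
  have sub: "Bd \<Lambda> \<subseteq> SB \<Lambda>" by (auto simp: Bd_def)
  have fS: "finite (SB \<Lambda>)" using finite_SB[OF f] .
  have eq: "(\<Sum>A\<in>SB \<Lambda> - Bd \<Lambda>. \<Phi> A \<sigma> \<eta>) = (\<Sum>A\<in>SB \<Lambda> - Bd \<Lambda>. \<Phi> A \<sigma>' \<eta>')"
  proof (rule sum.cong[OF refl])
    fix A assume "A \<in> SB \<Lambda> - Bd \<Lambda>"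
    then have "A \<subseteq> \<Lambda>" by (auto simp: Bd_def)
    then show "\<Phi> A \<sigma> \<eta> = \<Phi> A \<sigma>' \<eta>'" using agree by (intro Phi_local) auto
  qed
  have "H \<Lambda> \<sigma> \<eta> - H \<Lambda> \<sigma>' \<eta>' = (\<Sum>A\<in>Bd \<Lambda>. \<Phi> A \<sigma> \<eta>) - (\<Sum>A\<in>Bd \<Lambda>. \<Phi> A \<sigma>' \<eta>')"
    unfolding ham_sum[OF f] sum.subset_diff[OF sub fS] eq by simp
  also have "\<bar>\<dots>\<bar> \<le> card (Bd \<Lambda>) * (2 * M)"
  proof (rule sum_diff_bound[OF finite_Bd[OF f]])
    fix A assume "A \<in> Bd \<Lambda>"
    then have "finite A" by (auto simp: Bd_def SB_def small_def)
    then show "\<bar>\<Phi> A \<sigma> \<eta> - \<Phi> A \<sigma>' \<eta>'\<bar> \<le> 2 * M"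
      using Phi_bound[of A \<sigma> \<eta>] Phi_bound[of A \<sigma>' \<eta>'] by linarith
  qed
  finally show ?thesis by (simp add: D_def mult.commute mult.left_commute)
qed

lemma bc_eq_image: "bc_configs \<tau> \<Lambda> = (\<lambda>s x. if x \<in> \<Lambda> then s x else \<tau> x) ` Pi\<^sub>E \<Lambda> (\<lambda>_. UNIV)"
proof -
  have "\<sigma> \<in> (\<lambda>s x. if x \<in> \<Lambda> then s x else \<tau> x) ` Pi\<^sub>E \<Lambda> (\<lambda>_. UNIV)" if "\<sigma> \<in> bc_configs \<tau> \<Lambda>" for \<sigma>
    using that by (intro image_eqI[of _ _ "restrict \<sigma> \<Lambda>"]) (auto simp: bc_configs_def)
  then show ?thesis by (auto simp: bc_configs_def)
qed

lemma finite_bc: "finite \<Lambda> \<Longrightarrow> finite (bc_configs (\<tau> :: 'd site \<Rightarrow> 'e) (\<Lambda> :: 'd site set))"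
  unfolding bc_eq_image by (intro finite_imageI finite_PiE) auto

lemma card_bc: "finite \<Lambda> \<Longrightarrow> card (bc_configs (\<tau> :: 'd site \<Rightarrow> 'e) (\<Lambda> :: 'd site set)) \<le> CARD('e) ^ card \<Lambda>"
proof -
  assume f: "finite \<Lambda>"
  have "card (bc_configs \<tau> \<Lambda>) \<le> card (Pi\<^sub>E \<Lambda> (\<lambda>_. UNIV :: 'e set))"
    unfolding bc_eq_image by (rule card_image_le) (intro finite_PiE f, auto)
  also have "\<dots> = CARD('e) ^ card \<Lambda>" by (simp add: card_PiE f)
  finally show ?thesis .
qed

lemma self_in_bc[simp]: "\<tau> \<in> bc_configs \<tau> \<Lambda>" by (simp add: bc_configs_def)

lemma Z_pos: "finite \<Lambda> \<Longrightarrow> Z \<tau> \<Lambda> \<eta> > 0"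
  unfolding partition_fn_def
  by (rule sum_pos2[of _ \<tau>]) (auto simp: finite_bc)

definition C0 :: real where "C0 = ln (real CARD('e)) + M * 2 ^ card (box R :: 'd site set)"

lemma C0_nonneg: "C0 \<ge> 0"
  unfolding C0_def using M_nonneg by (intro add_nonneg_nonneg) (auto simp: card_ge_0_finite)

lemma lnZ_bound: "finite \<Lambda> \<Longrightarrow> \<bar>ln (Z \<tau> \<Lambda> \<eta>)\<bar> \<le> card \<Lambda> * C0"
proof -
  assume f: "finite \<Lambda>"
  define h where "h = M * card (SB \<Lambda>)"
  have hle: "h \<le> card \<Lambda> * (M * 2 ^ card (box R :: 'd site set))"
  proof -
    have "real (card (SB \<Lambda>)) \<le> real (card \<Lambda> * 2 ^ card (box R :: 'd site set))"
      using card_SB[OF f] by (simp only: of_nat_le_iff)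
    then have "M * card (SB \<Lambda>) \<le> M * real (card \<Lambda> * 2 ^ card (box R :: 'd site set))"
      using M_nonneg by (rule mult_left_mono)
    then show ?thesis unfolding h_def by (simp add: algebra_simps)
  qed
  have Hb: "\<bar>H \<Lambda> s \<eta>\<bar> \<le> h" for s unfolding h_def by (rule H_bound[OF f])
  have Zp: "Z \<tau> \<Lambda> \<eta> > 0" by (rule Z_pos[OF f])
  have lower: "exp (- h) \<le> Z \<tau> \<Lambda> \<eta>"
  proof -
    have "exp (-h) \<le> exp (- H \<Lambda> \<tau> \<eta>)" using Hb[of \<tau>] by simp
    also have "\<dots> \<le> Z \<tau> \<Lambda> \<eta>" unfolding partition_fn_def
      by (rule member_le_sum) (auto simp: finite_bc f)
    finally show ?thesis .
  qed
  have upper: "Z \<tau> \<Lambda> \<eta> \<le> real CARD('e) ^ card \<Lambda> * exp h"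
  proof -
    have "Z \<tau> \<Lambda> \<eta> \<le> (\<Sum>s\<in>bc_configs \<tau> \<Lambda>. exp h)" unfolding partition_fn_def
      using Hb by (intro sum_mono) (simp add: abs_le_iff)
    also have "\<dots> = card (bc_configs \<tau> \<Lambda>) * exp h" by simp
    also have "\<dots> \<le> real CARD('e) ^ card \<Lambda> * exp h"
      using card_bc[OF f, of \<tau>] by (intro mult_right_mono) (auto simp: of_nat_power[symmetric] simp del: of_nat_power)
    finally show ?thesis .
  qed
  have "ln (Z \<tau> \<Lambda> \<eta>) \<ge> -h" using lower Zp by (metis ln_exp ln_le_cancel_iff exp_gt_zero)
  moreover have "ln (Z \<tau> \<Lambda> \<eta>) \<le> card \<Lambda> * ln (real CARD('e)) + h"
  proof -
    have "ln (Z \<tau> \<Lambda> \<eta>) \<le> ln (real CARD('e) ^ card \<Lambda> * exp h)"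
      using upper Zp by (subst ln_le_cancel_iff) auto
    also have "\<dots> = card \<Lambda> * ln (real CARD('e)) + h" by (simp add: ln_mult ln_realpow)
    finally show ?thesis .
  qed
  moreover have "h \<ge> 0" unfolding h_def using M_nonneg by simp
  moreover have "real (card \<Lambda>) * ln (real CARD('e)) \<ge> 0" by (simp add: card_ge_0_finite)
  moreover have "real (card \<Lambda>) * C0 = real (card \<Lambda>) * ln (real CARD('e)) + real (card \<Lambda>) * (M * 2 ^ card (box R :: 'd site set))"
    unfolding C0_def by (simp add: distrib_left)
  ultimately show ?thesis using hle by linarith
qed

end

lemma ln_le_from:
  fixes a b c :: real
  assumes "0 < a" "0 < b" "a \<le> exp c * b"
  shows "ln a \<le> c + ln b"
proof -
  have "ln a \<le> ln (exp c * b)" using assms by (subst ln_le_cancel_iff) auto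
  also have "\<dots> = c + ln b" using assms by (simp add: ln_mult)
  finally show ?thesis .
qed

context potl
begin

lemma Z_le:
  assumes f: "finite \<Lambda>" and agree: "\<And>x. x \<in> \<Lambda> \<Longrightarrow> \<eta> x = \<eta>' x"
  shows "Z \<tau> \<Lambda> \<eta> \<le> exp (D \<Lambda>) * Z \<tau>' \<Lambda> \<eta>'"
proof -
  define g where "g = (\<lambda>s x. if x \<in> \<Lambda> then s x else \<tau>' x)"
  have inj: "inj_on g (bc_configs \<tau> \<Lambda>)"
  proof (rule inj_onI)
    fix s1 s2 assume s: "s1 \<in> bc_configs \<tau> \<Lambda>" "s2 \<in> bc_configs \<tau> \<Lambda>" "g s1 = g s2"
    show "s1 = s2"
    proof
      fix x show "s1 x = s2 x"
      proof (cases "x \<in> \<Lambda>")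
        case True then show ?thesis using fun_cong[OF s(3), of x] by (simp add: g_def)
      next
        case False then show ?thesis using s(1,2) by (simp add: bc_configs_def)
      qed
    qed
  qed
  have img: "g ` bc_configs \<tau> \<Lambda> = bc_configs \<tau>' \<Lambda>"
  proof
    show "g ` bc_configs \<tau> \<Lambda> \<subseteq> bc_configs \<tau>' \<Lambda>" by (auto simp: g_def bc_configs_def)
    show "bc_configs \<tau>' \<Lambda> \<subseteq> g ` bc_configs \<tau> \<Lambda>"
    proof
      fix t assume t: "t \<in> bc_configs \<tau>' \<Lambda>"
      show "t \<in> g ` bc_configs \<tau> \<Lambda>"
      proof (rule image_eqI[of _ _ "\<lambda>x. if x \<in> \<Lambda> then t x else \<tau> x"])
        show "t = g (\<lambda>x. if x \<in> \<Lambda> then t x else \<tau> x)" using t by (auto simp: g_def bc_configs_def)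
      qed (simp add: bc_configs_def)
    qed
  qed
  have bij: "bij_betw g (bc_configs \<tau> \<Lambda>) (bc_configs \<tau>' \<Lambda>)" using inj img by (simp add: bij_betw_def)
  have "Z \<tau> \<Lambda> \<eta> = (\<Sum>s\<in>bc_configs \<tau> \<Lambda>. exp (- H \<Lambda> s \<eta>))" by (simp add: partition_fn_def)
  also have "\<dots> \<le> (\<Sum>s\<in>bc_configs \<tau> \<Lambda>. exp (D \<Lambda>) * exp (- H \<Lambda> (g s) \<eta>'))"
  proof (rule sum_mono)
    fix s assume "s \<in> bc_configs \<tau> \<Lambda>"
    have "\<bar>H \<Lambda> s \<eta> - H \<Lambda> (g s) \<eta>'\<bar> \<le> D \<Lambda>" by (rule H_diff[OF f]) (simp add: g_def agree)
    then have "- H \<Lambda> s \<eta> \<le> D \<Lambda> + - H \<Lambda> (g s) \<eta>'" by linarith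
    then show "exp (- H \<Lambda> s \<eta>) \<le> exp (D \<Lambda>) * exp (- H \<Lambda> (g s) \<eta>')"
      by (simp add: exp_add[symmetric])
  qed
  also have "\<dots> = exp (D \<Lambda>) * (\<Sum>s\<in>bc_configs \<tau> \<Lambda>. exp (- H \<Lambda> (g s) \<eta>'))"
    by (simp add: sum_distrib_left)
  also have "(\<Sum>s\<in>bc_configs \<tau> \<Lambda>. exp (- H \<Lambda> (g s) \<eta>')) = Z \<tau>' \<Lambda> \<eta>'"
    unfolding partition_fn_def by (rule sum.reindex_bij_betw[OF bij])
  finally show ?thesis .
qed

lemma Z_change:
  assumes f: "finite \<Lambda>" and agree: "\<And>x. x \<in> \<Lambda> \<Longrightarrow> \<eta> x = \<eta>' x"
  shows "\<bar>ln (Z \<tau> \<Lambda> \<eta>) - ln (Z \<tau>' \<Lambda> \<eta>')\<bar> \<le> D \<Lambda>"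
proof -
  have "ln (Z \<tau> \<Lambda> \<eta>) \<le> D \<Lambda> + ln (Z \<tau>' \<Lambda> \<eta>')"
    by (rule ln_le_from[OF Z_pos[OF f] Z_pos[OF f] Z_le[OF f agree]])
  moreover have "ln (Z \<tau>' \<Lambda> \<eta>') \<le> D \<Lambda> + ln (Z \<tau> \<Lambda> \<eta>)"
    by (rule ln_le_from[OF Z_pos[OF f] Z_pos[OF f] Z_le[OF f]]) (simp add: agree)
  ultimately show ?thesis by linarith
qed

lemma sum_split:
  fixes f :: "('d site \<Rightarrow> 'e) \<Rightarrow> real"
  assumes fin: "finite \<Lambda>" and B: "B \<subseteq> \<Lambda>"
  shows "(\<Sum>s\<in>bc_configs \<tau> \<Lambda>. f s) = (\<Sum>\<sigma>\<in>bc_configs \<tau> (\<Lambda> - B). \<Sum>s\<in>bc_configs \<sigma> B. f s)"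
proof -
  have fB: "finite B" using B fin by (rule finite_subset)
  let ?S = "Sigma (bc_configs \<tau> (\<Lambda> - B)) (\<lambda>\<sigma>. bc_configs \<sigma> B)"
  have "(\<Sum>\<sigma>\<in>bc_configs \<tau> (\<Lambda> - B). \<Sum>s\<in>bc_configs \<sigma> B. f s) = (\<Sum>(\<sigma>, s)\<in>?S. f s)"
    by (rule sum.Sigma) (auto intro: finite_bc fin fB)
  also have "\<dots> = (\<Sum>p\<in>?S. f (snd p))" by (simp add: case_prod_beta)
  also have "\<dots> = (\<Sum>s\<in>bc_configs \<tau> \<Lambda>. f s)"
  proof (rule sum.reindex_bij_betw)
    show "bij_betw snd ?S (bc_configs \<tau> \<Lambda>)"
    proof (unfold bij_betw_def, intro conjI)
      show "inj_on snd ?S"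
      proof (rule inj_onI)
        fix p q assume pq: "p \<in> ?S" "q \<in> ?S" "snd p = snd q"
        obtain \<sigma> s where p: "p = (\<sigma>, s)" by (cases p)
        obtain \<sigma>' s' where q: "q = (\<sigma>', s')" by (cases q)
        have "\<sigma> = \<sigma>'"
        proof
          fix x show "\<sigma> x = \<sigma>' x"
          proof (cases "x \<in> B")
            case True then show ?thesis using pq(1,2) p q by (auto simp: bc_configs_def)
          next
            case False then show ?thesis using pq p q by (auto simp: bc_configs_def)
          qed
        qed
        then show "p = q" using p q pq(3) by simp
      qed
      show "snd ` ?S = bc_configs \<tau> \<Lambda>"
      proof
        show "snd ` ?S \<subseteq> bc_configs \<tau> \<Lambda>" using B by (auto simp: bc_configs_def)
        show "bc_configs \<tau> \<Lambda> \<subseteq> snd ` ?S"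
        proof
          fix s assume s: "s \<in> bc_configs \<tau> \<Lambda>"
          let ?\<sigma> = "\<lambda>x. if x \<in> B then \<tau> x else s x"
          have "(?\<sigma>, s) \<in> ?S" using s by (auto simp: bc_configs_def)
          then show "s \<in> snd ` ?S" by (intro image_eqI[of _ _ "(?\<sigma>, s)"]) auto
        qed
      qed
    qed
  qed
  finally show ?thesis by simp
qed

definition Gf :: "'d site set \<Rightarrow> 'd site set \<Rightarrow> ('d site \<Rightarrow> 'e) \<Rightarrow> ('d site \<Rightarrow> 'f) \<Rightarrow> real" where
  "Gf \<Lambda> B s \<eta> = (\<Sum>A\<in>SB \<Lambda> - SB B. \<Phi> A s \<eta>)"

lemma SB_mono: "B \<subseteq> \<Lambda> \<Longrightarrow> SB B \<subseteq> SB \<Lambda>" by (auto simp: SB_def)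

lemma H_decomp:
  assumes fin: "finite \<Lambda>" and B: "B \<subseteq> \<Lambda>"
  shows "H \<Lambda> s \<eta> = H B s \<eta> + Gf \<Lambda> B s \<eta>"
proof -
  have fB: "finite B" using B fin by (rule finite_subset)
  show ?thesis unfolding ham_sum[OF fin] ham_sum[OF fB] Gf_def
    using sum.subset_diff[OF SB_mono[OF B] finite_SB[OF fin], where g="\<lambda>A. \<Phi> A s \<eta>"] by linarith
qed

lemma Gf_local:
  assumes "s \<in> bc_configs \<sigma> B"
  shows "Gf \<Lambda> B s \<eta> = Gf \<Lambda> B \<sigma> \<eta>"
  unfolding Gf_def
proof (rule sum.cong[OF refl], rule Phi_local)
  fix A x assume A: "A \<in> SB \<Lambda> - SB B" and x: "x \<in> A"
  have "x \<notin> B" using A x by (auto simp: SB_def)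
  then show "s x = \<sigma> x \<and> \<eta> x = \<eta> x" using assms by (simp add: bc_configs_def)
qed

lemma Gf_H:
  assumes fin: "finite \<Lambda>" and B: "B \<subseteq> \<Lambda>"
  shows "\<bar>Gf \<Lambda> B \<sigma> \<eta> - H (\<Lambda> - B) \<sigma> \<eta>\<bar> \<le> D B"
proof -
  have fB: "finite B" using B fin by (rule finite_subset)
  have fL: "finite (\<Lambda> - B)" using fin by simp
  have sub: "SB \<Lambda> - SB B \<subseteq> SB (\<Lambda> - B)" by (auto simp: SB_def)
  have sub2: "SB (\<Lambda> - B) - (SB \<Lambda> - SB B) \<subseteq> Bd B" using B by (auto simp: SB_def Bd_def)
  have fin2: "finite (SB (\<Lambda> - B))" by (rule finite_SB[OF fL])
  have "H (\<Lambda> - B) \<sigma> \<eta> = Gf \<Lambda> B \<sigma> \<eta> + (\<Sum>A\<in>SB (\<Lambda> - B) - (SB \<Lambda> - SB B). \<Phi> A \<sigma> \<eta>)"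
    unfolding ham_sum[OF fL] Gf_def using sum.subset_diff[OF sub fin2, where g="\<lambda>A. \<Phi> A \<sigma> \<eta>"] by linarith
  moreover have "\<bar>\<Sum>A\<in>SB (\<Lambda> - B) - (SB \<Lambda> - SB B). \<Phi> A \<sigma> \<eta>\<bar> \<le> D B"
  proof -
    have "\<bar>\<Sum>A\<in>SB (\<Lambda> - B) - (SB \<Lambda> - SB B). \<Phi> A \<sigma> \<eta>\<bar> \<le> (\<Sum>A\<in>SB (\<Lambda> - B) - (SB \<Lambda> - SB B). \<bar>\<Phi> A \<sigma> \<eta>\<bar>)"
      by (rule sum_abs)
    also have "\<dots> \<le> (\<Sum>A\<in>SB (\<Lambda> - B) - (SB \<Lambda> - SB B). M)"
      by (intro sum_mono Phi_bound) (auto simp: SB_def small_def)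
    also have "\<dots> = real (card (SB (\<Lambda> - B) - (SB \<Lambda> - SB B))) * M" by simp
    also have "\<dots> \<le> real (card (Bd B)) * M"
      using card_mono[OF finite_Bd[OF fB] sub2] M_nonneg by (intro mult_right_mono) auto
    also have "\<dots> \<le> D B" unfolding D_def using M_nonneg by simp
    finally show ?thesis .
  qed
  ultimately show ?thesis by linarith
qed

lemma Z_as_sum:
  assumes fin: "finite \<Lambda>" and B: "B \<subseteq> \<Lambda>"
  shows "Z \<tau> \<Lambda> \<eta> = (\<Sum>\<sigma>\<in>bc_configs \<tau> (\<Lambda> - B). exp (- Gf \<Lambda> B \<sigma> \<eta>) * Z \<sigma> B \<eta>)"
proof -
  have "Z \<tau> \<Lambda> \<eta> = (\<Sum>\<sigma>\<in>bc_configs \<tau> (\<Lambda> - B). \<Sum>s\<in>bc_configs \<sigma> B. exp (- H \<Lambda> s \<eta>))"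
    unfolding partition_fn_def by (rule sum_split[OF fin B])
  also have "\<dots> = (\<Sum>\<sigma>\<in>bc_configs \<tau> (\<Lambda> - B). exp (- Gf \<Lambda> B \<sigma> \<eta>) * Z \<sigma> B \<eta>)"
  proof (rule sum.cong[OF refl])
    fix \<sigma> assume "\<sigma> \<in> bc_configs \<tau> (\<Lambda> - B)"
    have "(\<Sum>s\<in>bc_configs \<sigma> B. exp (- H \<Lambda> s \<eta>)) = (\<Sum>s\<in>bc_configs \<sigma> B. exp (- Gf \<Lambda> B \<sigma> \<eta>) * exp (- H B s \<eta>))"
    proof (rule sum.cong[OF refl])
      fix s assume "s \<in> bc_configs \<sigma> B"
      then have g: "Gf \<Lambda> B s \<eta> = Gf \<Lambda> B \<sigma> \<eta>" by (rule Gf_local)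
      show "exp (- H \<Lambda> s \<eta>) = exp (- Gf \<Lambda> B \<sigma> \<eta>) * exp (- H B s \<eta>)"
        unfolding H_decomp[OF fin B] g by (simp add: exp_add[symmetric] algebra_simps)
    qed
    then show "(\<Sum>s\<in>bc_configs \<sigma> B. exp (- H \<Lambda> s \<eta>)) = exp (- Gf \<Lambda> B \<sigma> \<eta>) * Z \<sigma> B \<eta>"
      by (simp add: partition_fn_def sum_distrib_left)
  qed
  finally show ?thesis .
qed

lemma Z_split_bounds:
  assumes fin: "finite \<Lambda>" and B: "B \<subseteq> \<Lambda>"
  shows "Z \<tau> \<Lambda> \<eta> \<le> exp (2 * D B) * (Z \<tau> B \<eta> * Z \<tau> (\<Lambda> - B) \<eta>)"
    and "Z \<tau> B \<eta> * Z \<tau> (\<Lambda> - B) \<eta> \<le> exp (2 * D B) * Z \<tau> \<Lambda> \<eta>"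
proof -
  have fB: "finite B" using B fin by (rule finite_subset)
  have fL: "finite (\<Lambda> - B)" using fin by simp
  have e2: "exp (2 * D B) = exp (D B) * exp (D B)" by (simp add: exp_add[symmetric])
  have ZL: "Z \<tau> (\<Lambda> - B) \<eta> = (\<Sum>\<sigma>\<in>bc_configs \<tau> (\<Lambda> - B). exp (- H (\<Lambda> - B) \<sigma> \<eta>))"
    by (simp add: partition_fn_def)
  have "Z \<tau> \<Lambda> \<eta> \<le> (\<Sum>\<sigma>\<in>bc_configs \<tau> (\<Lambda> - B). exp (2 * D B) * Z \<tau> B \<eta> * exp (- H (\<Lambda> - B) \<sigma> \<eta>))"
    unfolding Z_as_sum[OF fin B]
  proof (rule sum_mono)
    fix \<sigma> assume "\<sigma> \<in> bc_configs \<tau> (\<Lambda> - B)"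
    have a: "exp (- Gf \<Lambda> B \<sigma> \<eta>) \<le> exp (D B) * exp (- H (\<Lambda> - B) \<sigma> \<eta>)"
      using Gf_H[OF fin B, of \<sigma> \<eta>] by (simp add: exp_add[symmetric] abs_le_iff)
    have b: "Z \<sigma> B \<eta> \<le> exp (D B) * Z \<tau> B \<eta>" by (rule Z_le[OF fB]) simp
    have "exp (- Gf \<Lambda> B \<sigma> \<eta>) * Z \<sigma> B \<eta> \<le> (exp (D B) * exp (- H (\<Lambda> - B) \<sigma> \<eta>)) * (exp (D B) * Z \<tau> B \<eta>)"
      using Z_pos[OF fB, of \<sigma> \<eta>] by (intro mult_mono[OF a b]) auto
    then show "exp (- Gf \<Lambda> B \<sigma> \<eta>) * Z \<sigma> B \<eta> \<le> exp (2 * D B) * Z \<tau> B \<eta> * exp (- H (\<Lambda> - B) \<sigma> \<eta>)"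
      unfolding e2 by (simp add: algebra_simps)
  qed
  also have "\<dots> = exp (2 * D B) * (Z \<tau> B \<eta> * Z \<tau> (\<Lambda> - B) \<eta>)"
    unfolding ZL by (simp add: sum_distrib_left algebra_simps)
  finally show "Z \<tau> \<Lambda> \<eta> \<le> exp (2 * D B) * (Z \<tau> B \<eta> * Z \<tau> (\<Lambda> - B) \<eta>)" .
  have "Z \<tau> B \<eta> * Z \<tau> (\<Lambda> - B) \<eta> = (\<Sum>\<sigma>\<in>bc_configs \<tau> (\<Lambda> - B). Z \<tau> B \<eta> * exp (- H (\<Lambda> - B) \<sigma> \<eta>))"
    unfolding ZL by (simp add: sum_distrib_left)
  also have "\<dots> \<le> (\<Sum>\<sigma>\<in>bc_configs \<tau> (\<Lambda> - B). exp (2 * D B) * (exp (- Gf \<Lambda> B \<sigma> \<eta>) * Z \<sigma> B \<eta>))"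
  proof (rule sum_mono)
    fix \<sigma> assume "\<sigma> \<in> bc_configs \<tau> (\<Lambda> - B)"
    have a: "exp (- H (\<Lambda> - B) \<sigma> \<eta>) \<le> exp (D B) * exp (- Gf \<Lambda> B \<sigma> \<eta>)"
      using Gf_H[OF fin B, of \<sigma> \<eta>] by (simp add: exp_add[symmetric] abs_le_iff)
    have b: "Z \<tau> B \<eta> \<le> exp (D B) * Z \<sigma> B \<eta>" by (rule Z_le[OF fB]) simp
    have "Z \<tau> B \<eta> * exp (- H (\<Lambda> - B) \<sigma> \<eta>) \<le> (exp (D B) * Z \<sigma> B \<eta>) * (exp (D B) * exp (- Gf \<Lambda> B \<sigma> \<eta>))"
      using Z_pos[OF fB, of \<sigma> \<eta>] by (intro mult_mono[OF b a]) auto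
    then show "Z \<tau> B \<eta> * exp (- H (\<Lambda> - B) \<sigma> \<eta>) \<le> exp (2 * D B) * (exp (- Gf \<Lambda> B \<sigma> \<eta>) * Z \<sigma> B \<eta>)"
      unfolding e2 by (simp add: algebra_simps)
  qed
  also have "\<dots> = exp (2 * D B) * Z \<tau> \<Lambda> \<eta>"
    unfolding Z_as_sum[OF fin B] by (simp add: sum_distrib_left)
  finally show "Z \<tau> B \<eta> * Z \<tau> (\<Lambda> - B) \<eta> \<le> exp (2 * D B) * Z \<tau> \<Lambda> \<eta>" .
qed

lemma Z_split:
  assumes fin: "finite \<Lambda>" and B: "B \<subseteq> \<Lambda>"
  shows "\<bar>ln (Z \<tau> \<Lambda> \<eta>) - ln (Z \<tau> B \<eta>) - ln (Z \<tau> (\<Lambda> - B) \<eta>)\<bar> \<le> 2 * D B"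
proof -
  have fB: "finite B" using B fin by (rule finite_subset)
  have fL: "finite (\<Lambda> - B)" using fin by simp
  have p: "Z \<tau> B \<eta> * Z \<tau> (\<Lambda> - B) \<eta> > 0" using Z_pos[OF fB] Z_pos[OF fL] by simp
  have l: "ln (Z \<tau> B \<eta> * Z \<tau> (\<Lambda> - B) \<eta>) = ln (Z \<tau> B \<eta>) + ln (Z \<tau> (\<Lambda> - B) \<eta>)"
    using Z_pos[OF fB, of \<tau> \<eta>] Z_pos[OF fL, of \<tau> \<eta>] by (simp add: ln_mult)
  have "ln (Z \<tau> \<Lambda> \<eta>) \<le> 2 * D B + ln (Z \<tau> B \<eta> * Z \<tau> (\<Lambda> - B) \<eta>)"
    by (rule ln_le_from[OF Z_pos[OF fin] p Z_split_bounds(1)[OF fin B]])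
  moreover have "ln (Z \<tau> B \<eta> * Z \<tau> (\<Lambda> - B) \<eta>) \<le> 2 * D B + ln (Z \<tau> \<Lambda> \<eta>)"
    by (rule ln_le_from[OF p Z_pos[OF fin] Z_split_bounds(2)[OF fin B]])
  ultimately show ?thesis unfolding l by linarith
qed

end

context potl
begin

definition Num :: "('d site \<Rightarrow> 'e) \<Rightarrow> 'd site set \<Rightarrow> 'd site set \<Rightarrow> ('d site \<Rightarrow> 'e) \<Rightarrow> ('d site \<Rightarrow> 'f) \<Rightarrow> real" where
  "Num \<tau> \<Lambda> B \<sigma>q \<eta> = (\<Sum>s\<in>bc_configs \<tau> \<Lambda>. if (\<forall>x\<in>B. s x = \<sigma>q x) then exp (- H \<Lambda> s \<eta>) else 0)"

lemma Num_as_sum: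
  assumes fin: "finite \<Lambda>" and B: "B \<subseteq> \<Lambda>"
  shows "Num \<tau> \<Lambda> B \<sigma>q \<eta> = (\<Sum>\<sigma>\<in>bc_configs \<tau> (\<Lambda> - B).
            exp (- Gf \<Lambda> B \<sigma> \<eta>) * exp (- H B (\<lambda>x. if x \<in> B then \<sigma>q x else \<sigma> x) \<eta>))"
proof -
  have "Num \<tau> \<Lambda> B \<sigma>q \<eta> = (\<Sum>\<sigma>\<in>bc_configs \<tau> (\<Lambda> - B). \<Sum>s\<in>bc_configs \<sigma> B.
          if (\<forall>x\<in>B. s x = \<sigma>q x) then exp (- H \<Lambda> s \<eta>) else 0)"
    unfolding Num_def by (rule sum_split[OF fin B])
  also have "\<dots> = (\<Sum>\<sigma>\<in>bc_configs \<tau> (\<Lambda> - B).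
            exp (- Gf \<Lambda> B \<sigma> \<eta>) * exp (- H B (\<lambda>x. if x \<in> B then \<sigma>q x else \<sigma> x) \<eta>))"
  proof (rule sum.cong[OF refl])
    fix \<sigma> assume "\<sigma> \<in> bc_configs \<tau> (\<Lambda> - B)"
    define u where "u = (\<lambda>x. if x \<in> B then \<sigma>q x else \<sigma> x)"
    have u: "u \<in> bc_configs \<sigma> B" by (simp add: u_def bc_configs_def)
    have iff: "(\<forall>x\<in>B. s x = \<sigma>q x) \<longleftrightarrow> u = s" if "s \<in> bc_configs \<sigma> B" for s
    proof
      assume a: "\<forall>x\<in>B. s x = \<sigma>q x"
      show "u = s"
      proof
        fix x show "u x = s x" using a that by (cases "x \<in> B") (auto simp: u_def bc_configs_def)
      qed
    next
      assume "u = s" then show "\<forall>x\<in>B. s x = \<sigma>q x" by (auto simp: u_def)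
    qed
    have "(\<Sum>s\<in>bc_configs \<sigma> B. if (\<forall>x\<in>B. s x = \<sigma>q x) then exp (- H \<Lambda> s \<eta>) else 0)
        = (\<Sum>s\<in>bc_configs \<sigma> B. if u = s then exp (- H \<Lambda> s \<eta>) else 0)"
      by (rule sum.cong[OF refl]) (simp add: iff)
    also have "\<dots> = exp (- H \<Lambda> u \<eta>)" using u by (simp add: finite_bc[OF finite_subset[OF B fin]])
    also have "\<dots> = exp (- Gf \<Lambda> B \<sigma> \<eta>) * exp (- H B u \<eta>)"
      unfolding H_decomp[OF fin B] Gf_local[OF u] by (simp add: exp_add[symmetric] algebra_simps)
    finally show "(\<Sum>s\<in>bc_configs \<sigma> B. if (\<forall>x\<in>B. s x = \<sigma>q x) then exp (- H \<Lambda> s \<eta>) else 0)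
        = exp (- Gf \<Lambda> B \<sigma> \<eta>) * exp (- H B (\<lambda>x. if x \<in> B then \<sigma>q x else \<sigma> x) \<eta>)"
      by (simp add: u_def)
  qed
  finally show ?thesis .
qed

lemma cyl_ratio:
  assumes fin: "finite \<Lambda>" and B: "B \<subseteq> \<Lambda>"
  shows "Num \<tau> \<Lambda> B \<sigma>q \<eta> \<le> exp (2 * D B) * (exp (- H B \<sigma>q \<eta>) / Z \<tau>' B \<eta>) * Z \<tau> \<Lambda> \<eta>"
    and "exp (- 2 * D B) * (exp (- H B \<sigma>q \<eta>) / Z \<tau>' B \<eta>) * Z \<tau> \<Lambda> \<eta> \<le> Num \<tau> \<Lambda> B \<sigma>q \<eta>"
proof -
  have fB: "finite B" using B fin by (rule finite_subset)
  define S where "S = (\<Sum>\<sigma>\<in>bc_configs \<tau> (\<Lambda> - B). exp (- Gf \<Lambda> B \<sigma> \<eta>))"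
  define e where "e = exp (- H B \<sigma>q \<eta>)"
  define Zb where "Zb = Z \<tau>' B \<eta>"
  have Zb: "Zb > 0" unfolding Zb_def by (rule Z_pos[OF fB])
  have e: "e > 0" by (simp add: e_def)
  have S: "S \<ge> 0" unfolding S_def by (intro sum_nonneg) auto
  have eDD: "exp (D B) * exp (- D B) = 1" by (simp add: exp_add[symmetric])
  have Hu: "\<bar>H B (\<lambda>x. if x \<in> B then \<sigma>q x else \<sigma> x) \<eta> - H B \<sigma>q \<eta>\<bar> \<le> D B" for \<sigma>
    by (rule H_diff[OF fB]) auto
  have N1: "Num \<tau> \<Lambda> B \<sigma>q \<eta> \<le> exp (D B) * e * S"
    unfolding Num_as_sum[OF fin B] S_def sum_distrib_left
  proof (rule sum_mono)
    fix \<sigma>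
    have "exp (- H B (\<lambda>x. if x \<in> B then \<sigma>q x else \<sigma> x) \<eta>) \<le> exp (D B) * e"
      using Hu[of \<sigma>] unfolding e_def by (simp add: exp_add[symmetric] abs_le_iff)
    then show "exp (- Gf \<Lambda> B \<sigma> \<eta>) * exp (- H B (\<lambda>x. if x \<in> B then \<sigma>q x else \<sigma> x) \<eta>) \<le> exp (D B) * e * exp (- Gf \<Lambda> B \<sigma> \<eta>)"
      by (simp add: mult.commute)
  qed
  have N2: "exp (- D B) * e * S \<le> Num \<tau> \<Lambda> B \<sigma>q \<eta>"
    unfolding Num_as_sum[OF fin B] S_def sum_distrib_left
  proof (rule sum_mono)
    fix \<sigma>
    have "exp (- D B) * e \<le> exp (- H B (\<lambda>x. if x \<in> B then \<sigma>q x else \<sigma> x) \<eta>)"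
      using Hu[of \<sigma>] unfolding e_def by (simp add: exp_add[symmetric] abs_le_iff)
    then show "exp (- D B) * e * exp (- Gf \<Lambda> B \<sigma> \<eta>) \<le> exp (- Gf \<Lambda> B \<sigma> \<eta>) * exp (- H B (\<lambda>x. if x \<in> B then \<sigma>q x else \<sigma> x) \<eta>)"
      by (simp add: mult.commute)
  qed
  have Z1: "Z \<tau> \<Lambda> \<eta> \<le> exp (D B) * Zb * S"
    unfolding Z_as_sum[OF fin B] S_def sum_distrib_left
  proof (rule sum_mono)
    fix \<sigma>
    have "Z \<sigma> B \<eta> \<le> exp (D B) * Zb" unfolding Zb_def by (rule Z_le[OF fB]) simp
    then show "exp (- Gf \<Lambda> B \<sigma> \<eta>) * Z \<sigma> B \<eta> \<le> exp (D B) * Zb * exp (- Gf \<Lambda> B \<sigma> \<eta>)"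
      by (simp add: mult.commute)
  qed
  have Z2: "exp (- D B) * Zb * S \<le> Z \<tau> \<Lambda> \<eta>"
    unfolding Z_as_sum[OF fin B] S_def sum_distrib_left
  proof (rule sum_mono)
    fix \<sigma>
    have "Zb \<le> exp (D B) * Z \<sigma> B \<eta>" unfolding Zb_def by (rule Z_le[OF fB]) simp
    then have "exp (- D B) * Zb \<le> exp (- D B) * (exp (D B) * Z \<sigma> B \<eta>)" by simp
    also have "\<dots> = Z \<sigma> B \<eta>" by (simp add: mult.assoc[symmetric] exp_add[symmetric])
    finally show "exp (- D B) * Zb * exp (- Gf \<Lambda> B \<sigma> \<eta>) \<le> exp (- Gf \<Lambda> B \<sigma> \<eta>) * Z \<sigma> B \<eta>"
      by (simp add: mult.commute)
  qed
  have "Num \<tau> \<Lambda> B \<sigma>q \<eta> \<le> exp (D B) * e * S" by (fact N1)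
  also have "\<dots> = exp (2 * D B) * (e / Zb) * (exp (- D B) * Zb * S)"
    using Zb by (simp add: field_simps exp_add[symmetric])
  also have "\<dots> \<le> exp (2 * D B) * (e / Zb) * Z \<tau> \<Lambda> \<eta>"
    using Zb e by (intro mult_left_mono Z2) auto
  finally show "Num \<tau> \<Lambda> B \<sigma>q \<eta> \<le> exp (2 * D B) * (exp (- H B \<sigma>q \<eta>) / Z \<tau>' B \<eta>) * Z \<tau> \<Lambda> \<eta>"
    by (simp add: e_def Zb_def)
  have "exp (- 2 * D B) * (e / Zb) * Z \<tau> \<Lambda> \<eta> \<le> exp (- 2 * D B) * (e / Zb) * (exp (D B) * Zb * S)"
    using Zb e by (intro mult_left_mono Z1) auto
  also have "\<dots> = exp (- D B) * e * S"
    using Zb by (simp add: field_simps exp_add[symmetric])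
  also have "\<dots> \<le> Num \<tau> \<Lambda> B \<sigma>q \<eta>" by (fact N2)
  finally show "exp (- 2 * D B) * (exp (- H B \<sigma>q \<eta>) / Z \<tau>' B \<eta>) * Z \<tau> \<Lambda> \<eta> \<le> Num \<tau> \<Lambda> B \<sigma>q \<eta>"
    by (simp add: e_def Zb_def)
qed

abbreviation img :: "'d site \<Rightarrow> 'd site set \<Rightarrow> 'd site set" where
  "img c A \<equiv> (\<lambda>y. c + y) ` A"

lemma img_inv: "img (- c) (img c A) = A" by (auto simp: image_image)
lemma img_inv2: "img c (img (- c) A) = A" by (auto simp: image_image)

lemma inj_img: "inj_on (img c) X"
  by (rule inj_onI) (metis img_inv)

lemma SB_shift: "SB (img c \<Lambda>) = img c ` SB \<Lambda>"
proof
  show "img c ` SB \<Lambda> \<subseteq> SB (img c \<Lambda>)" by (auto simp: SB_def small_shift)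
  show "SB (img c \<Lambda>) \<subseteq> img c ` SB \<Lambda>"
  proof
    fix A assume A: "A \<in> SB (img c \<Lambda>)"
    have "img (- c) A \<in> SB \<Lambda>"
    proof -
      have "small (img c (img (- c) A))" unfolding img_inv2 using A by (simp add: SB_def)
      then have "small (img (- c) A)" by (simp only: small_shift)
      moreover have "img (- c) A \<inter> \<Lambda> \<noteq> {}" using A by (auto simp: SB_def)
      ultimately show ?thesis by (simp add: SB_def)
    qed
    moreover have "A = img c (img (- c) A)" by (rule img_inv2[symmetric])
    ultimately show "A \<in> img c ` SB \<Lambda>" by (rule rev_image_eqI)
  qed
qed

lemma img_subset_iff: "img c A \<subseteq> img c B \<longleftrightarrow> A \<subseteq> B"
  by (rule inj_image_subset_iff) (simp add: inj_on_def)

lemma Bd_shift: "Bd (img c \<Lambda>) = img c ` Bd \<Lambda>"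
proof -
  have "Bd (img c \<Lambda>) = {A \<in> img c ` SB \<Lambda>. \<not> A \<subseteq> img c \<Lambda>}" by (simp add: Bd_def SB_shift)
  also have "\<dots> = img c ` {A \<in> SB \<Lambda>. \<not> img c A \<subseteq> img c \<Lambda>}" by blast
  also have "\<dots> = img c ` Bd \<Lambda>" by (simp only: img_subset_iff Bd_def)
  finally show ?thesis .
qed

lemma D_shift: "D (img c \<Lambda>) = D \<Lambda>"
  unfolding D_def Bd_shift by (simp add: card_image[OF inj_img])

lemma H_shift:
  assumes fin: "finite \<Lambda>"
  shows "H (img c \<Lambda>) s \<eta> = H \<Lambda> (\<lambda>y. s (c + y)) (\<lambda>y. \<eta> (c + y))"
proof -
  have fin': "finite (img c \<Lambda>)" using fin by simp
  have "H (img c \<Lambda>) s \<eta> = (\<Sum>A\<in>img c ` SB \<Lambda>. \<Phi> A s \<eta>)" unfolding ham_sum[OF fin'] SB_shift ..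
  also have "\<dots> = (\<Sum>A\<in>SB \<Lambda>. \<Phi> (img c A) s \<eta>)" by (rule sum.reindex_cong[OF inj_img refl]) simp
  also have "\<dots> = (\<Sum>A\<in>SB \<Lambda>. \<Phi> A (\<lambda>y. s (c + y)) (\<lambda>y. \<eta> (c + y)))" by (simp add: Phi_shift)
  finally show ?thesis unfolding ham_sum[OF fin] .
qed

lemma Z_shift:
  assumes fin: "finite \<Lambda>"
  shows "Z \<tau> (img c \<Lambda>) \<eta> = Z (\<lambda>y. \<tau> (c + y)) \<Lambda> (\<lambda>y. \<eta> (c + y))"
proof -
  define g where "g = (\<lambda>(s::'d site \<Rightarrow> 'e) y. s (c + y))"
  have bij: "bij_betw g (bc_configs \<tau> (img c \<Lambda>)) (bc_configs (\<lambda>y. \<tau> (c + y)) \<Lambda>)"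
  proof (rule bij_betw_byWitness[where f'="\<lambda>t x. t (x - c)"])
    show "\<forall>a\<in>bc_configs \<tau> (img c \<Lambda>). (\<lambda>t x. t (x - c)) (g a) = a" by (simp add: g_def)
    show "\<forall>a'\<in>bc_configs (\<lambda>y. \<tau> (c + y)) \<Lambda>. g ((\<lambda>t x. t (x - c)) a') = a'" by (simp add: g_def)
    show "g ` bc_configs \<tau> (img c \<Lambda>) \<subseteq> bc_configs (\<lambda>y. \<tau> (c + y)) \<Lambda>"
    proof (clarsimp simp: bc_configs_def g_def)
      fix s x assume s: "\<forall>x. x \<notin> img c \<Lambda> \<longrightarrow> s x = \<tau> x" and x: "x \<notin> \<Lambda>"
      have "c + x \<notin> img c \<Lambda>" using x by auto
      then show "s (c + x) = \<tau> (c + x)" using s by simp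
    qed
    show "(\<lambda>t x. t (x - c)) ` bc_configs (\<lambda>y. \<tau> (c + y)) \<Lambda> \<subseteq> bc_configs \<tau> (img c \<Lambda>)"
    proof (clarsimp simp: bc_configs_def)
      fix t x assume t: "\<forall>x. x \<notin> \<Lambda> \<longrightarrow> t x = \<tau> (c + x)" and x: "x \<notin> img c \<Lambda>"
      have "x - c \<notin> \<Lambda>" using x by (metis add.commute diff_add_cancel image_eqI)
      then show "t (x - c) = \<tau> x" using t by simp
    qed
  qed
  have "Z \<tau> (img c \<Lambda>) \<eta> = (\<Sum>s\<in>bc_configs \<tau> (img c \<Lambda>). exp (- H \<Lambda> (g s) (\<lambda>y. \<eta> (c + y))))"
    unfolding partition_fn_def H_shift[OF fin] g_def ..
  also have "\<dots> = Z (\<lambda>y. \<tau> (c + y)) \<Lambda> (\<lambda>y. \<eta> (c + y))"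
    unfolding partition_fn_def by (rule sum.reindex_bij_betw[OF bij])
  finally show ?thesis .
qed

end

lemma box_mono: "m \<le> n \<Longrightarrow> box m \<subseteq> box n"
  by (auto simp: box_def) (meson of_nat_le_iff order_trans)

lemma shell_lim:
  "(\<lambda>n. real ((2*n+1)^d - (2*(n-a)+1)^d) / real ((2*n+1)^d)) \<longlonglongrightarrow> 0"
proof -
  have lim1: "(\<lambda>n::nat. 2 * real a / (2 * real n + 1)) \<longlonglongrightarrow> 0"
  proof (rule tendsto_divide_0[OF tendsto_const])
    have "filterlim (\<lambda>n::nat. 2 * real n + 1) at_top sequentially" by real_asymp
    then show "filterlim (\<lambda>n::nat. 2 * real n + 1) at_infinity sequentially"
      by (rule filterlim_at_top_imp_at_infinity)
  qed
  have lim2: "(\<lambda>n::nat. 1 - (1 - 2 * real a / (2 * real n + 1)) ^ d) \<longlonglongrightarrow> 1 - (1 - 0) ^ d"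
    by (intro tendsto_intros lim1)
  have ev: "eventually (\<lambda>n. 1 - (1 - 2 * real a / (2 * real n + 1)) ^ d =
          real ((2*n+1)^d - (2*(n-a)+1)^d) / real ((2*n+1)^d)) sequentially"
    using eventually_ge_at_top[of a]
  proof eventually_elim
    case (elim n)
    have le: "(2*(n-a)+1)^d \<le> (2*n+1)^d" by (intro power_mono) auto
    have r: "real (2*(n-a)+1) = 2 * real n + 1 - 2 * real a" using elim by (simp add: of_nat_diff)
    have pos: "(2 * real n + 1) > 0" by simp
    have "1 - 2 * real a / (2 * real n + 1) = real (2*(n-a)+1) / (2 * real n + 1)"
      unfolding r using pos by (simp add: field_simps)
    then have "1 - (1 - 2 * real a / (2 * real n + 1)) ^ d = 1 - real ((2*(n-a)+1)^d) / real ((2*n+1)^d)"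
      by (simp add: power_divide add.commute)
    also have "\<dots> = real ((2*n+1)^d - (2*(n-a)+1)^d) / real ((2*n+1)^d)"
      using le pos by (simp add: of_nat_diff field_simps)
    finally show ?case .
  qed
  show ?thesis using Lim_transform_eventually[OF lim2 ev] by simp
qed

context potl
begin

lemma ib_box: "R \<le> n \<Longrightarrow> ib (box n) \<subseteq> box n - box (n - R)"
proof
  fix x assume Rn: "R \<le> n" and x: "x \<in> ib (box n)"
  have "x \<notin> box (n - R)"
  proof
    assume xb: "x \<in> box (n - R)"
    have "cube R x \<subseteq> box n"
    proof
      fix y assume y: "y \<in> cube R x"
      have "\<bar>y$i\<bar> \<le> int n" for i
      proof -
        have a: "\<bar>y$i - x$i\<bar> \<le> int R" using y by (simp add: mem_cube)
        have b: "\<bar>x$i\<bar> \<le> int (n - R)" using xb by (simp add: box_def)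
        show ?thesis using a b Rn by (auto simp: abs_le_iff of_nat_diff)
      qed
      then show "y \<in> box n" by (simp add: box_def)
    qed
    then show False using x by (simp add: ib_def)
  qed
  then show "x \<in> box n - box (n - R)" using x by (simp add: ib_def)
qed

lemma D_box_bound:
  assumes "R \<le> n"
  shows "D (box n) \<le> 2 * M * 2 ^ card (box R :: 'd site set) * real ((2*n+1)^CARD('d) - (2*(n-R)+1)^CARD('d))"
proof -
  have "card (ib (box n :: 'd site set)) \<le> card (box n - box (n - R) :: 'd site set)"
    by (rule card_mono[OF _ ib_box[OF assms]]) simp
  also have "\<dots> = card (box n :: 'd site set) - card (box (n - R) :: 'd site set)"
    by (rule card_Diff_subset) (simp_all add: box_mono)
  also have "\<dots> = (2*n+1)^CARD('d) - (2*(n-R)+1)^CARD('d)" by (simp add: card_box)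
  finally have c: "card (ib (box n :: 'd site set)) \<le> (2*n+1)^CARD('d) - (2*(n-R)+1)^CARD('d)" .
  have "card (Bd (box n :: 'd site set)) \<le> ((2*n+1)^CARD('d) - (2*(n-R)+1)^CARD('d)) * 2 ^ card (box R :: 'd site set)"
    using card_Bd[of "box n"] c by (meson le_trans finite_box mult_le_mono1)
  then have "real (card (Bd (box n :: 'd site set))) \<le> real (((2*n+1)^CARD('d) - (2*(n-R)+1)^CARD('d)) * 2 ^ card (box R :: 'd site set))"
    by (simp only: of_nat_le_iff)
  then have "real (card (Bd (box n :: 'd site set))) \<le> real ((2*n+1)^CARD('d) - (2*(n-R)+1)^CARD('d)) * 2 ^ card (box R :: 'd site set)"
    by (simp only: of_nat_mult of_nat_power of_nat_numeral)
  then have "2 * M * real (card (Bd (box n :: 'd site set))) \<le> 2 * M * (real ((2*n+1)^CARD('d) - (2*(n-R)+1)^CARD('d)) * 2 ^ card (box R :: 'd site set))"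
    using M_nonneg by (intro mult_left_mono) auto
  then show ?thesis unfolding D_def by (simp add: algebra_simps)
qed

lemma D_box_lim: "(\<lambda>n. D (box n) / real (card (box n :: 'd site set))) \<longlonglongrightarrow> 0"
proof (rule tendsto_sandwich)
  define K where "K = 2 * M * 2 ^ card (box R :: 'd site set)"
  show "eventually (\<lambda>n. 0 \<le> D (box n) / real (card (box n :: 'd site set))) sequentially"
    using D_nonneg by auto
  show "eventually (\<lambda>n. D (box n) / real (card (box n :: 'd site set)) \<le>
      K * (real ((2*n+1)^CARD('d) - (2*(n-R)+1)^CARD('d)) / real ((2*n+1)^CARD('d)))) sequentially"
    using eventually_ge_at_top[of R]
  proof eventually_elim
    case (elim n)
    have "D (box n) / real (card (box n :: 'd site set)) \<le> K * real ((2*n+1)^CARD('d) - (2*(n-R)+1)^CARD('d)) / real ((2*n+1)^CARD('d))"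
      using D_box_bound[OF elim] unfolding K_def card_box by (intro divide_right_mono) auto
    then show ?case by simp
  qed
  show "(\<lambda>n. 0::real) \<longlonglongrightarrow> 0" by simp
  show "(\<lambda>n. K * (real ((2*n+1)^CARD('d) - (2*(n-R)+1)^CARD('d)) / real ((2*n+1)^CARD('d)))) \<longlonglongrightarrow> 0"
    by (rule tendsto_mult_right_zero[OF shell_lim])
qed

end

locale model = potl \<Phi> for \<Phi> :: "'d::finite site set \<Rightarrow> ('d site \<Rightarrow> 'e::finite) \<Rightarrow> ('d site \<Rightarrow> 'f::finite) \<Rightarrow> real" +
  fixes p :: "'f pmf" and P :: "('d site \<Rightarrow> 'f) measure"
  assumes P_def: "P = PiM UNIV (\<lambda>_. measure_pmf p)"

sublocale model \<subseteq> PP: product_prob_space "\<lambda>_::'d site. measure_pmf p" "UNIV :: 'd site set"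
  by unfold_locales

sublocale model \<subseteq> Pr: prob_space P
  unfolding P_def by (rule prob_space_PiM) (rule prob_space_measure_pmf)

context model
begin

lemma space_P[simp]: "space P = UNIV"
  by (simp add: P_def space_PiM)

lemma sets_finPiM:
  fixes W :: "'d site set"
  assumes W: "finite W" and A: "A \<subseteq> space (PiM W (\<lambda>_. measure_pmf p))"
  shows "A \<in> sets (PiM W (\<lambda>_. measure_pmf p))"
proof -
  have sp: "space (PiM W (\<lambda>_. measure_pmf p)) = Pi\<^sub>E W (\<lambda>_. UNIV)" by (simp add: space_PiM)
  have fA: "finite A" using A W unfolding sp by (rule finite_subset[OF _ finite_PiE]) auto
  have "A = (\<Union>\<zeta>\<in>A. {\<zeta>})" by auto
  also have "\<dots> \<in> sets (PiM W (\<lambda>_. measure_pmf p))"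
  proof (rule sets.finite_UN[OF fA])
    fix \<zeta> assume "\<zeta> \<in> A"
    then have "\<zeta> \<in> extensional W" using A unfolding sp by (auto simp: PiE_def)
    then have "{\<zeta>} = Pi\<^sub>E W (\<lambda>x. {\<zeta> x})" by (simp add: PiE_singleton)
    also have "\<dots> \<in> sets (PiM W (\<lambda>_. measure_pmf p))" by (rule sets_PiM_I_finite[OF W]) auto
    finally show "{\<zeta>} \<in> sets (PiM W (\<lambda>_. measure_pmf p))" .
  qed
  finally show ?thesis .
qed

lemma fin_meas:
  fixes W :: "'d site set" and g :: "('d site \<Rightarrow> 'f) \<Rightarrow> real"
  assumes W: "finite W"
  shows "g \<in> borel_measurable (PiM W (\<lambda>_. measure_pmf p))"
proof (rule measurableI)
  fix A :: "real set" assume "A \<in> sets borel"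
  show "g -` A \<inter> space (PiM W (\<lambda>_. measure_pmf p)) \<in> sets (PiM W (\<lambda>_. measure_pmf p))"
    by (rule sets_finPiM[OF W]) (rule Int_lower2)
qed simp

definition local_on :: "'d site set \<Rightarrow> (('d site \<Rightarrow> 'f) \<Rightarrow> 'a) \<Rightarrow> bool" where
  "local_on W f \<longleftrightarrow> (\<forall>\<eta> \<eta>'. (\<forall>x\<in>W. \<eta> x = \<eta>' x) \<longrightarrow> f \<eta> = f \<eta>')"

lemma local_onI:
  assumes "\<And>\<eta> \<eta>'. (\<And>x. x \<in> W \<Longrightarrow> \<eta> x = \<eta>' x) \<Longrightarrow> f \<eta> = f \<eta>'"
  shows "local_on W f"
  unfolding local_on_def
proof (intro allI impI)
  fix \<eta> \<eta>' :: "'d site \<Rightarrow> 'f" assume "\<forall>x\<in>W. \<eta> x = \<eta>' x"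
  then show "f \<eta> = f \<eta>'" by (intro assms) simp
qed

lemma local_onD: "local_on W f \<Longrightarrow> (\<And>x. x \<in> W \<Longrightarrow> \<eta> x = \<eta>' x) \<Longrightarrow> f \<eta> = f \<eta>'"
  unfolding local_on_def by simp

lemma local_on_restrict: "local_on W f \<Longrightarrow> f (restrict \<eta> W) = f \<eta>"
  by (erule local_onD) simp

lemma local_meas:
  fixes f :: "('d site \<Rightarrow> 'f) \<Rightarrow> real"
  assumes W: "finite W" and loc: "local_on W f"
  shows "f \<in> borel_measurable P"
proof -
  have "(\<lambda>\<eta>. f (restrict \<eta> W)) \<in> borel_measurable P"
    unfolding P_def by (rule measurable_compose[OF measurable_restrict_subset fin_meas[OF W]]) simp
  then show ?thesis using local_on_restrict[OF loc] by simp
qed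

definition cylP :: "'d site set \<Rightarrow> ('d site \<Rightarrow> 'f) \<Rightarrow> ('d site \<Rightarrow> 'f) set" where
  "cylP W \<zeta> = {\<eta> \<in> space P. \<forall>x\<in>W. \<eta> x = \<zeta> x}"

lemma cyl_emb: "cylP W (\<zeta> :: 'd site \<Rightarrow> 'f) = prod_emb UNIV (\<lambda>_. measure_pmf p) W (Pi\<^sub>E W (\<lambda>x. {\<zeta> x}))"
  unfolding cylP_def space_P by (auto simp: prod_emb_def space_PiM PiE_iff)

lemma cyl_sets: "finite W \<Longrightarrow> cylP W (\<zeta> :: 'd site \<Rightarrow> 'f) \<in> sets P"
  unfolding cyl_emb unfolding P_def by (rule sets_PiM_I) auto

lemma measure_cyl: "finite W \<Longrightarrow> measure P (cylP W (\<zeta> :: 'd site \<Rightarrow> 'f)) = (\<Prod>x\<in>W. pmf p (\<zeta> x))"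
  unfolding cyl_emb unfolding P_def by (subst PP.measure_PiM_emb) (auto simp: measure_pmf_single)

lemma local_rep:
  fixes f :: "('d site \<Rightarrow> 'f) \<Rightarrow> real"
  assumes W: "finite W" and loc: "local_on W f"
  shows "f \<eta> = (\<Sum>\<zeta>\<in>Pi\<^sub>E W (\<lambda>_. UNIV). f \<zeta> * indicator (cylP W \<zeta>) \<eta>)"
proof -
  have "(\<Sum>\<zeta>\<in>Pi\<^sub>E W (\<lambda>_. UNIV). f \<zeta> * indicator (cylP W \<zeta>) \<eta>)
      = (\<Sum>\<zeta>\<in>Pi\<^sub>E W (\<lambda>_. UNIV). if restrict \<eta> W = \<zeta> then f \<zeta> else 0)"
  proof (rule sum.cong[OF refl])
    fix \<zeta> :: "'d site \<Rightarrow> 'f" assume z: "\<zeta> \<in> Pi\<^sub>E W (\<lambda>_. UNIV)"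
    have "\<eta> \<in> cylP W \<zeta> \<longleftrightarrow> restrict \<eta> W = \<zeta>"
    proof
      assume "\<eta> \<in> cylP W \<zeta>"
      then show "restrict \<eta> W = \<zeta>" using z by (auto simp: cylP_def PiE_def extensional_def)
    next
      assume "restrict \<eta> W = \<zeta>"
      then show "\<eta> \<in> cylP W \<zeta>" by (auto simp: cylP_def)
    qed
    then show "f \<zeta> * indicator (cylP W \<zeta>) \<eta> = (if restrict \<eta> W = \<zeta> then f \<zeta> else 0)"
      by (simp add: indicator_def)
  qed
  also have "\<dots> = f (restrict \<eta> W)" by (subst sum.delta') (simp_all add: W finite_PiE)
  also have "\<dots> = f \<eta>" by (rule local_on_restrict[OF loc])
  finally show ?thesis ..
qed

lemma local_integrable:
  fixes f :: "('d site \<Rightarrow> 'f) \<Rightarrow> real"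
  assumes W: "finite W" and loc: "local_on W f"
  shows "integrable P f"
proof -
  have "integrable P (\<lambda>\<eta>. \<Sum>\<zeta>\<in>Pi\<^sub>E W (\<lambda>_. UNIV). f \<zeta> * indicator (cylP W \<zeta>) \<eta>)"
    by (intro Bochner_Integration.integrable_sum Bochner_Integration.integrable_mult_right integrable_real_indicator cyl_sets[OF W])
       (simp_all add: Pr.emeasure_eq_measure)
 moreover have "(\<lambda>\<eta>. \<Sum>\<zeta>\<in>Pi\<^sub>E W (\<lambda>_. UNIV). f \<zeta> * indicator (cylP W \<zeta>) \<eta>) = f"
    by (rule ext) (rule local_rep[OF W loc, symmetric])
  ultimately show ?thesis by simp
qed

lemma local_integral:
  fixes f :: "('d site \<Rightarrow> 'f) \<Rightarrow> real"
  assumes W: "finite W" and loc: "local_on W f"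
  shows "(\<integral>\<eta>. f \<eta> \<partial>P) = (\<Sum>\<zeta>\<in>Pi\<^sub>E W (\<lambda>_. UNIV). f \<zeta> * measure P (cylP W \<zeta>))"
proof -
  have "(\<integral>\<eta>. f \<eta> \<partial>P) = (\<integral>\<eta>. (\<Sum>\<zeta>\<in>Pi\<^sub>E W (\<lambda>_. UNIV). f \<zeta> * indicator (cylP W \<zeta>) \<eta>) \<partial>P)"
    by (subst local_rep[OF W loc]) (rule refl)
  also have "\<dots> = (\<Sum>\<zeta>\<in>Pi\<^sub>E W (\<lambda>_. UNIV). f \<zeta> * measure P (cylP W \<zeta>))"
    by (subst Bochner_Integration.integral_sum)
       (auto intro!: Bochner_Integration.integrable_mult_right integrable_real_indicator cyl_sets[OF W]
             simp: Pr.emeasure_eq_measure)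
  finally show ?thesis .
qed

end

context model
begin

lemma comp_meas: "(\<lambda>\<eta>. \<eta> x) \<in> measurable P (measure_pmf p)"
  unfolding P_def by (rule measurable_component_singleton) simp

lemma shift_meas: "(\<lambda>\<eta> y. \<eta> (c + y)) \<in> measurable P P"
proof -
  have "(\<lambda>\<eta> y. \<eta> (c + y)) \<in> measurable P (PiM UNIV (\<lambda>_. measure_pmf p))"
    by (rule measurable_PiM_single'[OF comp_meas]) (simp add: space_PiM)
  then show ?thesis by (simp add: P_def)
qed

lemma emb_Collect:
  "prod_emb UNIV (\<lambda>_. measure_pmf p) J (Pi\<^sub>E J F) = {x \<in> space P. \<forall>i\<in>J. x i \<in> F i}"
  by (auto simp: prod_emb_def PiE_iff P_def space_PiM)

lemma shift_distr: "distr P P (\<lambda>\<eta> y. \<eta> (c + y)) = P"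
proof -
  have "distr P P (\<lambda>\<eta> y. \<eta> (c + y)) = PiM UNIV (\<lambda>_. measure_pmf p)"
  proof (rule PP.PiM_eq)
    show "sets (distr P P (\<lambda>\<eta> y. \<eta> (c + y))) = sets (Pi\<^sub>M UNIV (\<lambda>_. measure_pmf p))"
      by (simp add: P_def)
  next
    fix J :: "'d site set" and F assume J: "finite J"
    have pre: "(\<lambda>\<eta> y. \<eta> (c + y)) -` prod_emb UNIV (\<lambda>_. measure_pmf p) J (Pi\<^sub>E J F) \<inter> space P
        = {x \<in> space P. \<forall>i\<in>img c J. x i \<in> F (i - c)}"
      unfolding emb_Collect by auto
    have "emeasure (distr P P (\<lambda>\<eta> y. \<eta> (c + y))) (prod_emb UNIV (\<lambda>_. measure_pmf p) J (Pi\<^sub>E J F))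
        = emeasure P {x \<in> space P. \<forall>i\<in>img c J. x i \<in> F (i - c)}"
    proof (subst emeasure_distr[OF shift_meas])
      show "prod_emb UNIV (\<lambda>_. measure_pmf p) J (Pi\<^sub>E J F) \<in> sets P"
        unfolding P_def by (rule sets_PiM_I) (auto simp: J)
    qed (simp only: pre)
    also have "\<dots> = (\<Prod>i\<in>img c J. emeasure (measure_pmf p) (F (i - c)))"
      unfolding P_def by (subst PP.emeasure_PiM_Collect) (auto simp: J)
    also have "\<dots> = (\<Prod>j\<in>J. emeasure (measure_pmf p) (F j))"
      by (subst prod.reindex) (auto simp: inj_on_def)
    finally show "emeasure (distr P P (\<lambda>\<eta> y. \<eta> (c + y))) (prod_emb UNIV (\<lambda>_. measure_pmf p) J (Pi\<^sub>E J F))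
        = (\<Prod>j\<in>J. emeasure (measure_pmf p) (F j))" .
  qed
  then show ?thesis by (simp add: P_def)
qed

lemma shift_integral:
  fixes f :: "('d site \<Rightarrow> 'f) \<Rightarrow> real"
  assumes "f \<in> borel_measurable P"
  shows "(\<integral>\<eta>. f (\<lambda>y. \<eta> (c + y)) \<partial>P) = (\<integral>\<eta>. f \<eta> \<partial>P)"
proof -
  have "(\<integral>\<eta>. f \<eta> \<partial>P) = (\<integral>\<eta>. f \<eta> \<partial>distr P P (\<lambda>\<eta> y. \<eta> (c + y)))" by (simp add: shift_distr)
  also have "\<dots> = (\<integral>\<eta>. f (\<lambda>y. \<eta> (c + y)) \<partial>P)"
    using assms by (subst integral_distr[OF shift_meas]) simp_all
  finally show ?thesis ..
qed

definition Hsum :: real where "Hsum = (\<Sum>a\<in>UNIV. pmf p a * ln (pmf p a))"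

lemma int_comp:
  fixes g :: "'f \<Rightarrow> real"
  shows "(\<integral>\<eta>. g (\<eta> x) \<partial>P) = (\<Sum>a\<in>UNIV. g a * pmf p a)"
proof -
  have "(\<integral>\<eta>. g (\<eta> x) \<partial>P) = (\<integral>a. g a \<partial>distr P (measure_pmf p) (\<lambda>\<eta>. \<eta> x))"
    by (subst integral_distr[OF comp_meas]) simp_all
  also have "distr P (measure_pmf p) (\<lambda>\<eta>. \<eta> x) = measure_pmf p"
    unfolding P_def by (rule PP.PiM_component) simp
  also have "(\<integral>a. g a \<partial>measure_pmf p) = (\<Sum>a\<in>UNIV. g a * pmf p a)"
    by (rule integral_measure_pmf_real) simp_all
  finally show ?thesis .
qed

lemma AE_pos: "AE \<eta> in P. pmf p (\<eta> x) > 0"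
proof -
  have "AE a in measure_pmf p. pmf p a > 0"
    by (simp add: AE_measure_pmf_iff pmf_positive)
  then show ?thesis unfolding P_def by (rule PP.AE_component[rotated]) simp
qed

lemma cyl_restrict: "finite B \<Longrightarrow> measure P (cylP B (restrict \<eta> B)) = (\<Prod>x\<in>B. pmf p (\<eta> x))"
  by (simp add: measure_cyl)

lemma ent_int:
  assumes B: "finite B"
  shows "(\<integral>\<eta>. ln (measure P (cylP B (restrict \<eta> B))) \<partial>P) = real (card B) * Hsum"
proof -
  have AE: "AE \<eta> in P. \<forall>x\<in>B. pmf p (\<eta> x) > 0"
    by (rule AE_finite_allI[OF B]) (rule AE_pos)
  have "(\<integral>\<eta>. ln (measure P (cylP B (restrict \<eta> B))) \<partial>P) = (\<integral>\<eta>. (\<Sum>x\<in>B. ln (pmf p (\<eta> x))) \<partial>P)"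
  proof (rule integral_cong_AE)
    show "(\<lambda>\<eta>. ln (measure P (cylP B (restrict \<eta> B)))) \<in> borel_measurable P"
      by (rule local_meas[OF B]) (rule local_onI, simp add: cyl_restrict[OF B])
    show "(\<lambda>\<eta>. \<Sum>x\<in>B. ln (pmf p (\<eta> x))) \<in> borel_measurable P"
      by (rule local_meas[OF B]) (rule local_onI, simp)
    show "AE \<eta> in P. ln (measure P (cylP B (restrict \<eta> B))) = (\<Sum>x\<in>B. ln (pmf p (\<eta> x)))"
      using AE
    proof eventually_elim
      case (elim \<eta>)
      then show ?case unfolding cyl_restrict[OF B] by (subst ln_prod) (auto simp: B)
    qed
  qed
  also have "\<dots> = (\<Sum>x\<in>B. \<integral>\<eta>. ln (pmf p (\<eta> x)) \<partial>P)"
  proof (rule Bochner_Integration.integral_sum)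
    fix x assume "x \<in> B"
    show "integrable P (\<lambda>\<eta>. ln (pmf p (\<eta> x)))"
      by (rule local_integrable[of "{x}"]) (auto intro: local_onI)
  qed
  also have "\<dots> = (\<Sum>x\<in>B. Hsum)"
    using int_comp[of "\<lambda>a. ln (pmf p a)"] by (simp add: Hsum_def mult.commute)
  finally show ?thesis by simp
qed

lemma ks_entropy_eq: "ks_entropy P = - Hsum"
proof -
  have eq: "(\<Sum>\<zeta>\<in>Pi\<^sub>E (box n) (\<lambda>_. UNIV).
       measure P {\<eta> \<in> space P. \<forall>x\<in>box n. \<eta> x = \<zeta> x} *
       ln (measure P {\<eta> \<in> space P. \<forall>x\<in>box n. \<eta> x = \<zeta> x})) / real (card (box n :: 'd site set)) = Hsum" for n
  proof -
    have B: "finite (box n :: 'd site set)" by simp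
    have loc: "local_on (box n) (\<lambda>\<eta>. ln (measure P (cylP (box n) (restrict \<eta> (box n)))))"
      by (rule local_onI) (simp add: cyl_restrict)
    have "(\<Sum>\<zeta>\<in>Pi\<^sub>E (box n) (\<lambda>_. UNIV).
       measure P {\<eta> \<in> space P. \<forall>x\<in>box n. \<eta> x = \<zeta> x} *
       ln (measure P {\<eta> \<in> space P. \<forall>x\<in>box n. \<eta> x = \<zeta> x}))
       = (\<Sum>\<zeta>\<in>Pi\<^sub>E (box n) (\<lambda>_. UNIV). ln (measure P (cylP (box n) (restrict \<zeta> (box n)))) * measure P (cylP (box n) \<zeta>))"
    proof (rule sum.cong[OF refl])
      fix \<zeta> :: "'d site \<Rightarrow> 'f" assume z: "\<zeta> \<in> Pi\<^sub>E (box n) (\<lambda>_. UNIV)"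
      then have "restrict \<zeta> (box n) = \<zeta>" by (simp add: PiE_def extensional_restrict)
      then show "measure P {\<eta> \<in> space P. \<forall>x\<in>box n. \<eta> x = \<zeta> x} * ln (measure P {\<eta> \<in> space P. \<forall>x\<in>box n. \<eta> x = \<zeta> x})
          = ln (measure P (cylP (box n) (restrict \<zeta> (box n)))) * measure P (cylP (box n) \<zeta>)"
        by (simp add: cylP_def mult.commute)
    qed
    also have "\<dots> = (\<integral>\<eta>. ln (measure P (cylP (box n) (restrict \<eta> (box n)))) \<partial>P)"
      by (rule local_integral[OF B loc, symmetric])
    also have "\<dots> = real (card (box n :: 'd site set)) * Hsum" by (rule ent_int[OF B])
    moreover have "(box n :: 'd site set) \<noteq> {}" using zero_in_box by blast
    ultimately show ?thesis using card_box_pos[of n] by simp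
  qed
  show ?thesis unfolding ks_entropy_def eq by simp
qed

end

lemma space_conf[simp]: "space (conf_space :: ('d::finite site \<Rightarrow> 'a) measure) = UNIV"
  by (simp add: conf_space_def space_PiM)

lemma space_joint[simp]: "space (joint_space :: (('d::finite site \<Rightarrow> 'e) \<times> ('d site \<Rightarrow> 'f)) measure) = UNIV"
  by (simp add: joint_space_def space_pair_measure)

context model
begin

lemma sets_P_conf: "sets P = sets (conf_space :: ('d site \<Rightarrow> 'f) measure)"
  unfolding P_def conf_space_def by (rule sets_PiM_cong) simp_all

lemma pair_meas: "(\<lambda>\<eta>. (\<sigma>, \<eta>)) \<in> measurable P (joint_space :: (('d site \<Rightarrow> 'e) \<times> ('d site \<Rightarrow> 'f)) measure)"
  unfolding joint_space_def
  by (rule measurable_Pair[OF measurable_const measurable_ident_sets[OF sets_P_conf]]) simp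

lemma pmf_gibbs:
  assumes fin: "finite \<Lambda>"
  shows "pmf (gibbs_pmf \<Phi> \<tau> \<Lambda> \<eta>) \<sigma> = (if \<sigma> \<in> bc_configs \<tau> \<Lambda> then exp (- H \<Lambda> \<sigma> \<eta>) / Z \<tau> \<Lambda> \<eta> else 0)"
  unfolding gibbs_pmf_def
proof (rule pmf_embed_pmf)
  show "0 \<le> (if s \<in> bc_configs \<tau> \<Lambda> then exp (- H \<Lambda> s \<eta>) / Z \<tau> \<Lambda> \<eta> else 0)" for s
    using Z_pos[OF fin, of \<tau> \<eta>] by simp
  have "(\<integral>\<^sup>+s. ennreal (if s \<in> bc_configs \<tau> \<Lambda> then exp (- H \<Lambda> s \<eta>) / Z \<tau> \<Lambda> \<eta> else 0) \<partial>count_space UNIV)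
      = (\<Sum>s\<in>bc_configs \<tau> \<Lambda>. ennreal (if s \<in> bc_configs \<tau> \<Lambda> then exp (- H \<Lambda> s \<eta>) / Z \<tau> \<Lambda> \<eta> else 0))"
    by (rule nn_integral_count_space') (auto simp: finite_bc[OF fin])
  also have "\<dots> = ennreal (\<Sum>s\<in>bc_configs \<tau> \<Lambda>. exp (- H \<Lambda> s \<eta>) / Z \<tau> \<Lambda> \<eta>)"
    using Z_pos[OF fin, of \<tau> \<eta>] by (subst sum_ennreal[symmetric]) auto
  also have "(\<Sum>s\<in>bc_configs \<tau> \<Lambda>. exp (- H \<Lambda> s \<eta>) / Z \<tau> \<Lambda> \<eta>) = 1"
    using Z_pos[OF fin, of \<tau> \<eta>] by (simp add: sum_divide_distrib[symmetric] partition_fn_def)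
  finally show "(\<integral>\<^sup>+s. ennreal (if s \<in> bc_configs \<tau> \<Lambda> then exp (- H \<Lambda> s \<eta>) / Z \<tau> \<Lambda> \<eta> else 0) \<partial>count_space UNIV) = 1"
    by simp
qed

definition NB :: "'d site set \<Rightarrow> 'd site set" where "NB \<Lambda> = \<Union> (SB \<Lambda>)"

lemma finite_NB: "finite \<Lambda> \<Longrightarrow> finite (NB \<Lambda>)"
  unfolding NB_def using finite_SB by (auto simp: SB_def small_def)

lemma H_loc: "finite \<Lambda> \<Longrightarrow> local_on (NB \<Lambda>) (\<lambda>\<eta>. H \<Lambda> \<sigma> \<eta>)"
proof (rule local_onI)
  fix \<eta> \<eta>' :: "'d site \<Rightarrow> 'f" assume fin: "finite \<Lambda>" and ag: "\<And>x. x \<in> NB \<Lambda> \<Longrightarrow> \<eta> x = \<eta>' x"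
  show "H \<Lambda> \<sigma> \<eta> = H \<Lambda> \<sigma> \<eta>'" unfolding ham_sum[OF fin]
  proof (rule sum.cong[OF refl], rule Phi_local)
    fix A x assume "A \<in> SB \<Lambda>" "x \<in> A"
    then have "x \<in> NB \<Lambda>" by (auto simp: NB_def)
    then show "\<sigma> x = \<sigma> x \<and> \<eta> x = \<eta>' x" using ag by simp
  qed
qed

lemma Z_loc: "finite \<Lambda> \<Longrightarrow> local_on (NB \<Lambda>) (\<lambda>\<eta>. Z \<tau> \<Lambda> \<eta>)"
proof (rule local_onI)
  fix \<eta> \<eta>' :: "'d site \<Rightarrow> 'f" assume fin: "finite \<Lambda>" and ag: "\<And>x. x \<in> NB \<Lambda> \<Longrightarrow> \<eta> x = \<eta>' x"
  show "Z \<tau> \<Lambda> \<eta> = Z \<tau> \<Lambda> \<eta>'" unfolding partition_fn_def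
    using local_onD[OF H_loc[OF fin] ag] by simp
qed

lemma pmf_gibbs_meas:
  assumes fin: "finite \<Lambda>"
  shows "(\<lambda>\<eta>. pmf (gibbs_pmf \<Phi> \<tau> \<Lambda> \<eta>) \<sigma>) \<in> borel_measurable P"
proof (rule local_meas[OF finite_NB[OF fin]], rule local_onI)
  fix \<eta> \<eta>' :: "'d site \<Rightarrow> 'f" assume ag: "\<And>x. x \<in> NB \<Lambda> \<Longrightarrow> \<eta> x = \<eta>' x"
  show "pmf (gibbs_pmf \<Phi> \<tau> \<Lambda> \<eta>) \<sigma> = pmf (gibbs_pmf \<Phi> \<tau> \<Lambda> \<eta>') \<sigma>"
  proof -
    have h: "H \<Lambda> s \<eta> = H \<Lambda> s \<eta>'" for s using local_onD[OF H_loc[OF fin] ag] by simp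
    have z: "Z \<tau> \<Lambda> \<eta> = Z \<tau> \<Lambda> \<eta>'" using local_onD[OF Z_loc[OF fin] ag] by simp
    show ?thesis by (simp add: pmf_gibbs[OF fin] h z)
  qed
qed

lemma measure_gibbs:
  assumes fin: "finite \<Lambda>"
  shows "measure (measure_pmf (gibbs_pmf \<Phi> \<tau> \<Lambda> \<eta>)) S
       = (\<Sum>\<sigma>\<in>bc_configs \<tau> \<Lambda>. pmf (gibbs_pmf \<Phi> \<tau> \<Lambda> \<eta>) \<sigma> * indicator S \<sigma>)"
proof -
  let ?G = "gibbs_pmf \<Phi> \<tau> \<Lambda> \<eta>"
  have sub: "set_pmf ?G \<subseteq> bc_configs \<tau> \<Lambda>"
    by (auto simp: set_pmf_iff pmf_gibbs[OF fin] split: if_splits)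
  have "measure (measure_pmf ?G) S = measure (measure_pmf ?G) (S \<inter> set_pmf ?G)"
    by (simp add: measure_Int_set_pmf)
  also have "S \<inter> set_pmf ?G = (S \<inter> bc_configs \<tau> \<Lambda>) \<inter> set_pmf ?G" using sub by blast
  also have "measure (measure_pmf ?G) \<dots> = measure (measure_pmf ?G) (S \<inter> bc_configs \<tau> \<Lambda>)"
    by (simp add: measure_Int_set_pmf)
  also have "\<dots> = sum (pmf ?G) (S \<inter> bc_configs \<tau> \<Lambda>)"
    by (rule measure_measure_pmf_finite) (simp add: finite_bc[OF fin])
  also have "\<dots> = sum (pmf ?G) (bc_configs \<tau> \<Lambda> \<inter> S)" by (simp add: Int_commute)
  also have "\<dots> = (\<Sum>\<sigma>\<in>bc_configs \<tau> \<Lambda>. if \<sigma> \<in> S then pmf ?G \<sigma> else 0)"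
    by (rule sum.inter_restrict[OF finite_bc[OF fin]])
  also have "\<dots> = (\<Sum>\<sigma>\<in>bc_configs \<tau> \<Lambda>. pmf ?G \<sigma> * indicator S \<sigma>)"
    by (rule sum.cong[OF refl]) (simp add: indicator_def)
  finally show ?thesis .
qed

definition kern :: "('d site \<Rightarrow> 'e) \<Rightarrow> 'd site set \<Rightarrow> ('d site \<Rightarrow> 'f) \<Rightarrow> (('d site \<Rightarrow> 'e) \<times> ('d site \<Rightarrow> 'f)) measure" where
  "kern \<tau> \<Lambda> \<eta> = distr (measure_pmf (gibbs_pmf \<Phi> \<tau> \<Lambda> \<eta>)) joint_space (\<lambda>\<sigma>. (\<sigma>, \<eta>))"

lemma fv_kern: "fv_joint P \<Phi> \<tau> \<Lambda> = P \<bind> kern \<tau> \<Lambda>"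
  by (simp add: fv_joint_def kern_def[abs_def])

lemma sets_kern[simp]: "sets (kern \<tau> \<Lambda> \<eta>) = sets joint_space" by (simp add: kern_def)

lemma prob_kern: "prob_space (kern \<tau> \<Lambda> \<eta>)"
  unfolding kern_def by (rule prob_space.prob_space_distr) (simp_all add: prob_space_measure_pmf)

lemma emeasure_kern:
  assumes fin: "finite \<Lambda>" and A: "A \<in> sets joint_space"
  shows "emeasure (kern \<tau> \<Lambda> \<eta>) A = ennreal (\<Sum>\<sigma>\<in>bc_configs \<tau> \<Lambda>. pmf (gibbs_pmf \<Phi> \<tau> \<Lambda> \<eta>) \<sigma> * indicator A (\<sigma>, \<eta>))"
proof -
  have "emeasure (kern \<tau> \<Lambda> \<eta>) A = emeasure (measure_pmf (gibbs_pmf \<Phi> \<tau> \<Lambda> \<eta>)) ((\<lambda>\<sigma>. (\<sigma>, \<eta>)) -` A \<inter> UNIV)"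
    unfolding kern_def by (subst emeasure_distr) (simp_all add: A)
  also have "\<dots> = ennreal (measure (measure_pmf (gibbs_pmf \<Phi> \<tau> \<Lambda> \<eta>)) ((\<lambda>\<sigma>. (\<sigma>, \<eta>)) -` A))"
    by (simp add: measure_pmf.emeasure_eq_measure)
  also have "\<dots> = ennreal (\<Sum>\<sigma>\<in>bc_configs \<tau> \<Lambda>. pmf (gibbs_pmf \<Phi> \<tau> \<Lambda> \<eta>) \<sigma> * indicator A (\<sigma>, \<eta>))"
    unfolding measure_gibbs[OF fin] by (simp add: indicator_def)
  finally show ?thesis .
qed

lemma kern_meas:
  assumes fin: "finite \<Lambda>"
  shows "kern \<tau> \<Lambda> \<in> measurable P (subprob_algebra joint_space)"
proof (rule measurable_subprob_algebra)
  show "subprob_space (kern \<tau> \<Lambda> a)" for a using prob_kern prob_space_imp_subprob_space by blast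
  show "sets (kern \<tau> \<Lambda> a) = sets joint_space" for a by simp
  fix A :: "(('d site \<Rightarrow> 'e) \<times> ('d site \<Rightarrow> 'f)) set" assume A: "A \<in> sets joint_space"
  have m: "(\<lambda>\<eta>. \<Sum>\<sigma>\<in>bc_configs \<tau> \<Lambda>. pmf (gibbs_pmf \<Phi> \<tau> \<Lambda> \<eta>) \<sigma> * indicator A (\<sigma>, \<eta>)) \<in> borel_measurable P"
  proof (rule borel_measurable_sum, rule borel_measurable_times)
    fix \<sigma> show "(\<lambda>\<eta>. pmf (gibbs_pmf \<Phi> \<tau> \<Lambda> \<eta>) \<sigma>) \<in> borel_measurable P" by (rule pmf_gibbs_meas[OF fin])
    show "(\<lambda>\<eta>. indicator A (\<sigma>, \<eta>) :: real) \<in> borel_measurable P"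
      by (rule measurable_compose[OF pair_meas borel_measurable_indicator[OF A]])
  qed
  show "(\<lambda>a. emeasure (kern \<tau> \<Lambda> a) A) \<in> borel_measurable P"
    unfolding emeasure_kern[OF fin A] by (rule measurable_compose[OF m measurable_ennreal])
qed

lemma sets_fv: "sets (fv_joint P \<Phi> \<tau> \<Lambda>) = sets joint_space"
  unfolding fv_kern by (rule sets_bind) simp_all

lemma emeasure_fv:
  assumes fin: "finite \<Lambda>" and A: "A \<in> sets joint_space"
  shows "emeasure (fv_joint P \<Phi> \<tau> \<Lambda>) A = (\<integral>\<^sup>+\<eta>. emeasure (kern \<tau> \<Lambda> \<eta>) A \<partial>P)"
  unfolding fv_kern by (rule emeasure_bind[OF _ kern_meas[OF fin] A]) simp

lemma prob_fv: "finite \<Lambda> \<Longrightarrow> prob_space (fv_joint P \<Phi> \<tau> \<Lambda>)"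
  unfolding fv_kern
  by (rule Pr.prob_space_bind[where S=joint_space]) (auto intro: kern_meas prob_kern)

end

definition jcyl :: "'a set \<Rightarrow> ('a \<Rightarrow> 'e) \<times> ('a \<Rightarrow> 'f) \<Rightarrow> (('a \<Rightarrow> 'e) \<times> ('a \<Rightarrow> 'f)) set" where
  "jcyl B \<xi> = {\<xi>'. joint_agree B \<xi> \<xi>'}"

lemma fst_comp_meas: "(\<lambda>\<xi>. fst \<xi> x) \<in> measurable (joint_space :: (('d::finite site \<Rightarrow> 'e) \<times> ('d site \<Rightarrow> 'f)) measure) (count_space UNIV)"
  unfolding joint_space_def conf_space_def
  by (rule measurable_compose[OF measurable_fst measurable_component_singleton]) simp

lemma snd_comp_meas: "(\<lambda>\<xi>. snd \<xi> x) \<in> measurable (joint_space :: (('d::finite site \<Rightarrow> 'e) \<times> ('d site \<Rightarrow> 'f)) measure) (count_space UNIV)"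
  unfolding joint_space_def conf_space_def
  by (rule measurable_compose[OF measurable_snd measurable_component_singleton]) simp

lemma jcyl_sets:
  fixes B :: "'d::finite site set" and \<xi> :: "('d site \<Rightarrow> 'e) \<times> ('d site \<Rightarrow> 'f)"
  assumes "finite B"
  shows "jcyl B \<xi> \<in> sets joint_space"
  using assms
proof (induction B rule: finite_induct)
  case empty
  have "jcyl {} \<xi> = space joint_space" by (simp add: jcyl_def joint_agree_def)
  then show ?case by (simp only: sets.top)
next
  case (insert x B)
  have "jcyl (insert x B) \<xi> = jcyl B \<xi> \<inter> ((\<lambda>\<xi>'. fst \<xi>' x) -` {fst \<xi> x} \<inter> space joint_space)
          \<inter> ((\<lambda>\<xi>'. snd \<xi>' x) -` {snd \<xi> x} \<inter> space joint_space)"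
    by (auto simp: jcyl_def joint_agree_def)
  also have "\<dots> \<in> sets joint_space"
    by (intro sets.Int insert.IH measurable_sets[OF fst_comp_meas] measurable_sets[OF snd_comp_meas]) simp_all
  finally show ?case .
qed

lemma exists_N_subset:
  fixes \<Lambda> :: "nat \<Rightarrow> 'a set"
  assumes "finite B" "incseq \<Lambda>" "(\<Union>N. \<Lambda> N) = UNIV"
  shows "\<exists>N0. \<forall>N\<ge>N0. B \<subseteq> \<Lambda> N"
  using assms(1)
proof (induction B rule: finite_induct)
  case empty then show ?case by simp
next
  case (insert x B)
  then obtain N0 where N0: "\<forall>N\<ge>N0. B \<subseteq> \<Lambda> N" by blast
  have "x \<in> (\<Union>N. \<Lambda> N)" using assms(3) by simp
  then obtain N1 where N1: "x \<in> \<Lambda> N1" by blast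
  have "\<forall>N\<ge>max N0 N1. insert x B \<subseteq> \<Lambda> N"
  proof (intro allI impI)
    fix N assume N: "max N0 N1 \<le> N"
    have "\<Lambda> N1 \<subseteq> \<Lambda> N" using assms(2) N by (simp add: incseq_def)
    then show "insert x B \<subseteq> \<Lambda> N" using N0 N1 N by auto
  qed
  then show ?case by blast
qed

context model
begin

definition rr :: "('d site \<Rightarrow> 'e) \<Rightarrow> 'd site set \<Rightarrow> 'd site set \<Rightarrow> ('d site \<Rightarrow> 'e) \<Rightarrow> ('d site \<Rightarrow> 'f) \<Rightarrow> real" where
  "rr \<tau> \<Lambda> B \<sigma>q \<eta> = Num \<tau> \<Lambda> B \<sigma>q \<eta> / Z \<tau> \<Lambda> \<eta>"

definition ww :: "('d site \<Rightarrow> 'e) \<Rightarrow> 'd site set \<Rightarrow> ('d site \<Rightarrow> 'e) \<Rightarrow> ('d site \<Rightarrow> 'f) \<Rightarrow> real" where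
  "ww \<tau> B \<sigma>q \<eta> = exp (- H B \<sigma>q \<eta>) / Z \<tau> B \<eta>"

lemma ww_pos: "finite B \<Longrightarrow> ww \<tau> B \<sigma>q \<eta> > 0"
  unfolding ww_def using Z_pos by simp

lemma kern_cyl:
  assumes fin: "finite \<Lambda>" and fB: "finite B"
  shows "emeasure (kern \<tau> \<Lambda> \<eta>) (jcyl B (\<sigma>q, \<eta>q)) = ennreal (indicator (cylP B \<eta>q) \<eta> * rr \<tau> \<Lambda> B \<sigma>q \<eta>)"
proof -
  have ind: "indicator (jcyl B (\<sigma>q, \<eta>q)) (\<sigma>, \<eta>) = indicator (cylP B \<eta>q) \<eta> * (if (\<forall>x\<in>B. \<sigma> x = \<sigma>q x) then 1 else 0 :: real)" for \<sigma>
    by (auto simp: indicator_def jcyl_def joint_agree_def cylP_def)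
  have "(\<Sum>\<sigma>\<in>bc_configs \<tau> \<Lambda>. pmf (gibbs_pmf \<Phi> \<tau> \<Lambda> \<eta>) \<sigma> * indicator (jcyl B (\<sigma>q, \<eta>q)) (\<sigma>, \<eta>))
      = indicator (cylP B \<eta>q) \<eta> * (\<Sum>\<sigma>\<in>bc_configs \<tau> \<Lambda>. (if (\<forall>x\<in>B. \<sigma> x = \<sigma>q x) then exp (- H \<Lambda> \<sigma> \<eta>) else 0) / Z \<tau> \<Lambda> \<eta>)"
    unfolding ind sum_distrib_left by (rule sum.cong[OF refl]) (simp add: pmf_gibbs[OF fin])
  also have "\<dots> = indicator (cylP B \<eta>q) \<eta> * rr \<tau> \<Lambda> B \<sigma>q \<eta>"
    by (simp add: rr_def Num_def sum_divide_distrib)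
  finally show ?thesis
    by (simp add: emeasure_kern[OF fin jcyl_sets[OF fB]])
qed

lemma rr_bounds:
  assumes fin: "finite \<Lambda>" and B: "B \<subseteq> \<Lambda>"
  shows "rr \<tau> \<Lambda> B \<sigma>q \<eta> \<le> exp (2 * D B) * ww \<tau> B \<sigma>q \<eta>"
    and "exp (- 2 * D B) * ww \<tau> B \<sigma>q \<eta> \<le> rr \<tau> \<Lambda> B \<sigma>q \<eta>"
proof -
  have Zp: "Z \<tau> \<Lambda> \<eta> > 0" by (rule Z_pos[OF fin])
  show "rr \<tau> \<Lambda> B \<sigma>q \<eta> \<le> exp (2 * D B) * ww \<tau> B \<sigma>q \<eta>"
    unfolding rr_def ww_def using cyl_ratio(1)[OF fin B, where \<tau>=\<tau> and \<sigma>q=\<sigma>q and \<eta>=\<eta> and \<tau>'=\<tau>] Zp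
    by (simp add: pos_divide_le_eq)
  show "exp (- 2 * D B) * ww \<tau> B \<sigma>q \<eta> \<le> rr \<tau> \<Lambda> B \<sigma>q \<eta>"
    unfolding rr_def ww_def using cyl_ratio(2)[OF fin B, where \<tau>=\<tau> and \<sigma>q=\<sigma>q and \<eta>=\<eta> and \<tau>'=\<tau>] Zp
    by (simp add: pos_le_divide_eq)
qed

lemma ww_change:
  assumes fB: "finite B" and ag: "\<And>x. x \<in> B \<Longrightarrow> \<eta> x = \<eta>q x"
  shows "ww \<tau> B \<sigma>q \<eta> \<le> exp (2 * D B) * ww \<tau> B \<sigma>q \<eta>q"
    and "exp (- 2 * D B) * ww \<tau> B \<sigma>q \<eta>q \<le> ww \<tau> B \<sigma>q \<eta>"
proof -
  have Hd: "\<bar>H B \<sigma>q \<eta> - H B \<sigma>q \<eta>q\<bar> \<le> D B" by (rule H_diff[OF fB]) (simp add: ag)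
  have Z1: "Z \<tau> B \<eta> \<le> exp (D B) * Z \<tau> B \<eta>q" by (rule Z_le[OF fB]) (simp add: ag)
  have Z2: "Z \<tau> B \<eta>q \<le> exp (D B) * Z \<tau> B \<eta>" by (rule Z_le[OF fB]) (simp add: ag)
  have p: "Z \<tau> B \<eta> > 0" "Z \<tau> B \<eta>q > 0" using Z_pos[OF fB] by auto
  have e1: "exp (- H B \<sigma>q \<eta>) \<le> exp (D B) * exp (- H B \<sigma>q \<eta>q)"
    using Hd by (simp add: exp_add[symmetric] abs_le_iff)
  have e2: "exp (- H B \<sigma>q \<eta>q) \<le> exp (D B) * exp (- H B \<sigma>q \<eta>)"
    using Hd by (simp add: exp_add[symmetric] abs_le_iff)
  have eD: "exp (2 * D B) = exp (D B) * exp (D B)" by (simp add: exp_add[symmetric])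
  have eD': "exp (- 2 * D B) * (exp (D B) * exp (D B)) = 1" by (simp add: exp_add[symmetric])
  show "ww \<tau> B \<sigma>q \<eta> \<le> exp (2 * D B) * ww \<tau> B \<sigma>q \<eta>q"
  proof -
    have "exp (- H B \<sigma>q \<eta>) * Z \<tau> B \<eta>q \<le> (exp (D B) * exp (- H B \<sigma>q \<eta>q)) * (exp (D B) * Z \<tau> B \<eta>)"
      using p by (intro mult_mono e1 Z2) auto
    then show ?thesis unfolding ww_def eD using p by (simp add: field_simps)
  qed
  show "exp (- 2 * D B) * ww \<tau> B \<sigma>q \<eta>q \<le> ww \<tau> B \<sigma>q \<eta>"
  proof -
    have "exp (- H B \<sigma>q \<eta>q) * Z \<tau> B \<eta> \<le> (exp (D B) * exp (- H B \<sigma>q \<eta>)) * (exp (D B) * Z \<tau> B \<eta>q)"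
      using p by (intro mult_mono e2 Z1) auto
    then have "exp (- 2 * D B) * (exp (- H B \<sigma>q \<eta>q) * Z \<tau> B \<eta>) \<le> exp (- 2 * D B) * ((exp (D B) * exp (D B)) * (exp (- H B \<sigma>q \<eta>) * Z \<tau> B \<eta>q))"
      by (simp add: algebra_simps)
    also have "\<dots> = exp (- H B \<sigma>q \<eta>) * Z \<tau> B \<eta>q" using eD' by (simp add: algebra_simps)
    finally show ?thesis unfolding ww_def using p by (simp add: field_simps)
  qed
qed

lemma rr_cyl_bounds:
  assumes fin: "finite \<Lambda>" and B: "B \<subseteq> \<Lambda>" and ag: "\<And>x. x \<in> B \<Longrightarrow> \<eta> x = \<eta>q x"
  shows "rr \<tau> \<Lambda> B \<sigma>q \<eta> \<le> exp (4 * D B) * ww \<tau> B \<sigma>q \<eta>q"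
    and "exp (- 4 * D B) * ww \<tau> B \<sigma>q \<eta>q \<le> rr \<tau> \<Lambda> B \<sigma>q \<eta>"
proof -
  have fB: "finite B" using B fin by (rule finite_subset)
  have e4: "exp (4 * D B) = exp (2 * D B) * exp (2 * D B)" by (simp add: exp_add[symmetric])
  have e4': "exp (- 4 * D B) = exp (- 2 * D B) * exp (- 2 * D B)" by (simp add: exp_add[symmetric])
  show "rr \<tau> \<Lambda> B \<sigma>q \<eta> \<le> exp (4 * D B) * ww \<tau> B \<sigma>q \<eta>q"
  proof -
    have "rr \<tau> \<Lambda> B \<sigma>q \<eta> \<le> exp (2 * D B) * ww \<tau> B \<sigma>q \<eta>" by (rule rr_bounds(1)[OF fin B])
    also have "\<dots> \<le> exp (2 * D B) * (exp (2 * D B) * ww \<tau> B \<sigma>q \<eta>q)"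
      by (intro mult_left_mono ww_change(1)[OF fB ag]) auto
    finally show ?thesis unfolding e4 by (simp add: algebra_simps)
  qed
  show "exp (- 4 * D B) * ww \<tau> B \<sigma>q \<eta>q \<le> rr \<tau> \<Lambda> B \<sigma>q \<eta>"
  proof -
    have "exp (- 2 * D B) * (exp (- 2 * D B) * ww \<tau> B \<sigma>q \<eta>q) \<le> exp (- 2 * D B) * ww \<tau> B \<sigma>q \<eta>"
      by (intro mult_left_mono ww_change(2)[OF fB ag]) auto
    also have "\<dots> \<le> rr \<tau> \<Lambda> B \<sigma>q \<eta>" by (rule rr_bounds(2)[OF fin B])
    finally show ?thesis unfolding e4' by (simp add: algebra_simps)
  qed
qed

lemma fv_cyl_bounds:
  assumes fin: "finite \<Lambda>" and B: "B \<subseteq> \<Lambda>"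
  shows "measure (fv_joint P \<Phi> \<tau> \<Lambda>) (jcyl B (\<sigma>q, \<eta>q)) \<le> exp (4 * D B) * ww \<tau> B \<sigma>q \<eta>q * measure P (cylP B \<eta>q)"
    and "exp (- 4 * D B) * ww \<tau> B \<sigma>q \<eta>q * measure P (cylP B \<eta>q) \<le> measure (fv_joint P \<Phi> \<tau> \<Lambda>) (jcyl B (\<sigma>q, \<eta>q))"
proof -
  have fB: "finite B" using B fin by (rule finite_subset)
  interpret F: prob_space "fv_joint P \<Phi> \<tau> \<Lambda>" by (rule prob_fv[OF fin])
  have em: "emeasure (fv_joint P \<Phi> \<tau> \<Lambda>) (jcyl B (\<sigma>q, \<eta>q))
      = (\<integral>\<^sup>+\<eta>. ennreal (indicator (cylP B \<eta>q) \<eta> * rr \<tau> \<Lambda> B \<sigma>q \<eta>) \<partial>P)"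
    unfolding emeasure_fv[OF fin jcyl_sets[OF fB]] kern_cyl[OF fin fB] ..
  have cs: "cylP B \<eta>q \<in> sets P" by (rule cyl_sets[OF fB])
  define c where "c = exp (4 * D B) * ww \<tau> B \<sigma>q \<eta>q"
  define c' where "c' = exp (- 4 * D B) * ww \<tau> B \<sigma>q \<eta>q"
  have c: "c \<ge> 0" "c' \<ge> 0" unfolding c_def c'_def using ww_pos[OF fB] by (auto intro: less_imp_le)
  have "emeasure (fv_joint P \<Phi> \<tau> \<Lambda>) (jcyl B (\<sigma>q, \<eta>q)) \<le> (\<integral>\<^sup>+\<eta>. ennreal c * indicator (cylP B \<eta>q) \<eta> \<partial>P)"
    unfolding em
  proof (rule nn_integral_mono)
    fix \<eta> show "ennreal (indicator (cylP B \<eta>q) \<eta> * rr \<tau> \<Lambda> B \<sigma>q \<eta>) \<le> ennreal c * indicator (cylP B \<eta>q) \<eta>"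
    proof (cases "\<eta> \<in> cylP B \<eta>q")
      case True
      then have "rr \<tau> \<Lambda> B \<sigma>q \<eta> \<le> c" unfolding c_def by (intro rr_cyl_bounds(1)[OF fin B]) (auto simp: cylP_def)
      then show ?thesis using True by (simp add: ennreal_leI)
    qed simp
  qed
  also have "\<dots> = ennreal c * emeasure P (cylP B \<eta>q)" by (rule nn_integral_cmult_indicator[OF cs])
  also have "\<dots> = ennreal (c * measure P (cylP B \<eta>q))"
    using c by (simp add: Pr.emeasure_eq_measure ennreal_mult)
  finally show "measure (fv_joint P \<Phi> \<tau> \<Lambda>) (jcyl B (\<sigma>q, \<eta>q)) \<le> exp (4 * D B) * ww \<tau> B \<sigma>q \<eta>q * measure P (cylP B \<eta>q)"
    using c unfolding c_def[symmetric] F.emeasure_eq_measure by (simp add: ennreal_le_iff)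
  have "ennreal (c' * measure P (cylP B \<eta>q)) = ennreal c' * emeasure P (cylP B \<eta>q)"
    using c by (simp add: Pr.emeasure_eq_measure ennreal_mult)
  also have "\<dots> = (\<integral>\<^sup>+\<eta>. ennreal c' * indicator (cylP B \<eta>q) \<eta> \<partial>P)" by (rule nn_integral_cmult_indicator[OF cs, symmetric])
  also have "\<dots> \<le> emeasure (fv_joint P \<Phi> \<tau> \<Lambda>) (jcyl B (\<sigma>q, \<eta>q))"
    unfolding em
  proof (rule nn_integral_mono)
    fix \<eta> show "ennreal c' * indicator (cylP B \<eta>q) \<eta> \<le> ennreal (indicator (cylP B \<eta>q) \<eta> * rr \<tau> \<Lambda> B \<sigma>q \<eta>)"
    proof (cases "\<eta> \<in> cylP B \<eta>q")
      case True
      then have "c' \<le> rr \<tau> \<Lambda> B \<sigma>q \<eta>" unfolding c'_def by (intro rr_cyl_bounds(2)[OF fin B]) (auto simp: cylP_def)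
      then show ?thesis using True by (simp add: ennreal_leI)
    qed simp
  qed
  finally show "exp (- 4 * D B) * ww \<tau> B \<sigma>q \<eta>q * measure P (cylP B \<eta>q) \<le> measure (fv_joint P \<Phi> \<tau> \<Lambda>) (jcyl B (\<sigma>q, \<eta>q))"
    unfolding c'_def[symmetric] F.emeasure_eq_measure by (simp add: ennreal_le_iff)
qed

end

lemma jcyl_agree: "joint_agree B \<xi> \<xi>'' \<Longrightarrow> jcyl B \<xi> = jcyl B \<xi>''"
  by (auto simp: jcyl_def joint_agree_def)

lemma jlocal_meas:
  fixes f :: "(('d::finite site \<Rightarrow> 'e::finite) \<times> ('d site \<Rightarrow> 'f::finite)) \<Rightarrow> real"
  assumes W: "finite W" and loc: "\<And>\<xi> \<xi>'. joint_agree W \<xi> \<xi>' \<Longrightarrow> f \<xi> = f \<xi>'"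
  shows "f \<in> borel_measurable joint_space"
proof -
  let ?S = "Pi\<^sub>E W (\<lambda>_. UNIV :: 'e set) \<times> Pi\<^sub>E W (\<lambda>_. UNIV :: 'f set)"
  have fS: "finite ?S" using W by (intro finite_cartesian_product finite_PiE) auto
  have rep: "f \<xi> = (\<Sum>ab\<in>?S. f ab * indicator (jcyl W ab) \<xi>)" for \<xi>
  proof -
    let ?r = "(restrict (fst \<xi>) W, restrict (snd \<xi>) W)"
    have r: "?r \<in> ?S" by auto
    have "(\<Sum>ab\<in>?S. f ab * indicator (jcyl W ab) \<xi>) = (\<Sum>ab\<in>?S. if ab = ?r then f ab else 0)"
    proof (rule sum.cong[OF refl])
      fix ab assume ab: "ab \<in> ?S"
      obtain a b where abe: "ab = (a, b)" by (cases ab)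
      have "\<xi> \<in> jcyl W ab \<longleftrightarrow> ab = ?r"
      proof
        assume "\<xi> \<in> jcyl W ab"
        then have "\<forall>x\<in>W. fst \<xi> x = a x \<and> snd \<xi> x = b x" by (auto simp: jcyl_def joint_agree_def abe)
        moreover have "a \<in> extensional W" "b \<in> extensional W" using ab abe by (auto simp: PiE_def)
        ultimately show "ab = ?r" unfolding abe by (auto simp: extensional_def fun_eq_iff)
      next
        assume "ab = ?r" then show "\<xi> \<in> jcyl W ab" by (auto simp: jcyl_def joint_agree_def)
      qed
      then show "f ab * indicator (jcyl W ab) \<xi> = (if ab = ?r then f ab else 0)" by (simp add: indicator_def)
    qed
    also have "\<dots> = f ?r" using r by (simp add: fS)
    also have "\<dots> = f \<xi>" by (rule loc) (auto simp: joint_agree_def)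
    finally show ?thesis ..
  qed
  have m: "(\<lambda>\<xi>. \<Sum>ab\<in>?S. f ab * indicator (jcyl W ab) \<xi>) \<in> borel_measurable joint_space"
    by (intro borel_measurable_sum borel_measurable_times borel_measurable_const
        borel_measurable_indicator jcyl_sets[OF W])
  have eq: "f = (\<lambda>\<xi>. \<Sum>ab\<in>?S. f ab * indicator (jcyl W ab) \<xi>)" by (rule ext) (rule rep)
  show ?thesis by (subst eq) (rule m)
qed

context model
begin

lemma K_cyl_bounds:
  assumes K: "is_joint_measure P \<Phi> \<tau> K" and fB: "finite B"
  shows "cyl_prob K B (\<sigma>q, \<eta>q) \<le> exp (4 * D B) * ww \<tau> B \<sigma>q \<eta>q * measure P (cylP B \<eta>q)"
    and "exp (- 4 * D B) * ww \<tau> B \<sigma>q \<eta>q * measure P (cylP B \<eta>q) \<le> cyl_prob K B (\<sigma>q, \<eta>q)"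
proof -
  from K have sK: "sets K = sets joint_space" and pK: "prob_space K"
    and ex: "\<exists>\<Lambda>::nat \<Rightarrow> 'd site set. (\<forall>N. finite (\<Lambda> N)) \<and> incseq \<Lambda> \<and> (\<Union>N. \<Lambda> N) = UNIV \<and>
        weak_conv (\<lambda>N. fv_joint P \<Phi> \<tau> (\<Lambda> N)) K"
    unfolding is_joint_measure_def by blast+
  from ex obtain \<Lambda> :: "nat \<Rightarrow> 'd site set" where fin: "\<And>N. finite (\<Lambda> N)" and inc: "incseq \<Lambda>"
    and un: "(\<Union>N. \<Lambda> N) = UNIV" and wc: "weak_conv (\<lambda>N. fv_joint P \<Phi> \<tau> (\<Lambda> N)) K" by blast
  have spK: "space K = UNIV" using sets_eq_imp_space_eq[OF sK] by simp
  define g :: "(('d site \<Rightarrow> 'e) \<times> ('d site \<Rightarrow> 'f)) \<Rightarrow> real" where "g = indicator (jcyl B (\<sigma>q, \<eta>q))"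
  have gc: "joint_continuous g"
    unfolding joint_continuous_def
  proof (intro allI impI)
    fix \<xi> :: "('d site \<Rightarrow> 'e) \<times> ('d site \<Rightarrow> 'f)" and \<epsilon> :: real assume e: "\<epsilon> > 0"
    have "\<forall>\<xi>'. joint_agree B \<xi> \<xi>' \<longrightarrow> \<bar>g \<xi>' - g \<xi>\<bar> < \<epsilon>"
    proof (intro allI impI)
      fix \<xi>' assume ag: "joint_agree B \<xi> \<xi>'"
      have "\<xi>' \<in> jcyl B (\<sigma>q, \<eta>q) \<longleftrightarrow> \<xi> \<in> jcyl B (\<sigma>q, \<eta>q)"
        using ag by (auto simp: jcyl_def joint_agree_def)
      then show "\<bar>g \<xi>' - g \<xi>\<bar> < \<epsilon>" using e by (simp add: g_def indicator_def)
    qed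
    then show "\<exists>W. finite W \<and> (\<forall>\<xi>'. joint_agree W \<xi> \<xi>' \<longrightarrow> \<bar>g \<xi>' - g \<xi>\<bar> < \<epsilon>)" using fB by blast
  qed
  have lim: "(\<lambda>N. \<integral>\<xi>. g \<xi> \<partial>fv_joint P \<Phi> \<tau> (\<Lambda> N)) \<longlonglongrightarrow> (\<integral>\<xi>. g \<xi> \<partial>K)"
    using wc gc unfolding weak_conv_def by blast
  have intN: "(\<integral>\<xi>. g \<xi> \<partial>fv_joint P \<Phi> \<tau> (\<Lambda> N)) = measure (fv_joint P \<Phi> \<tau> (\<Lambda> N)) (jcyl B (\<sigma>q, \<eta>q))" for N
  proof -
    have "space (fv_joint P \<Phi> \<tau> (\<Lambda> N)) = UNIV" using sets_eq_imp_space_eq[OF sets_fv] by simp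
    then show ?thesis by (simp add: g_def)
  qed
  have intK: "(\<integral>\<xi>. g \<xi> \<partial>K) = cyl_prob K B (\<sigma>q, \<eta>q)"
    by (simp add: g_def spK cyl_prob_def jcyl_def)
  have lim': "(\<lambda>N. measure (fv_joint P \<Phi> \<tau> (\<Lambda> N)) (jcyl B (\<sigma>q, \<eta>q))) \<longlonglongrightarrow> cyl_prob K B (\<sigma>q, \<eta>q)"
    using lim unfolding intN intK .
  obtain N0 where N0: "\<And>N. N \<ge> N0 \<Longrightarrow> B \<subseteq> \<Lambda> N" using exists_N_subset[OF fB inc un] by blast
  show "cyl_prob K B (\<sigma>q, \<eta>q) \<le> exp (4 * D B) * ww \<tau> B \<sigma>q \<eta>q * measure P (cylP B \<eta>q)"
    by (rule LIMSEQ_le_const2[OF lim']) (use N0 fv_cyl_bounds(1)[OF fin] in blast)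
  show "exp (- 4 * D B) * ww \<tau> B \<sigma>q \<eta>q * measure P (cylP B \<eta>q) \<le> cyl_prob K B (\<sigma>q, \<eta>q)"
    by (rule LIMSEQ_le_const[OF lim']) (use N0 fv_cyl_bounds(2)[OF fin] in blast)
qed

end

context model
begin

lemma int_abs_bound:
  fixes f :: "('d site \<Rightarrow> 'f) \<Rightarrow> real"
  assumes "integrable P f" "AE x in P. \<bar>f x\<bar> \<le> c"
  shows "\<bar>\<integral>x. f x \<partial>P\<bar> \<le> c"
proof -
  have "(\<integral>x. f x \<partial>P) \<le> (\<integral>x. c \<partial>P)"
    by (rule integral_mono_AE[OF assms(1)]) (use assms(2) in auto)
  moreover have "(\<integral>x. - c \<partial>P) \<le> (\<integral>x. f x \<partial>P)"
    by (rule integral_mono_AE[OF _ assms(1)]) (use assms(2) in auto)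
  moreover have "Pr.prob UNIV = 1" using Pr.prob_space by simp
  ultimately show ?thesis by (simp add: abs_le_iff)
qed

lemma Phi_loc: "local_on A (\<lambda>\<eta>. \<Phi> A \<sigma> \<eta>)"
  by (rule local_onI) (rule Phi_local, simp)

lemma Phi_integrable: "finite A \<Longrightarrow> integrable P (\<lambda>\<eta>. \<Phi> A \<sigma> \<eta>)"
  by (rule local_integrable[OF _ Phi_loc])

lemma Phi_meas: "finite A \<Longrightarrow> (\<lambda>\<eta>. \<Phi> A \<sigma> \<eta>) \<in> borel_measurable P"
  by (rule local_meas[OF _ Phi_loc])

definition phi :: "('d site \<Rightarrow> 'e) \<Rightarrow> 'd site set \<Rightarrow> real" where
  "phi \<sigma> A = (\<integral>\<eta>. \<Phi> A \<sigma> \<eta> \<partial>P)"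

lemma phi_shift:
  assumes inv: "\<forall>x y. \<sigma>0 (x + y) = \<sigma>0 y" and fA: "finite A"
  shows "phi \<sigma>0 (img x A) = phi \<sigma>0 A"
proof -
  have s: "(\<lambda>y. \<sigma>0 (x + y)) = \<sigma>0" using inv by auto
  have "phi \<sigma>0 (img x A) = (\<integral>\<eta>. \<Phi> A \<sigma>0 (\<lambda>y. \<eta> (x + y)) \<partial>P)"
    unfolding phi_def Phi_shift s ..
  also have "\<dots> = phi \<sigma>0 A" unfolding phi_def
    by (rule shift_integral[where f="\<lambda>\<eta>. \<Phi> A \<sigma>0 \<eta>"]) (rule Phi_meas[OF fA])
  finally show ?thesis .
qed

lemma phi_bound: "finite A \<Longrightarrow> \<bar>phi \<sigma> A\<bar> \<le> M"
  unfolding phi_def by (rule int_abs_bound[OF Phi_integrable]) (auto intro: Phi_bound)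

definition S0 :: "'d site set set" where "S0 = {A. small A \<and> 0 \<in> A}"

lemma finite_S0: "finite S0"
  by (rule finite_subset[of _ "Pow (cube R 0)"]) (auto simp: S0_def dest: small_cube)

definition cst :: "('d site \<Rightarrow> 'e) \<Rightarrow> real" where
  "cst \<sigma> = (\<Sum>A\<in>S0. phi \<sigma> A / real (card A))"

lemma infsum_cst:
  "infsum (\<lambda>A. (\<integral>\<eta>. \<Phi> A \<sigma> \<eta> \<partial>P) / real (card A)) {A. finite A \<and> 0 \<in> A} = cst \<sigma>"
proof -
  have "infsum (\<lambda>A. (\<integral>\<eta>. \<Phi> A \<sigma> \<eta> \<partial>P) / real (card A)) {A. finite A \<and> 0 \<in> A}
      = infsum (\<lambda>A. phi \<sigma> A / real (card A)) S0"
  proof (rule infsum_cong_neutral)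
    fix A assume A: "A \<in> {A. finite A \<and> 0 \<in> A} - S0"
    then have "(\<lambda>\<eta>. \<Phi> A \<sigma> \<eta>) = (\<lambda>\<eta>. 0)" by (intro ext Phi_zero) (auto simp: S0_def)
    then show "(\<integral>\<eta>. \<Phi> A \<sigma> \<eta> \<partial>P) / real (card A) = 0" by simp
  qed (auto simp: S0_def phi_def small_finite)
  also have "\<dots> = cst \<sigma>" unfolding cst_def by (rule infsum_finite[OF finite_S0])
  finally show ?thesis .
qed

lemma SBx:
  assumes x: "x \<in> B"
  shows "{A \<in> SB B. x \<in> A} = img x ` S0"
proof
  show "img x ` S0 \<subseteq> {A \<in> SB B. x \<in> A}"
  proof
    fix A assume "A \<in> img x ` S0"
    then obtain A' where A': "A' \<in> S0" "A = img x A'" by auto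
    have "x \<in> A" using A' by (auto simp: S0_def intro: image_eqI[of _ _ 0])
    moreover have "small A" using A' small_shift by (auto simp: S0_def)
    ultimately show "A \<in> {A \<in> SB B. x \<in> A}" using x by (auto simp: SB_def)
  qed
  show "{A \<in> SB B. x \<in> A} \<subseteq> img x ` S0"
  proof
    fix A assume A: "A \<in> {A \<in> SB B. x \<in> A}"
    have "small (img x (img (- x) A))" unfolding img_inv2 using A by (simp add: SB_def)
    then have "small (img (- x) A)" by (simp only: small_shift)
    moreover have "0 \<in> img (- x) A" using A by (auto intro: image_eqI[of _ _ x])
    ultimately have "img (- x) A \<in> S0" by (simp add: S0_def)
    moreover have "A = img x (img (- x) A)" by (rule img_inv2[symmetric])
    ultimately show "A \<in> img x ` S0" by (rule rev_image_eqI)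
  qed
qed

lemma sum_SBx:
  assumes inv: "\<forall>x y. \<sigma>0 (x + y) = \<sigma>0 y" and x: "x \<in> B"
  shows "(\<Sum>A\<in>{A \<in> SB B. x \<in> A}. phi \<sigma>0 A / real (card A)) = cst \<sigma>0"
proof -
  have "(\<Sum>A\<in>{A \<in> SB B. x \<in> A}. phi \<sigma>0 A / real (card A)) = (\<Sum>A\<in>img x ` S0. phi \<sigma>0 A / real (card A))"
    unfolding SBx[OF x] ..
  also have "\<dots> = (\<Sum>A\<in>S0. phi \<sigma>0 (img x A) / real (card (img x A)))"
    by (rule sum.reindex[OF inj_img, unfolded comp_def])
  also have "\<dots> = (\<Sum>A\<in>S0. phi \<sigma>0 A / real (card A))"
  proof (rule sum.cong[OF refl])
    fix A assume "A \<in> S0"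
    then have fA: "finite A" by (simp add: S0_def small_finite)
    have "card (img x A) = card A" by (rule card_image) (simp add: inj_on_def)
    then show "phi \<sigma>0 (img x A) / real (card (img x A)) = phi \<sigma>0 A / real (card A)"
      using phi_shift[OF inv fA] by simp
  qed
  finally show ?thesis unfolding cst_def .
qed

lemma EH_bound:
  assumes inv: "\<forall>x y. \<sigma>0 (x + y) = \<sigma>0 y" and fB: "finite B"
  shows "\<bar>(\<integral>\<eta>. H B \<sigma>0 \<eta> \<partial>P) - real (card B) * cst \<sigma>0\<bar> \<le> D B"
proof -
  have fS: "finite (SB B)" by (rule finite_SB[OF fB])
  have AfS: "\<And>A. A \<in> SB B \<Longrightarrow> finite A \<and> A \<noteq> {}" by (auto simp: SB_def small_def)
  define g where "g A = phi \<sigma>0 A / real (card A)" for A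
  have "(\<integral>\<eta>. H B \<sigma>0 \<eta> \<partial>P) = (\<integral>\<eta>. (\<Sum>A\<in>SB B. \<Phi> A \<sigma>0 \<eta>) \<partial>P)" by (simp only: ham_sum[OF fB])
  also have "\<dots> = (\<Sum>A\<in>SB B. phi \<sigma>0 A)" unfolding phi_def
    by (rule Bochner_Integration.integral_sum) (rule Phi_integrable, use AfS in blast)
  also have "\<dots> = (\<Sum>A\<in>SB B. (\<Sum>x\<in>A \<inter> B. g A) + (\<Sum>x\<in>A - B. g A))"
  proof (rule sum.cong[OF refl])
    fix A assume A: "A \<in> SB B"
    have "phi \<sigma>0 A = (\<Sum>x\<in>A. g A)" using AfS[OF A] by (simp add: g_def card_gt_0_iff)
    also have "\<dots> = (\<Sum>x\<in>A \<inter> B. g A) + (\<Sum>x\<in>A - B. g A)"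
      by (rule sum.Int_Diff) (use AfS[OF A] in blast)
    finally show "phi \<sigma>0 A = (\<Sum>x\<in>A \<inter> B. g A) + (\<Sum>x\<in>A - B. g A)" .
  qed
  also have "\<dots> = (\<Sum>A\<in>SB B. \<Sum>x\<in>A \<inter> B. g A) + (\<Sum>A\<in>SB B. \<Sum>x\<in>A - B. g A)"
    by (rule sum.distrib)
  also have "(\<Sum>A\<in>SB B. \<Sum>x\<in>A \<inter> B. g A) = real (card B) * cst \<sigma>0"
  proof -
    have "(\<Sum>A\<in>SB B. \<Sum>x\<in>A \<inter> B. g A) = (\<Sum>A\<in>SB B. \<Sum>x\<in>{x. x \<in> B \<and> x \<in> A}. g A)"
      by (rule sum.cong[OF refl]) (rule sum.cong, auto)
    also have "\<dots> = (\<Sum>x\<in>B. \<Sum>A\<in>{A. A \<in> SB B \<and> x \<in> A}. g A)"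
      by (rule sum.swap_restrict[OF fS fB])
    also have "\<dots> = (\<Sum>x\<in>B. cst \<sigma>0)"
    proof (rule sum.cong[OF refl])
      fix x assume "x \<in> B"
      then show "(\<Sum>A\<in>{A. A \<in> SB B \<and> x \<in> A}. g A) = cst \<sigma>0"
        using sum_SBx[OF inv, of x B] by (simp add: g_def)
    qed
    finally show ?thesis by simp
  qed
  finally have eq: "(\<integral>\<eta>. H B \<sigma>0 \<eta> \<partial>P) - real (card B) * cst \<sigma>0 = (\<Sum>A\<in>SB B. \<Sum>x\<in>A - B. g A)" by simp
  have "(\<Sum>A\<in>SB B. \<Sum>x\<in>A - B. g A) = (\<Sum>A\<in>Bd B. \<Sum>x\<in>A - B. g A)"
  proof (rule sum.mono_neutral_right[OF fS])
    show "Bd B \<subseteq> SB B" by (auto simp: Bd_def)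
    show "\<forall>A\<in>SB B - Bd B. (\<Sum>x\<in>A - B. g A) = 0"
    proof
      fix A assume "A \<in> SB B - Bd B"
      then have e: "A - B = {}" by (auto simp: Bd_def)
      show "(\<Sum>x\<in>A - B. g A) = 0" by (simp only: e sum.empty)
    qed
  qed
  also have "\<bar>\<dots>\<bar> \<le> (\<Sum>A\<in>Bd B. \<bar>\<Sum>x\<in>A - B. g A\<bar>)" by (rule sum_abs)
  also have "\<dots> \<le> (\<Sum>A\<in>Bd B. M)"
  proof (rule sum_mono)
    fix A assume A: "A \<in> Bd B"
    then have fA: "finite A" "A \<noteq> {}" using AfS by (auto simp: Bd_def)
    have cA: "real (card (A - B)) \<le> real (card A)" using fA by (simp add: card_mono)
    have cpos: "real (card A) > 0" using fA by (simp add: card_gt_0_iff)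
    have "\<bar>\<Sum>x\<in>A - B. g A\<bar> = real (card (A - B)) * (\<bar>phi \<sigma>0 A\<bar> / real (card A))"
      by (simp add: g_def abs_mult)
    also have "\<dots> \<le> real (card A) * (\<bar>phi \<sigma>0 A\<bar> / real (card A))"
      by (rule mult_right_mono[OF cA]) simp
    also have "\<dots> = \<bar>phi \<sigma>0 A\<bar>" using cpos by simp
    also have "\<dots> \<le> M" by (rule phi_bound[OF fA(1)])
    finally show "\<bar>\<Sum>x\<in>A - B. g A\<bar> \<le> M" .
  qed
  also have "\<dots> \<le> D B" unfolding D_def using M_nonneg by (simp add: mult.commute)
  finally show ?thesis unfolding eq .
qed

end

context model
begin

lemma cyl_prob_agree: "joint_agree B \<xi> \<xi>' \<Longrightarrow> cyl_prob K B \<xi> = cyl_prob K B \<xi>'"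
  unfolding cyl_prob_def by (rule arg_cong[where f="measure K"]) (auto simp: joint_agree_def)

lemma cylP_agree: "(\<And>x. x \<in> B \<Longrightarrow> \<eta> x = \<eta>' x) \<Longrightarrow> cylP B \<eta> = cylP B \<eta>'"
  by (auto simp: cylP_def)

lemma eseq_bound:
  fixes n :: nat
  assumes K: "is_joint_measure P \<Phi> \<tau> K"
  defines "B \<equiv> box n :: 'd site set"
  shows "\<bar>e_seq K (distr P joint_space (\<lambda>\<eta>. (\<sigma>0, \<eta>))) n
          - (- Hsum + (\<integral>\<eta>. H B \<sigma>0 \<eta> \<partial>P) / real (card B) + (\<integral>\<eta>. ln (Z \<tau> B \<eta>) \<partial>P) / real (card B))\<bar>
         \<le> 4 * D B / real (card B)"
proof -
  have fB: "finite B" by (simp add: B_def)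
  have cB: "real (card B) > 0" unfolding B_def using card_box_pos by simp
  define L where "L \<eta> = ln (cyl_prob K B (\<sigma>0, \<eta>))" for \<eta>
  define T1 where "T1 \<eta> = ln (measure P (cylP B \<eta>))" for \<eta>
  define T2 where "T2 \<eta> = H B \<sigma>0 \<eta>" for \<eta>
  define T3 where "T3 \<eta> = ln (Z \<tau> B \<eta>)" for \<eta>
  have locL: "local_on B L"
    by (rule local_onI) (simp add: L_def, rule arg_cong[where f=ln], rule cyl_prob_agree, simp add: joint_agree_def)
  have locT1: "local_on B T1"
  proof (rule local_onI)
    fix \<eta> \<eta>' :: "'d site \<Rightarrow> 'f" assume "\<And>x. x \<in> B \<Longrightarrow> \<eta> x = \<eta>' x"
    then have "cylP B \<eta> = cylP B \<eta>'" by (rule cylP_agree)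
    then show "T1 \<eta> = T1 \<eta>'" by (simp add: T1_def)
  qed
  have iL: "integrable P L" by (rule local_integrable[OF fB locL])
  have iT1: "integrable P T1" by (rule local_integrable[OF fB locT1])
  have iT2: "integrable P T2" unfolding T2_def by (rule local_integrable[OF finite_NB[OF fB] H_loc[OF fB]])
  have iT3: "integrable P T3" unfolding T3_def
  proof (rule local_integrable[OF finite_NB[OF fB]], rule local_onI)
    fix \<eta> \<eta>' :: "'d site \<Rightarrow> 'f" assume "\<And>x. x \<in> NB B \<Longrightarrow> \<eta> x = \<eta>' x"
    then show "ln (Z \<tau> B \<eta>) = ln (Z \<tau> B \<eta>')" using local_onD[OF Z_loc[OF fB]] by metis
  qed
  have intlam: "(\<integral>\<xi>. ln (cyl_prob K B \<xi>) \<partial>distr P joint_space (\<lambda>\<eta>. (\<sigma>0, \<eta>))) = (\<integral>\<eta>. L \<eta> \<partial>P)"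
  proof (subst integral_distr[OF pair_meas])
    show "(\<lambda>\<xi>. ln (cyl_prob K B \<xi>)) \<in> borel_measurable joint_space"
      by (rule jlocal_meas[OF fB]) (simp add: cyl_prob_agree[of B _ _ K])
  qed (rule arg_cong[where f="integral\<^sup>L P"], rule ext, simp add: L_def)
  have T1int: "(\<integral>\<eta>. T1 \<eta> \<partial>P) = real (card B) * Hsum"
  proof -
    have "(\<integral>\<eta>. T1 \<eta> \<partial>P) = (\<integral>\<eta>. ln (measure P (cylP B (restrict \<eta> B))) \<partial>P)"
    proof (rule Bochner_Integration.integral_cong[OF refl])
      fix \<eta> :: "'d site \<Rightarrow> 'f"
      have "cylP B \<eta> = cylP B (restrict \<eta> B)" by (rule cylP_agree) simp
      then show "T1 \<eta> = ln (measure P (cylP B (restrict \<eta> B)))" by (simp add: T1_def)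
    qed
    also have "\<dots> = real (card B) * Hsum" by (rule ent_int[OF fB])
    finally show ?thesis .
  qed
  have AEb: "AE \<eta> in P. \<bar>L \<eta> - (T1 \<eta> - T2 \<eta> - T3 \<eta>)\<bar> \<le> 4 * D B"
  proof -
    have "AE \<eta> in P. \<forall>x\<in>B. pmf p (\<eta> x) > 0" by (rule AE_finite_allI[OF fB]) (rule AE_pos)
    then show ?thesis
    proof eventually_elim
      case (elim \<eta>)
      have m: "measure P (cylP B \<eta>) > 0" using elim by (simp add: measure_cyl[OF fB] prod_pos)
      have w: "ww \<tau> B \<sigma>0 \<eta> > 0" by (rule ww_pos[OF fB])
      define c where "c = cyl_prob K B (\<sigma>0, \<eta>)"
      have lo: "exp (- 4 * D B) * ww \<tau> B \<sigma>0 \<eta> * measure P (cylP B \<eta>) \<le> c"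
        unfolding c_def by (rule K_cyl_bounds(2)[OF K fB])
      have hi: "c \<le> exp (4 * D B) * ww \<tau> B \<sigma>0 \<eta> * measure P (cylP B \<eta>)"
        unfolding c_def by (rule K_cyl_bounds(1)[OF K fB])
      have lp: "exp (- 4 * D B) * ww \<tau> B \<sigma>0 \<eta> * measure P (cylP B \<eta>) > 0" using m w by simp
      have cp: "c > 0" using lo lp by linarith
      have lw: "ln (ww \<tau> B \<sigma>0 \<eta>) = - T2 \<eta> - T3 \<eta>"
        unfolding ww_def T2_def T3_def using Z_pos[OF fB, of \<tau> \<eta>] by (simp add: ln_div)
      have "ln (exp (- 4 * D B) * ww \<tau> B \<sigma>0 \<eta> * measure P (cylP B \<eta>)) \<le> ln c"
        using lo lp by simp
      moreover have "ln (exp (- 4 * D B) * ww \<tau> B \<sigma>0 \<eta> * measure P (cylP B \<eta>)) = - 4 * D B + ln (ww \<tau> B \<sigma>0 \<eta>) + T1 \<eta>"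
        unfolding T1_def using m w by (simp add: ln_mult)
      moreover have "ln c \<le> ln (exp (4 * D B) * ww \<tau> B \<sigma>0 \<eta> * measure P (cylP B \<eta>))"
        using hi cp by simp
      moreover have "ln (exp (4 * D B) * ww \<tau> B \<sigma>0 \<eta> * measure P (cylP B \<eta>)) = 4 * D B + ln (ww \<tau> B \<sigma>0 \<eta>) + T1 \<eta>"
        unfolding T1_def using m w by (simp add: ln_mult)
      ultimately show ?case unfolding L_def c_def[symmetric] lw by (simp add: abs_le_iff)
    qed
  qed
  have iT: "integrable P (\<lambda>\<eta>. T1 \<eta> - T2 \<eta> - T3 \<eta>)" using iT1 iT2 iT3 by simp
  have diff: "\<bar>(\<integral>\<eta>. L \<eta> \<partial>P) - (\<integral>\<eta>. T1 \<eta> - T2 \<eta> - T3 \<eta> \<partial>P)\<bar> \<le> 4 * D B"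
  proof -
    have "(\<integral>\<eta>. L \<eta> \<partial>P) - (\<integral>\<eta>. T1 \<eta> - T2 \<eta> - T3 \<eta> \<partial>P) = (\<integral>\<eta>. L \<eta> - (T1 \<eta> - T2 \<eta> - T3 \<eta>) \<partial>P)"
      using iL iT by simp
    also have "\<bar>\<dots>\<bar> \<le> 4 * D B" by (rule int_abs_bound) (use iL iT AEb in simp_all)
    finally show ?thesis .
  qed
  have intT: "(\<integral>\<eta>. T1 \<eta> - T2 \<eta> - T3 \<eta> \<partial>P) = real (card B) * Hsum - (\<integral>\<eta>. H B \<sigma>0 \<eta> \<partial>P) - (\<integral>\<eta>. ln (Z \<tau> B \<eta>) \<partial>P)"
    using iT1 iT2 iT3 T1int by (simp add: T2_def[symmetric] T3_def[symmetric])
  have es: "e_seq K (distr P joint_space (\<lambda>\<eta>. (\<sigma>0, \<eta>))) n = - (\<integral>\<eta>. L \<eta> \<partial>P) / real (card B)"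
    unfolding e_seq_def B_def[symmetric] intlam ..
  have "e_seq K (distr P joint_space (\<lambda>\<eta>. (\<sigma>0, \<eta>))) n
          - (- Hsum + (\<integral>\<eta>. H B \<sigma>0 \<eta> \<partial>P) / real (card B) + (\<integral>\<eta>. ln (Z \<tau> B \<eta>) \<partial>P) / real (card B))
        = - ((\<integral>\<eta>. L \<eta> \<partial>P) - (\<integral>\<eta>. T1 \<eta> - T2 \<eta> - T3 \<eta> \<partial>P)) / real (card B)"
    unfolding es intT using cB by (simp add: field_simps)
  also have "\<bar>\<dots>\<bar> \<le> 4 * D B / real (card B)"
    using diff cB by (simp add: abs_minus_commute divide_right_mono)
  finally show ?thesis .
qed

end

definition sc :: "nat \<Rightarrow> 'd::finite site \<Rightarrow> 'd site" where
  "sc L v = (\<chi> i. int L * v $ i)"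

definition qq :: "nat \<Rightarrow> nat \<Rightarrow> nat" where "qq k n = (n - k) div (2 * k + 1)"

definition Ic :: "nat \<Rightarrow> nat \<Rightarrow> 'd::finite site set" where
  "Ic k n = sc (2 * k + 1) ` box (qq k n)"

definition blk :: "nat \<Rightarrow> 'd::finite site \<Rightarrow> 'd site set" where
  "blk k c = (\<lambda>y. c + y) ` box k"

definition rem :: "nat \<Rightarrow> nat \<Rightarrow> 'd::finite site set" where
  "rem k n = box n - (\<Union>c\<in>Ic k n. blk k c)"

lemma finite_Ic[simp]: "finite (Ic k n)" by (simp add: Ic_def)
lemma finite_blk[simp]: "finite (blk k c)" by (simp add: blk_def)
lemma finite_rem[simp]: "finite (rem k n)" by (simp add: rem_def)

lemma card_blk: "card (blk k (c::'d::finite site)) = card (box k :: 'd site set)"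
  unfolding blk_def by (rule card_image) (simp add: inj_on_def)

lemma inj_sc: "inj (sc (2 * k + 1) :: 'd::finite site \<Rightarrow> 'd site)"
  by (rule injI) (simp add: sc_def vec_eq_iff)

lemma card_Ic: "card (Ic k n :: 'd::finite site set) = (2 * qq k n + 1) ^ CARD('d)"
proof -
  have inj: "inj_on (sc (2 * k + 1)) (box (qq k n) :: 'd site set)" using inj_sc by (rule inj_on_subset) simp
  show ?thesis unfolding Ic_def card_image[OF inj] card_box ..
qed

lemma blk_disj:
  fixes v w :: "'d::finite site"
  assumes "sc (2 * k + 1) v \<noteq> sc (2 * k + 1) w"
  shows "blk k (sc (2 * k + 1) v) \<inter> blk k (sc (2 * k + 1) w) = {}"
proof (rule ccontr)
  assume "blk k (sc (2 * k + 1) v) \<inter> blk k (sc (2 * k + 1) w) \<noteq> {}"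
  then obtain a b where ab: "a \<in> box k" "b \<in> box k" "sc (2 * k + 1) v + a = sc (2 * k + 1) w + b"
    by (auto simp: blk_def)
  from assms obtain i where i: "v $ i \<noteq> w $ i" by (auto simp: sc_def vec_eq_iff)
  have e: "int (2 * k + 1) * v $ i + a $ i = int (2 * k + 1) * w $ i + b $ i"
    using arg_cong[OF ab(3), of "\<lambda>x. x $ i"] by (simp add: sc_def)
  have "\<bar>a $ i\<bar> \<le> int k" "\<bar>b $ i\<bar> \<le> int k" using ab by (auto simp: box_def)
  then have "\<bar>int (2 * k + 1) * (v $ i - w $ i)\<bar> \<le> 2 * int k" using e by (simp add: algebra_simps abs_le_iff)
  moreover have "\<bar>v $ i - w $ i\<bar> \<ge> 1" using i by simp
  then have "\<bar>int (2 * k + 1) * (v $ i - w $ i)\<bar> \<ge> int (2 * k + 1)"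
    by (simp add: abs_mult)
  ultimately show False by simp
qed

lemma Ic_disj: "c \<in> Ic k n \<Longrightarrow> c' \<in> Ic k n \<Longrightarrow> c \<noteq> c' \<Longrightarrow> blk k c \<inter> blk k c' = {}"
  unfolding Ic_def using blk_disj by blast

lemma blk_sub:
  assumes kn: "k \<le> n" and c: "c \<in> Ic k n"
  shows "blk k c \<subseteq> box n"
proof
  fix y assume "y \<in> blk k c"
  then obtain a where a: "a \<in> box k" "y = c + a" by (auto simp: blk_def)
  from c obtain v where v: "v \<in> box (qq k n)" "c = sc (2 * k + 1) v" by (auto simp: Ic_def)
  have e: "(n - k) div (2*k+1) * (2*k+1) + (n - k) mod (2*k+1) = n - k" by (rule div_mult_mod_eq)
  then have "(n - k) div (2*k+1) * (2*k+1) \<le> n - k" by linarith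
  then have Lq: "(2 * k + 1) * qq k n \<le> n - k" by (simp only: qq_def mult.commute)
  have "\<bar>y $ i\<bar> \<le> int n" for i
  proof -
    have "\<bar>v $ i\<bar> \<le> int (qq k n)" using v by (simp add: box_def)
    then have "\<bar>int (2 * k + 1) * v $ i\<bar> \<le> int (2 * k + 1) * int (qq k n)" by (simp add: abs_mult)
    also have "\<dots> = int ((2 * k + 1) * qq k n)" by (simp add: algebra_simps)
    also have "\<dots> \<le> int (n - k)" using Lq by linarith
    finally have h1: "\<bar>int (2 * k + 1) * v $ i\<bar> \<le> int n - int k" using kn by simp
    have h2: "\<bar>a $ i\<bar> \<le> int k" using a by (simp add: box_def)
    have "y $ i = int (2 * k + 1) * v $ i + a $ i" using a v by (simp add: sc_def)
    then show ?thesis using h1 h2 by (simp add: abs_le_iff)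
  qed
  then show "y \<in> box n" by (simp add: box_def)
qed

lemma card_UN_blk: "card (\<Union>c\<in>(Ic k n :: 'd::finite site set). blk k c) = card (Ic k n :: 'd site set) * card (box k :: 'd::finite site set)"
proof -
  have "card (\<Union>c\<in>(Ic k n :: 'd site set). blk k c) = (\<Sum>c\<in>Ic k n. card (blk k (c :: 'd site)))"
  proof (rule card_UN_disjoint)
    show "\<forall>i\<in>Ic k n. \<forall>j\<in>Ic k n. i \<noteq> j \<longrightarrow> blk k i \<inter> blk k j = {}" using Ic_disj by blast
  qed simp_all
  also have "\<dots> = card (Ic k n :: 'd site set) * card (box k :: 'd site set)" by (simp add: card_blk)
  finally show ?thesis .
qed

lemma card_rem:
  assumes "k \<le> n"
  shows "card (rem k n :: 'd::finite site set) = card (box n :: 'd site set) - card (Ic k n :: 'd site set) * card (box k :: 'd site set)"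
  unfolding rem_def
  by (subst card_Diff_subset) (auto simp: card_UN_blk dest: blk_sub[OF assms])

lemma tile_ineq: "2 * (n - 2 * k) + 1 \<le> (2 * k + 1) * (2 * qq k n + 1)"
proof -
  define L where "L = 2 * k + 1"
  define r where "r = (n - k) mod L"
  have e: "(n - k) div L * L + (n - k) mod L = n - k" by (rule div_mult_mod_eq)
  have d: "L * qq k n + r = n - k" using e unfolding qq_def r_def L_def by (simp only: mult.commute)
  have r: "r \<le> 2 * k" unfolding r_def L_def using pos_mod_bound[of "2*k+1" "n - k"] by simp
  have "(2 * k + 1) * (2 * qq k n + 1) = 2 * (L * qq k n) + L" by (simp add: L_def algebra_simps)
  then show ?thesis using d r unfolding L_def by linarith
qed

lemma card_rem_bound:
  assumes "k \<le> n"
  shows "card (rem k n :: 'd::finite site set) \<le> (2 * n + 1) ^ CARD('d) - (2 * (n - 2 * k) + 1) ^ CARD('d)"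
proof -
  have "card (Ic k n :: 'd site set) * card (box k :: 'd site set) = (2 * qq k n + 1) ^ CARD('d) * (2 * k + 1) ^ CARD('d)"
    by (simp only: card_Ic card_box)
  also have "\<dots> = ((2 * k + 1) * (2 * qq k n + 1)) ^ CARD('d)"
    by (simp only: power_mult_distrib mult.commute)
  finally have "card (Ic k n :: 'd site set) * card (box k :: 'd site set) = ((2 * k + 1) * (2 * qq k n + 1)) ^ CARD('d)" .
  moreover have "(2 * (n - 2 * k) + 1) ^ CARD('d) \<le> ((2 * k + 1) * (2 * qq k n + 1)) ^ CARD('d)"
    by (rule power_mono[OF tile_ineq]) simp
  ultimately show ?thesis unfolding card_rem[OF assms] card_box by linarith
qed

lemma box_tiling:
  assumes "k \<le> n"
  shows "box n = rem k n \<union> (\<Union>c\<in>Ic k n. blk k c)"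
  unfolding rem_def using blk_sub[OF assms] by blast

context potl
begin

lemma lnZ_tiling:
  assumes kn: "k \<le> n"
  shows "\<bar>ln (Z \<tau> (box n) \<eta>) - ln (Z \<tau> (rem k n) \<eta>) - (\<Sum>c\<in>Ic k n. ln (Z \<tau> (blk k c) \<eta>))\<bar>
          \<le> real (card (Ic k n :: 'd site set)) * (2 * D (box k))"
proof -
  have gen: "J \<subseteq> Ic k n \<Longrightarrow>
     \<bar>ln (Z \<tau> (rem k n \<union> (\<Union>c\<in>J. blk k c)) \<eta>) - ln (Z \<tau> (rem k n) \<eta>) - (\<Sum>c\<in>J. ln (Z \<tau> (blk k c) \<eta>))\<bar>
          \<le> real (card J) * (2 * D (box k))" for J
  proof (induction J rule: infinite_finite_induct)
    case (infinite J) then show ?case using finite_subset[OF _ finite_Ic] by blast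
  next
    case empty then show ?case by simp
  next
    case (insert c J)
    have cI: "c \<in> Ic k n" and JI: "J \<subseteq> Ic k n" using insert.prems by auto
    define \<Lambda> where "\<Lambda> = rem k n \<union> (\<Union>c\<in>insert c J. blk k c)"
    have fin: "finite \<Lambda>" unfolding \<Lambda>_def using insert.hyps(1) by simp
    have sub: "blk k c \<subseteq> \<Lambda>" unfolding \<Lambda>_def by auto
    have diff: "\<Lambda> - blk k c = rem k n \<union> (\<Union>c\<in>J. blk k c)"
    proof -
      have "blk k c \<inter> rem k n = {}" using cI by (auto simp: rem_def)
      moreover have "blk k c \<inter> blk k c' = {}" if "c' \<in> J" for c'
        using Ic_disj[OF cI, of c'] that JI insert.hyps(2) by blast
      ultimately show ?thesis unfolding \<Lambda>_def by blast
    qed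
    have Dblk: "D (blk k c) = D (box k)" unfolding blk_def by (rule D_shift)
    have sp0: "\<bar>ln (Z \<tau> \<Lambda> \<eta>) - ln (Z \<tau> (blk k c) \<eta>) - ln (Z \<tau> (\<Lambda> - blk k c) \<eta>)\<bar> \<le> 2 * D (blk k c)"
      by (rule Z_split[OF fin sub])
    have sp: "\<bar>ln (Z \<tau> \<Lambda> \<eta>) - ln (Z \<tau> (blk k c) \<eta>) - ln (Z \<tau> (rem k n \<union> (\<Union>c\<in>J. blk k c)) \<eta>)\<bar> \<le> 2 * D (box k)"
      using sp0 unfolding diff Dblk .
    have IH: "\<bar>ln (Z \<tau> (rem k n \<union> (\<Union>c\<in>J. blk k c)) \<eta>) - ln (Z \<tau> (rem k n) \<eta>) - (\<Sum>c\<in>J. ln (Z \<tau> (blk k c) \<eta>))\<bar>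
          \<le> real (card J) * (2 * D (box k))" by (rule insert.IH[OF JI])
    have cardi: "real (card (insert c J)) = real (card J) + 1" using insert.hyps by simp
    show ?case unfolding \<Lambda>_def[symmetric] sum.insert[OF insert.hyps] cardi
      using sp IH by (simp add: algebra_simps abs_le_iff)
  qed
  have "rem k n \<union> (\<Union>c\<in>Ic k n. blk k c) = (box n :: 'd site set)" by (rule box_tiling[OF kn, symmetric])
  then show ?thesis using gen[OF order_refl] by simp
qed

end

context model
begin

definition Y :: "nat \<Rightarrow> ('d site \<Rightarrow> 'e) \<Rightarrow> 'd site \<Rightarrow> ('d site \<Rightarrow> 'f) \<Rightarrow> real" where
  "Y k \<tau> c \<eta> = ln (Z \<tau> (blk k c) (restrict \<eta> (blk k c)))"

definition ak :: "nat \<Rightarrow> ('d site \<Rightarrow> 'e) \<Rightarrow> real" where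
  "ak k \<tau> = (\<integral>\<eta>. ln (Z \<tau> (box k) \<eta>) \<partial>P)"

lemma Dblk: "D (blk k c) = D (box k)" unfolding blk_def by (rule D_shift)

lemma Y_bound: "\<bar>Y k \<tau> c \<eta>\<bar> \<le> real (card (box k :: 'd site set)) * C0"
  unfolding Y_def using lnZ_bound[of "blk k c" \<tau> "restrict \<eta> (blk k c)"] by (simp add: card_blk)

lemma Y_close: "\<bar>Y k \<tau> c \<eta> - ln (Z \<tau> (blk k c) \<eta>)\<bar> \<le> D (box k)"
proof -
  have "\<bar>Y k \<tau> c \<eta> - ln (Z \<tau> (blk k c) \<eta>)\<bar> \<le> D (blk k c)"
    unfolding Y_def by (rule Z_change) simp_all
  then show ?thesis by (simp only: Dblk)
qed

lemma Y_loc: "local_on (blk k c) (Y k \<tau> c)"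
  by (rule local_onI) (simp add: Y_def restrict_def cong: if_cong)

lemma Y_meas: "Y k \<tau> c \<in> borel_measurable P"
  by (rule local_meas[OF finite_blk Y_loc])

lemma Y_int: "integrable P (Y k \<tau> c)"
  by (rule local_integrable[OF finite_blk Y_loc])

lemma lnZ_loc: "finite \<Lambda> \<Longrightarrow> local_on (NB \<Lambda>) (\<lambda>\<eta>. ln (Z \<tau> \<Lambda> \<eta>))"
proof (rule local_onI)
  fix \<eta> \<eta>' :: "'d site \<Rightarrow> 'f" assume "finite \<Lambda>" "\<And>x. x \<in> NB \<Lambda> \<Longrightarrow> \<eta> x = \<eta>' x"
  then show "ln (Z \<tau> \<Lambda> \<eta>) = ln (Z \<tau> \<Lambda> \<eta>')" using local_onD[OF Z_loc] by metis
qed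

lemma lnZ_int: "finite \<Lambda> \<Longrightarrow> integrable P (\<lambda>\<eta>. ln (Z \<tau> \<Lambda> \<eta>))"
  by (rule local_integrable[OF finite_NB lnZ_loc])

lemma lnZ_meas: "finite \<Lambda> \<Longrightarrow> (\<lambda>\<eta>. ln (Z \<tau> \<Lambda> \<eta>)) \<in> borel_measurable P"
  by (rule local_meas[OF finite_NB lnZ_loc])

lemma EY_close: "\<bar>(\<integral>\<eta>. Y k \<tau> c \<eta> \<partial>P) - ak k \<tau>\<bar> \<le> 2 * D (box k)"
proof -
  have fb: "finite (box k :: 'd site set)" by simp
  have e1: "\<bar>(\<integral>\<eta>. Y k \<tau> c \<eta> \<partial>P) - (\<integral>\<eta>. ln (Z \<tau> (blk k c) \<eta>) \<partial>P)\<bar> \<le> D (box k)"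
  proof -
    have "(\<integral>\<eta>. Y k \<tau> c \<eta> \<partial>P) - (\<integral>\<eta>. ln (Z \<tau> (blk k c) \<eta>) \<partial>P) = (\<integral>\<eta>. Y k \<tau> c \<eta> - ln (Z \<tau> (blk k c) \<eta>) \<partial>P)"
      using Y_int lnZ_int[OF finite_blk] by simp
    also have "\<bar>\<dots>\<bar> \<le> D (box k)"
      by (rule int_abs_bound) (use Y_int lnZ_int[OF finite_blk] Y_close in simp_all)
    finally show ?thesis .
  qed
  have "(\<integral>\<eta>. ln (Z \<tau> (blk k c) \<eta>) \<partial>P) = (\<integral>\<eta>. ln (Z (\<lambda>y. \<tau> (c + y)) (box k) (\<lambda>y. \<eta> (c + y))) \<partial>P)"
    unfolding blk_def Z_shift[OF fb] ..
  also have "\<dots> = (\<integral>\<eta>. ln (Z (\<lambda>y. \<tau> (c + y)) (box k) \<eta>) \<partial>P)"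
    by (rule shift_integral[where f="\<lambda>\<eta>. ln (Z (\<lambda>y. \<tau> (c + y)) (box k) \<eta>)"]) (rule lnZ_meas[OF fb])
  finally have e2: "(\<integral>\<eta>. ln (Z \<tau> (blk k c) \<eta>) \<partial>P) = (\<integral>\<eta>. ln (Z (\<lambda>y. \<tau> (c + y)) (box k) \<eta>) \<partial>P)" .
  have e3: "\<bar>(\<integral>\<eta>. ln (Z (\<lambda>y. \<tau> (c + y)) (box k) \<eta>) \<partial>P) - ak k \<tau>\<bar> \<le> D (box k)"
  proof -
    have "(\<integral>\<eta>. ln (Z (\<lambda>y. \<tau> (c + y)) (box k) \<eta>) \<partial>P) - ak k \<tau>
        = (\<integral>\<eta>. ln (Z (\<lambda>y. \<tau> (c + y)) (box k) \<eta>) - ln (Z \<tau> (box k) \<eta>) \<partial>P)"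
      unfolding ak_def using lnZ_int[OF fb] by simp
    also have "\<bar>\<dots>\<bar> \<le> D (box k)"
      by (rule int_abs_bound) (use lnZ_int[OF fb] Z_change[OF fb] in simp_all)
    finally show ?thesis .
  qed
  show ?thesis using e1 e2 e3 by linarith
qed

lemma coords_indep: "Pr.indep_vars (\<lambda>_. measure_pmf p) (\<lambda>x \<eta>. \<eta> x) UNIV"
proof (subst Pr.indep_vars_iff_distr_eq_PiM)
  show "Pr.random_variable (measure_pmf p) (\<lambda>\<eta>. \<eta> x)" for x by (rule comp_meas)
  have eqf: "(\<lambda>x::'d site \<Rightarrow> 'f. \<lambda>i\<in>UNIV. x i) = (\<lambda>x. x)" by (auto simp: restrict_def fun_eq_iff)
  have "distr P (Pi\<^sub>M UNIV (\<lambda>i. measure_pmf p)) (\<lambda>x. \<lambda>i\<in>UNIV. x i) = distr P P (\<lambda>x. x)"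
    unfolding eqf by (simp only: P_def)
  also have "\<dots> = P" by (rule distr_id2) simp
  also have "\<dots> = Pi\<^sub>M UNIV (\<lambda>i. distr P (measure_pmf p) (\<lambda>\<eta>. \<eta> i))"
    unfolding P_def by (rule PiM_cong[OF refl]) (simp add: PP.PiM_component)
  finally show "distr P (Pi\<^sub>M UNIV (\<lambda>i. measure_pmf p)) (\<lambda>x. \<lambda>i\<in>UNIV. x i) = Pi\<^sub>M UNIV (\<lambda>i. distr P (measure_pmf p) (\<lambda>\<eta>. \<eta> i))" .
qed simp

lemma Y_indep: "Pr.indep_vars (\<lambda>_. borel) (Y k \<tau>) (Ic k n)"
proof -
  have r: "Pr.indep_vars (\<lambda>c. PiM (blk k c) (\<lambda>_. measure_pmf p)) (\<lambda>c \<eta>. restrict (\<lambda>x. \<eta> x) (blk k c)) (Ic k n)"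
    by (rule Pr.indep_vars_restrict[OF coords_indep]) (simp, unfold disjoint_family_on_def, use Ic_disj in blast)
  have "Pr.indep_vars (\<lambda>_. borel) (\<lambda>c \<eta>. ln (Z \<tau> (blk k c) (restrict (\<lambda>x. \<eta> x) (blk k c)))) (Ic k n)"
    by (rule Pr.indep_vars_compose2[OF r]) (rule fin_meas, simp)
  then show ?thesis by (simp add: Y_def[abs_def])
qed

end

lemma qq_lower: "real (qq k n) * (2 * real k + 1) \<ge> real n - 3 * real k"
proof -
  define L where "L = 2 * k + 1"
  define r where "r = (n - k) mod L"
  have e: "(n - k) div L * L + (n - k) mod L = n - k" by (rule div_mult_mod_eq)
  have d: "qq k n * L + r = n - k" using e unfolding qq_def r_def L_def .
  have r: "r \<le> 2 * k" unfolding r_def L_def using pos_mod_bound[of "2*k+1" "n - k"] by simp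
  have "real (qq k n * L) + real r = real (n - k)" using d by (metis of_nat_add)
  moreover have "real (n - k) \<ge> real n - real k" by simp
  moreover have "real r \<le> 2 * real k" using r by simp
  ultimately have "real (qq k n * L) \<ge> real n - 3 * real k" by linarith
  then show ?thesis by (simp add: L_def algebra_simps)
qed

lemma card_Ic_ge: "real (card (Ic k n :: 'd::finite site set)) \<ge> 2 * real (qq k n) + 1"
proof -
  have "CARD('d) \<ge> 1" by (simp add: Suc_leI)
  then have "(2 * qq k n + 1) ^ 1 \<le> (2 * qq k n + 1) ^ CARD('d)" by (intro power_increasing) auto
  then have "2 * qq k n + 1 \<le> card (Ic k n :: 'd site set)" unfolding card_Ic by simp
  then have "real (2 * qq k n + 1) \<le> real (card (Ic k n :: 'd site set))" by (simp only: of_nat_le_iff)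
  then show ?thesis by simp
qed

context model
begin

definition Wk :: "nat \<Rightarrow> real" where "Wk k = 2 * (real (card (box k :: 'd site set)) * C0 + 1)"

lemma Wk_pos: "Wk k > 0"
proof -
  have "real (card (box k :: 'd site set)) * C0 \<ge> 0" using C0_nonneg by simp
  then have "real (card (box k :: 'd site set)) * C0 + 1 > 0" by linarith
  then show ?thesis unfolding Wk_def by simp
qed

definition Aev :: "nat \<Rightarrow> ('d site \<Rightarrow> 'e) \<Rightarrow> real \<Rightarrow> nat \<Rightarrow> ('d site \<Rightarrow> 'f) set" where
  "Aev k \<tau> \<epsilon> n = {\<eta> \<in> space P. \<bar>(\<Sum>c\<in>Ic k n. Y k \<tau> c \<eta>) - (\<Sum>c\<in>Ic k n. \<integral>\<eta>. Y k \<tau> c \<eta> \<partial>P)\<bar> \<ge> \<epsilon> * real (card (Ic k n :: 'd site set))}"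

lemma Aev_sets: "Aev k \<tau> \<epsilon> n \<in> sets P"
proof -
  have "(\<lambda>\<eta>. \<bar>(\<Sum>c\<in>Ic k n. Y k \<tau> c \<eta>) - (\<Sum>c\<in>Ic k n. \<integral>\<eta>. Y k \<tau> c \<eta> \<partial>P)\<bar>) \<in> borel_measurable P"
    by (intro borel_measurable_abs borel_measurable_diff borel_measurable_sum Y_meas borel_measurable_const)
  then show ?thesis unfolding Aev_def by measurable
qed

lemma hoeff:
  assumes e: "\<epsilon> > 0"
  shows "measure P (Aev k \<tau> \<epsilon> n) \<le> 2 * exp (- 2 * \<epsilon>\<^sup>2 * real (card (Ic k n :: 'd site set)) / (Wk k)\<^sup>2)"
proof -
  define I :: "'d site set" where "I = Ic k n"
  define bb where "bb = real (card (box k :: 'd site set)) * C0 + 1"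
  have Wb: "Wk k = bb - (- bb)" unfolding Wk_def bb_def by simp
  have "2 * real (qq k n) + 1 \<le> real (card (Ic k n :: 'd site set))" by (rule card_Ic_ge)
  then have Ipos: "real (card I) > 0" unfolding I_def by linarith
  interpret H: Hoeffding_ineq P I "Y k \<tau>" "\<lambda>_. - bb" "\<lambda>_. bb" "\<Sum>c\<in>I. Pr.expectation (Y k \<tau> c)"
  proof unfold_locales
    show "finite I" by (simp add: I_def)
    show "Pr.indep_vars (\<lambda>_. borel) (Y k \<tau>) I" unfolding I_def by (rule Y_indep)
    fix c assume "c \<in> I"
    have "Y k \<tau> c x \<in> {- bb..bb}" for x
    proof -
      have "\<bar>Y k \<tau> c x\<bar> \<le> real (card (box k :: 'd site set)) * C0" by (rule Y_bound)
      then show ?thesis unfolding bb_def by (simp add: abs_le_iff)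
    qed
    then show "AE x in P. Y k \<tau> c x \<in> {- bb..bb}" by simp
  qed simp
  have sq: "(\<Sum>c\<in>I. (bb - - bb)\<^sup>2) = real (card I) * (Wk k)\<^sup>2" using Wb by simp
  have pos: "(\<Sum>c\<in>I. (bb - - bb)\<^sup>2) > 0" unfolding sq using Ipos Wk_pos[of k] by simp
  have "measure P (Aev k \<tau> \<epsilon> n) = Pr.prob {x \<in> space P. \<bar>(\<Sum>c\<in>I. Y k \<tau> c x) - (\<Sum>c\<in>I. Pr.expectation (Y k \<tau> c))\<bar> \<ge> \<epsilon> * real (card I)}"
    unfolding Aev_def I_def ..
  also have "\<dots> \<le> 2 * exp (- 2 * (\<epsilon> * real (card I))\<^sup>2 / (\<Sum>c\<in>I. (bb - - bb)\<^sup>2))"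
    by (rule H.Hoeffding_ineq_abs_ge) (use e Ipos pos in simp_all)
  also have "- 2 * (\<epsilon> * real (card I))\<^sup>2 / (\<Sum>c\<in>I. (bb - - bb)\<^sup>2) = - 2 * \<epsilon>\<^sup>2 * real (card I) / (Wk k)\<^sup>2"
    unfolding sq using Ipos Wk_pos by (simp add: power2_eq_square field_simps)
  finally show ?thesis unfolding I_def .
qed

lemma AE_dev:
  assumes e: "\<epsilon> > 0"
  shows "AE \<eta> in P. eventually (\<lambda>n. \<bar>(\<Sum>c\<in>Ic k n. Y k \<tau> c \<eta>) - (\<Sum>c\<in>Ic k n. \<integral>\<eta>. Y k \<tau> c \<eta> \<partial>P)\<bar>
          < \<epsilon> * real (card (Ic k n :: 'd site set))) sequentially"
proof -
  define \<gamma> where "\<gamma> = 2 * \<epsilon>\<^sup>2 / (Wk k)\<^sup>2"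
  have g: "\<gamma> > 0" unfolding \<gamma>_def by (intro divide_pos_pos) (use e Wk_pos[of k] in auto)
  define L where "L = 2 * real k + 1"
  have L: "L > 0" by (simp add: L_def)
  define r where "r = exp (- 2 * \<gamma> / L)"
  have r: "norm r < 1" unfolding r_def using g L by simp
  define C where "C = 2 * exp (\<gamma> * (6 * real k / L - 1))"
  have sum: "summable (\<lambda>n. C * r ^ n)" by (rule summable_mult[OF summable_geometric[OF r]])
  have bound: "norm (measure P (Aev k \<tau> \<epsilon> n)) \<le> C * r ^ n" for n
  proof -
    have "norm (measure P (Aev k \<tau> \<epsilon> n)) = measure P (Aev k \<tau> \<epsilon> n)" by simp
    also have "\<dots> \<le> 2 * exp (- \<gamma> * real (card (Ic k n :: 'd site set)))"
      using hoeff[OF e, of k \<tau> n] unfolding \<gamma>_def by (simp add: field_simps)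
    also have "\<dots> \<le> 2 * exp (- \<gamma> * (2 * real (qq k n) + 1))"
    proof -
      have "2 * real (qq k n) + 1 \<le> real (card (Ic k n :: 'd site set))" by (rule card_Ic_ge)
      then show ?thesis using g by simp
    qed
    also have "\<dots> \<le> C * r ^ n"
    proof -
      have q: "real (qq k n) \<ge> (real n - 3 * real k) / L"
        using qq_lower[where k=k and n=n] L by (simp add: L_def pos_divide_le_eq)
      have "2 * ((real n - 3 * real k) / L) + 1 \<le> 2 * real (qq k n) + 1" using q by linarith
      then have "- \<gamma> * (2 * real (qq k n) + 1) \<le> - \<gamma> * (2 * ((real n - 3 * real k) / L) + 1)"
        by (rule mult_left_mono_neg) (use g in simp)
      also have "\<dots> = \<gamma> * (6 * real k / L - 1) + real n * (- 2 * \<gamma> / L)"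
        using L by (simp add: field_simps)
      finally have "exp (- \<gamma> * (2 * real (qq k n) + 1)) \<le> exp (\<gamma> * (6 * real k / L - 1)) * exp (- 2 * \<gamma> / L) ^ n"
        by (simp add: exp_add[symmetric] exp_of_nat_mult[symmetric])
      then show ?thesis unfolding C_def r_def by simp
    qed
    finally show ?thesis .
  qed
  have "summable (\<lambda>n. measure P (Aev k \<tau> \<epsilon> n))"
    by (rule summable_comparison_test'[OF sum bound])
  then have "AE \<eta> in P. eventually (\<lambda>n. \<eta> \<in> space P - Aev k \<tau> \<epsilon> n) sequentially"
    by (intro borel_cantelli_AE1 Aev_sets) (simp_all add: Pr.emeasure_eq_measure)
  then show ?thesis
  proof (rule eventually_mono)
    fix \<eta> assume "eventually (\<lambda>n. \<eta> \<in> space P - Aev k \<tau> \<epsilon> n) sequentially"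
    then show "eventually (\<lambda>n. \<bar>(\<Sum>c\<in>Ic k n. Y k \<tau> c \<eta>) - (\<Sum>c\<in>Ic k n. \<integral>\<eta>. Y k \<tau> c \<eta> \<partial>P)\<bar>
          < \<epsilon> * real (card (Ic k n :: 'd site set))) sequentially"
      by (rule eventually_mono) (auto simp: Aev_def)
  qed
qed

end

lemma approx_alg:
  fixes lz I v V rm ak Dk \<epsilon> C :: real
  assumes V: "V = I * v + rm" and v: "v > 0" and I: "I \<ge> 0" and rm: "rm \<ge> 0"
    and h1: "\<bar>lz - I * ak\<bar> \<le> I * (5 * Dk + \<epsilon>) + rm * C"
    and h2: "\<bar>ak\<bar> \<le> v * C" and Vp: "V > 0" and Dk: "Dk \<ge> 0" and e: "\<epsilon> \<ge> 0"
  shows "\<bar>lz / V - ak / v\<bar> \<le> (5 * Dk + \<epsilon>) / v + 2 * C * rm / V"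
proof -
  have q1: "(lz - I * ak) / V - ak * rm / (V * v) = ((lz - I * ak) * v - ak * rm) / (V * v)"
    using Vp v by (simp add: field_simps)
  have q2: "lz / V - ak / v = (lz * v - ak * V) / (V * v)"
    using Vp v by (simp add: field_simps)
  have q3: "(lz - I * ak) * v - ak * rm = lz * v - ak * V" unfolding V by (simp add: algebra_simps)
  have eq: "lz / V - ak / v = (lz - I * ak) / V - ak * rm / (V * v)"
    unfolding q1 q2 q3 ..
  have a: "\<bar>(lz - I * ak) / V\<bar> \<le> (I * (5 * Dk + \<epsilon>) + rm * C) / V"
  proof -
    have "\<bar>(lz - I * ak) / V\<bar> = \<bar>lz - I * ak\<bar> / V" using Vp by (simp add: abs_divide)
    also have "\<dots> \<le> (I * (5 * Dk + \<epsilon>) + rm * C) / V" by (rule divide_right_mono[OF h1]) (use Vp in simp)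
    finally show ?thesis .
  qed
  have Iv: "I * v \<le> V" using V rm by simp
  have b: "I * (5 * Dk + \<epsilon>) / V \<le> (5 * Dk + \<epsilon>) / v"
  proof -
    have "I * (5 * Dk + \<epsilon>) * v \<le> (5 * Dk + \<epsilon>) * V"
      using Iv Dk e by (metis mult.commute mult.left_commute mult_left_mono add_nonneg_nonneg mult_nonneg_nonneg zero_le_numeral)
    then show ?thesis using Vp v by (simp add: divide_simps mult.commute)
  qed
  have c: "\<bar>ak * rm / (V * v)\<bar> \<le> C * rm / V"
  proof -
    have "\<bar>ak * rm / (V * v)\<bar> = \<bar>ak\<bar> * rm / (V * v)" using rm Vp v by (simp add: abs_mult)
    also have "\<dots> \<le> v * C * rm / (V * v)"
      using h2 rm Vp v by (intro divide_right_mono mult_right_mono) auto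
    also have "\<dots> = C * rm / V" using v by simp
    finally show ?thesis .
  qed
  have "\<bar>lz / V - ak / v\<bar> \<le> \<bar>(lz - I * ak) / V\<bar> + \<bar>ak * rm / (V * v)\<bar>" unfolding eq by (rule abs_triangle_ineq4)
  also have "\<dots> \<le> (I * (5 * Dk + \<epsilon>) + rm * C) / V + C * rm / V" using a c by linarith
  also have "\<dots> = I * (5 * Dk + \<epsilon>) / V + 2 * C * rm / V" using Vp by (simp add: field_simps)
  also have "\<dots> \<le> (5 * Dk + \<epsilon>) / v + 2 * C * rm / V" using b by linarith
  finally show ?thesis .
qed

context model
begin

definition Fz :: "('d site \<Rightarrow> 'e) \<Rightarrow> nat \<Rightarrow> ('d site \<Rightarrow> 'f) \<Rightarrow> real" where
  "Fz \<tau> n \<eta> = ln (Z \<tau> (box n) \<eta>) / real (card (box n :: 'd site set))"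

lemma Fz_bound: "\<bar>Fz \<tau> n \<eta>\<bar> \<le> C0"
proof -
  have "\<bar>ln (Z \<tau> (box n) \<eta>)\<bar> \<le> real (card (box n :: 'd site set)) * C0" by (rule lnZ_bound) simp
  then show ?thesis unfolding Fz_def using card_box_pos[of n] C0_nonneg
    by (simp add: abs_div_pos divide_le_eq mult.commute)
qed

lemma ak_bound: "\<bar>ak k \<tau>\<bar> \<le> real (card (box k :: 'd site set)) * C0"
  unfolding ak_def by (rule int_abs_bound[OF lnZ_int]) (simp_all add: lnZ_bound)

lemma approx_AE:
  assumes e: "\<epsilon> > 0"
  shows "AE \<eta> in P. eventually (\<lambda>n. \<bar>Fz \<tau> n \<eta> - ak k \<tau> / real (card (box k :: 'd site set))\<bar>
     \<le> (5 * D (box k) + \<epsilon>) / real (card (box k :: 'd site set))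
        + 2 * C0 * real (card (rem k n :: 'd site set)) / real (card (box n :: 'd site set))) sequentially"
  using AE_dev[OF e, of k \<tau>]
proof (rule eventually_mono)
  fix \<eta> assume ev: "eventually (\<lambda>n. \<bar>(\<Sum>c\<in>Ic k n. Y k \<tau> c \<eta>) - (\<Sum>c\<in>Ic k n. \<integral>\<eta>. Y k \<tau> c \<eta> \<partial>P)\<bar>
          < \<epsilon> * real (card (Ic k n :: 'd site set))) sequentially"
  show "eventually (\<lambda>n. \<bar>Fz \<tau> n \<eta> - ak k \<tau> / real (card (box k :: 'd site set))\<bar>
     \<le> (5 * D (box k) + \<epsilon>) / real (card (box k :: 'd site set))
        + 2 * C0 * real (card (rem k n :: 'd site set)) / real (card (box n :: 'd site set))) sequentially"
    using ev eventually_ge_at_top[of k]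
  proof eventually_elim
    case (elim n)
    define I where "I = real (card (Ic k n :: 'd site set))"
    define v where "v = real (card (box k :: 'd site set))"
    define V where "V = real (card (box n :: 'd site set))"
    define rm where "rm = real (card (rem k n :: 'd site set))"
    have kn: "k \<le> n" using elim by simp
    have Vd: "V = I * v + rm"
    proof -
      have le: "card (Ic k n :: 'd site set) * card (box k :: 'd site set) \<le> card (box n :: 'd site set)"
        using card_rem[OF kn] card_UN_blk[of k n] box_tiling[OF kn]
        by (metis Un_upper2 card_mono finite_box)
      show ?thesis unfolding V_def I_def v_def rm_def card_rem[OF kn] using le by (simp add: of_nat_diff)
    qed
    have t1: "\<bar>ln (Z \<tau> (box n) \<eta>) - ln (Z \<tau> (rem k n) \<eta>) - (\<Sum>c\<in>Ic k n. ln (Z \<tau> (blk k c) \<eta>))\<bar> \<le> I * (2 * D (box k))"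
      unfolding I_def by (rule lnZ_tiling[OF kn])
    have t2: "\<bar>(\<Sum>c\<in>Ic k n. ln (Z \<tau> (blk k c) \<eta>)) - (\<Sum>c\<in>Ic k n. Y k \<tau> c \<eta>)\<bar> \<le> I * D (box k)"
    proof -
      have "\<bar>(\<Sum>c\<in>Ic k n. ln (Z \<tau> (blk k c) \<eta>)) - (\<Sum>c\<in>Ic k n. Y k \<tau> c \<eta>)\<bar> \<le> real (card (Ic k n :: 'd site set)) * D (box k)"
        by (rule sum_diff_bound) (simp, use Y_close in \<open>simp add: abs_minus_commute\<close>)
      then show ?thesis unfolding I_def .
    qed
    have t3: "\<bar>(\<Sum>c\<in>Ic k n. Y k \<tau> c \<eta>) - (\<Sum>c\<in>Ic k n. \<integral>\<eta>. Y k \<tau> c \<eta> \<partial>P)\<bar> \<le> \<epsilon> * I"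
      using elim unfolding I_def by simp
    have t4: "\<bar>(\<Sum>c\<in>Ic k n. \<integral>\<eta>. Y k \<tau> c \<eta> \<partial>P) - I * ak k \<tau>\<bar> \<le> I * (2 * D (box k))"
    proof -
      have "\<bar>(\<Sum>c\<in>Ic k n. \<integral>\<eta>. Y k \<tau> c \<eta> \<partial>P) - (\<Sum>c\<in>(Ic k n :: 'd site set). ak k \<tau>)\<bar> \<le> real (card (Ic k n :: 'd site set)) * (2 * D (box k))"
        by (rule sum_diff_bound) (simp, rule EY_close)
      then show ?thesis unfolding I_def by (simp add: mult.commute)
    qed
    have t5: "\<bar>ln (Z \<tau> (rem k n) \<eta>)\<bar> \<le> rm * C0" unfolding rm_def by (rule lnZ_bound) simp
    have h1: "\<bar>ln (Z \<tau> (box n) \<eta>) - I * ak k \<tau>\<bar> \<le> I * (5 * D (box k) + \<epsilon>) + rm * C0"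
      using t1 t2 t3 t4 t5 by (simp add: abs_le_iff algebra_simps; linarith)
    have "\<bar>ln (Z \<tau> (box n) \<eta>) / V - ak k \<tau> / v\<bar> \<le> (5 * D (box k) + \<epsilon>) / v + 2 * C0 * rm / V"
    proof (rule approx_alg[OF Vd _ _ _ h1])
      show "v > 0" unfolding v_def using card_box_pos by simp
      show "I \<ge> 0" "rm \<ge> 0" by (simp_all add: I_def rm_def)
      show "\<bar>ak k \<tau>\<bar> \<le> v * C0" unfolding v_def by (rule ak_bound)
      show "V > 0" unfolding V_def using card_box_pos by simp
      show "D (box k) \<ge> 0" by (rule D_nonneg)
      show "\<epsilon> \<ge> 0" using e by simp
    qed
    then show ?case unfolding Fz_def V_def v_def rm_def .
  qed
qed

lemma rem_lim: "(\<lambda>n. real (card (rem k n :: 'd site set)) / real (card (box n :: 'd site set))) \<longlonglongrightarrow> 0"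
proof (rule tendsto_sandwich)
  show "eventually (\<lambda>n. 0 \<le> real (card (rem k n :: 'd site set)) / real (card (box n :: 'd site set))) sequentially"
    by simp
  show "eventually (\<lambda>n. real (card (rem k n :: 'd site set)) / real (card (box n :: 'd site set))
     \<le> real ((2*n+1)^CARD('d) - (2*(n-2*k)+1)^CARD('d)) / real ((2*n+1)^CARD('d))) sequentially"
    using eventually_ge_at_top[of k]
  proof eventually_elim
    case (elim n)
    have "real (card (rem k n :: 'd site set)) \<le> real ((2*n+1)^CARD('d) - (2*(n-2*k)+1)^CARD('d))"
      using card_rem_bound[OF elim] by (simp only: of_nat_le_iff)
    then show ?case unfolding card_box by (intro divide_right_mono) auto
  qed
next
  show "(\<lambda>n. 0::real) \<longlonglongrightarrow> 0" by simp
  show "(\<lambda>n. real ((2*n+1)^CARD('d) - (2*(n-2*k)+1)^CARD('d)) / real ((2*n+1)^CARD('d))) \<longlonglongrightarrow> 0"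
    by (rule shell_lim)
qed

lemma AE_eventually_close:
  assumes d: "\<delta> > 0"
  shows "AE \<eta> in P. \<exists>Lc. eventually (\<lambda>n. \<bar>Fz \<tau> n \<eta> - Lc\<bar> \<le> \<delta>) sequentially"
proof -
  have "eventually (\<lambda>k. D (box k) / real (card (box k :: 'd site set)) < \<delta> / 15) sequentially"
    using D_box_lim d by (intro order_tendstoD) auto
  then obtain k where k: "D (box k) / real (card (box k :: 'd site set)) < \<delta> / 15"
    by (auto simp: eventually_sequentially)
  define v where "v = real (card (box k :: 'd site set))"
  have "card (box k :: 'd site set) > 0" by (rule card_box_pos)
  then have "card (box k :: 'd site set) \<ge> 1" by linarith
  then have v: "v \<ge> 1" unfolding v_def by simp
  define \<epsilon> where "\<epsilon> = \<delta> / 3"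
  have e: "\<epsilon> > 0" using d by (simp add: \<epsilon>_def)
  have lim2: "(\<lambda>n. 2 * C0 * (real (card (rem k n :: 'd site set)) / real (card (box n :: 'd site set)))) \<longlonglongrightarrow> 0"
    using tendsto_mult_right_zero[OF rem_lim[of k]] by simp
  have ev2: "eventually (\<lambda>n. 2 * C0 * (real (card (rem k n :: 'd site set)) / real (card (box n :: 'd site set))) < \<delta> / 3) sequentially"
    using lim2 d by (intro order_tendstoD) auto
  have cst_b: "(5 * D (box k) + \<epsilon>) / v \<le> 2 * \<delta> / 3"
  proof -
    have "5 * (D (box k) / v) < \<delta> / 3" using k unfolding v_def by linarith
    then have "5 * D (box k) / v < \<delta> / 3" by simp
    moreover have "\<epsilon> / v \<le> \<epsilon>" using v e by (simp add: divide_le_eq)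
    ultimately show ?thesis unfolding \<epsilon>_def by (simp add: add_divide_distrib)
  qed
  show ?thesis
    using approx_AE[OF e, of \<tau> k]
  proof (rule eventually_mono)
    fix \<eta> assume "eventually (\<lambda>n. \<bar>Fz \<tau> n \<eta> - ak k \<tau> / real (card (box k :: 'd site set))\<bar>
     \<le> (5 * D (box k) + \<epsilon>) / real (card (box k :: 'd site set))
        + 2 * C0 * real (card (rem k n :: 'd site set)) / real (card (box n :: 'd site set))) sequentially"
    then have "eventually (\<lambda>n. \<bar>Fz \<tau> n \<eta> - ak k \<tau> / v\<bar> \<le> \<delta>) sequentially"
      using ev2
    proof eventually_elim
      case (elim n)
      have b1: "2 * C0 * real (card (rem k n :: 'd site set)) / real (card (box n :: 'd site set)) < \<delta> / 3"
        using elim(2) by (simp only: times_divide_eq_right)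
      show ?case using elim(1) b1 cst_b unfolding v_def by linarith
    qed
    then show "\<exists>Lc. eventually (\<lambda>n. \<bar>Fz \<tau> n \<eta> - Lc\<bar> \<le> \<delta>) sequentially" by blast
  qed
qed

lemma AE_conv: "AE \<eta> in P. convergent (\<lambda>n. Fz \<tau> n \<eta>)"
proof -
  have "\<forall>j::nat. AE \<eta> in P. \<exists>Lc. eventually (\<lambda>n. \<bar>Fz \<tau> n \<eta> - Lc\<bar> \<le> 1 / (real j + 1)) sequentially"
    by (intro allI AE_eventually_close) simp
  then have "AE \<eta> in P. \<forall>j::nat. \<exists>Lc. eventually (\<lambda>n. \<bar>Fz \<tau> n \<eta> - Lc\<bar> \<le> 1 / (real j + 1)) sequentially"
    by (simp add: AE_all_countable)
  then show ?thesis
  proof (rule eventually_mono)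
    fix \<eta> assume H: "\<forall>j::nat. \<exists>Lc. eventually (\<lambda>n. \<bar>Fz \<tau> n \<eta> - Lc\<bar> \<le> 1 / (real j + 1)) sequentially"
    have "Cauchy (\<lambda>n. Fz \<tau> n \<eta>)"
    proof (rule CauchyI)
      fix e :: real assume e: "e > 0"
      obtain j :: nat where j0: "inverse (real (Suc j)) < e / 2"
        using reals_Archimedean[of "e / 2"] e by auto
      then have j: "1 / (real j + 1) < e / 2" by (simp add: inverse_eq_divide add.commute)
      obtain Lc where "eventually (\<lambda>n. \<bar>Fz \<tau> n \<eta> - Lc\<bar> \<le> 1 / (real j + 1)) sequentially" using H by blast
      then obtain N where N: "\<And>n. n \<ge> N \<Longrightarrow> \<bar>Fz \<tau> n \<eta> - Lc\<bar> \<le> 1 / (real j + 1)"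
        by (auto simp: eventually_sequentially)
      have "\<forall>m\<ge>N. \<forall>n\<ge>N. norm (Fz \<tau> m \<eta> - Fz \<tau> n \<eta>) < e"
      proof (intro allI impI)
        fix m n assume "m \<ge> N" "n \<ge> N"
        then have "\<bar>Fz \<tau> m \<eta> - Lc\<bar> \<le> 1 / (real j + 1)" "\<bar>Fz \<tau> n \<eta> - Lc\<bar> \<le> 1 / (real j + 1)" using N by auto
        then show "norm (Fz \<tau> m \<eta> - Fz \<tau> n \<eta>) < e" using j
          unfolding real_norm_def abs_le_iff abs_less_iff by linarith
      qed
      then show "\<exists>M. \<forall>m\<ge>M. \<forall>n\<ge>M. norm (Fz \<tau> m \<eta> - Fz \<tau> n \<eta>) < e" by blast
    qed
    then show "convergent (\<lambda>n. Fz \<tau> n \<eta>)" by (simp add: Cauchy_convergent_iff)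
  qed
qed

end

theorem proposition6p12:
  fixes p :: "'f::finite pmf"
    and P :: "('d::finite site \<Rightarrow> 'f) measure"
    and \<Phi> :: "'d site set \<Rightarrow> ('d site \<Rightarrow> 'e::finite) \<Rightarrow> ('d site \<Rightarrow> 'f) \<Rightarrow> real"
    and \<sigma>b \<sigma>0 :: "'d site \<Rightarrow> 'e"
    and K :: "(('d site \<Rightarrow> 'e) \<times> ('d site \<Rightarrow> 'f)) measure"
  assumes P_def: "P = PiM UNIV (\<lambda>_. measure_pmf p)"
    and pot: "is_defining_potential \<Phi>"
    and K_joint: "is_joint_measure P \<Phi> \<sigma>b K"
    and K_inv: "trans_inv_joint K"
    and \<sigma>0_inv: "\<forall>x y. \<sigma>0 (x + y) = \<sigma>0 y"
  shows "(AE \<eta> in P. convergent (\<lambda>n. ln (partition_fn \<Phi> \<sigma>b (box n) \<eta>) / real (card (box n :: 'd site set))))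
     \<and> (e_seq K (distr P joint_space (\<lambda>\<eta>. (\<sigma>0, \<eta>)))
         \<longlonglongrightarrow> ks_entropy P
             + infsum (\<lambda>A. (\<integral>\<eta>. \<Phi> A \<sigma>0 \<eta> \<partial>P) / real (card A)) {A. finite A \<and> 0 \<in> A}
             + (\<integral>\<eta>. lim (\<lambda>n. ln (partition_fn \<Phi> \<sigma>b (box n) \<eta>) / real (card (box n :: 'd site set))) \<partial>P))"
proof -
  interpret Mo: model \<Phi> p P
    by unfold_locales (fact pot, fact P_def)
  let ?F = "\<lambda>n \<eta>. ln (partition_fn \<Phi> \<sigma>b (box n) \<eta>) / real (card (box n :: 'd site set))"
  have Fz: "Mo.Fz \<sigma>b n \<eta> = ?F n \<eta>" for n \<eta> by (simp add: Mo.Fz_def)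
  have conv: "AE \<eta> in P. convergent (\<lambda>n. ?F n \<eta>)"
    using Mo.AE_conv[of \<sigma>b] unfolding Fz .
  define Fl where "Fl \<eta> = lim (\<lambda>n. ?F n \<eta>)" for \<eta>
  have Fmeas: "?F n \<in> borel_measurable P" for n
    by (intro borel_measurable_divide Mo.lnZ_meas borel_measurable_const) simp
  have Flmeas: "Fl \<in> borel_measurable P"
    unfolding Fl_def[abs_def] by (rule borel_measurable_lim_metric[OF Fmeas])
  have intlim: "(\<lambda>n. \<integral>\<eta>. ?F n \<eta> \<partial>P) \<longlonglongrightarrow> (\<integral>\<eta>. Fl \<eta> \<partial>P)"
  proof (rule integral_dominated_convergence[where w="\<lambda>_. Mo.C0"])
    show "Fl \<in> borel_measurable P" by (rule Flmeas)
    show "?F n \<in> borel_measurable P" for n by (rule Fmeas)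
    show "integrable P (\<lambda>_. Mo.C0)" by simp
    show "AE \<eta> in P. (\<lambda>n. ?F n \<eta>) \<longlonglongrightarrow> Fl \<eta>"
      using conv by (rule eventually_mono) (simp add: Fl_def convergent_LIMSEQ_iff)
    show "AE \<eta> in P. norm (?F n \<eta>) \<le> Mo.C0" for n
      using Mo.Fz_bound[of \<sigma>b n] unfolding Fz by simp
  qed
  have intF: "(\<integral>\<eta>. ?F n \<eta> \<partial>P) = (\<integral>\<eta>. ln (partition_fn \<Phi> \<sigma>b (box n) \<eta>) \<partial>P) / real (card (box n :: 'd site set))" for n
    by simp
  have EH: "(\<lambda>n. (\<integral>\<eta>. hamiltonian \<Phi> (box n) \<sigma>0 \<eta> \<partial>P) / real (card (box n :: 'd site set))) \<longlonglongrightarrow> Mo.cst \<sigma>0"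
  proof -
    have "(\<lambda>n. (\<integral>\<eta>. hamiltonian \<Phi> (box n) \<sigma>0 \<eta> \<partial>P) / real (card (box n :: 'd site set)) - Mo.cst \<sigma>0) \<longlonglongrightarrow> 0"
    proof (rule Lim_null_comparison)
      show "eventually (\<lambda>n. norm ((\<integral>\<eta>. hamiltonian \<Phi> (box n) \<sigma>0 \<eta> \<partial>P) / real (card (box n :: 'd site set)) - Mo.cst \<sigma>0)
          \<le> Mo.D (box n) / real (card (box n :: 'd site set))) sequentially"
      proof (rule always_eventually, rule allI)
        fix n
        have c: "real (card (box n :: 'd site set)) > 0" using card_box_pos by simp
        have b: "\<bar>(\<integral>\<eta>. hamiltonian \<Phi> (box n) \<sigma>0 \<eta> \<partial>P) - real (card (box n :: 'd site set)) * Mo.cst \<sigma>0\<bar> \<le> Mo.D (box n)"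
          by (rule Mo.EH_bound[OF \<sigma>0_inv]) simp
        have "(\<integral>\<eta>. hamiltonian \<Phi> (box n) \<sigma>0 \<eta> \<partial>P) / real (card (box n :: 'd site set)) - Mo.cst \<sigma>0
            = ((\<integral>\<eta>. hamiltonian \<Phi> (box n) \<sigma>0 \<eta> \<partial>P) - real (card (box n :: 'd site set)) * Mo.cst \<sigma>0) / real (card (box n :: 'd site set))"
        proof -
          have cn: "real (card (box n :: 'd site set)) \<noteq> 0" using c by linarith
          have ne: "(box n :: 'd site set) \<noteq> {}" using zero_in_box by blast
          show ?thesis by (simp add: diff_divide_distrib cn ne)
        qed
        then show "norm ((\<integral>\<eta>. hamiltonian \<Phi> (box n) \<sigma>0 \<eta> \<partial>P) / real (card (box n :: 'd site set)) - Mo.cst \<sigma>0)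
          \<le> Mo.D (box n) / real (card (box n :: 'd site set))"
          using b c by (simp add: abs_divide divide_right_mono)
      qed
      show "(\<lambda>n. Mo.D (box n) / real (card (box n :: 'd site set))) \<longlonglongrightarrow> 0" by (rule Mo.D_box_lim)
    qed
    then show ?thesis by (simp add: LIM_zero_iff)
  qed
  define a where "a n = - Mo.Hsum + (\<integral>\<eta>. hamiltonian \<Phi> (box n) \<sigma>0 \<eta> \<partial>P) / real (card (box n :: 'd site set))
      + (\<integral>\<eta>. ln (partition_fn \<Phi> \<sigma>b (box n) \<eta>) \<partial>P) / real (card (box n :: 'd site set))" for n
  have alim: "a \<longlonglongrightarrow> - Mo.Hsum + Mo.cst \<sigma>0 + (\<integral>\<eta>. Fl \<eta> \<partial>P)"
    unfolding a_def[abs_def] using intlim unfolding intF by (intro tendsto_intros EH)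
  have dlim: "(\<lambda>n. e_seq K (distr P joint_space (\<lambda>\<eta>. (\<sigma>0, \<eta>))) n - a n) \<longlonglongrightarrow> 0"
  proof (rule Lim_null_comparison)
    show "eventually (\<lambda>n. norm (e_seq K (distr P joint_space (\<lambda>\<eta>. (\<sigma>0, \<eta>))) n - a n)
        \<le> 4 * (Mo.D (box n) / real (card (box n :: 'd site set)))) sequentially"
    proof (rule always_eventually, rule allI)
      fix n
      show "norm (e_seq K (distr P joint_space (\<lambda>\<eta>. (\<sigma>0, \<eta>))) n - a n)
        \<le> 4 * (Mo.D (box n) / real (card (box n :: 'd site set)))"
        using Mo.eseq_bound[OF K_joint, where n=n] unfolding a_def by simp
    qed
    show "(\<lambda>n. 4 * (Mo.D (box n) / real (card (box n :: 'd site set)))) \<longlonglongrightarrow> 0"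
      using tendsto_mult_right_zero[OF Mo.D_box_lim, of 4] by simp
  qed
  have elim: "(\<lambda>n. e_seq K (distr P joint_space (\<lambda>\<eta>. (\<sigma>0, \<eta>))) n) \<longlonglongrightarrow> - Mo.Hsum + Mo.cst \<sigma>0 + (\<integral>\<eta>. Fl \<eta> \<partial>P)"
  proof -
    have "(\<lambda>n. (e_seq K (distr P joint_space (\<lambda>\<eta>. (\<sigma>0, \<eta>))) n - a n) + a n) \<longlonglongrightarrow> 0 + (- Mo.Hsum + Mo.cst \<sigma>0 + (\<integral>\<eta>. Fl \<eta> \<partial>P))"
      by (rule tendsto_add[OF dlim alim])
    then show ?thesis by simp
  qed
  have target: "ks_entropy P
             + infsum (\<lambda>A. (\<integral>\<eta>. \<Phi> A \<sigma>0 \<eta> \<partial>P) / real (card A)) {A. finite A \<and> 0 \<in> A}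
             + (\<integral>\<eta>. lim (\<lambda>n. ln (partition_fn \<Phi> \<sigma>b (box n) \<eta>) / real (card (box n :: 'd site set))) \<partial>P)
        = - Mo.Hsum + Mo.cst \<sigma>0 + (\<integral>\<eta>. Fl \<eta> \<partial>P)"
    unfolding Mo.ks_entropy_eq Mo.infsum_cst Fl_def ..
  show ?thesis using conv elim unfolding target by simp
qed


end
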